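(* Let $T$ be a reflection factorization with entries in $G_6$ of length $\ell\ge 3$, and suppose at least one of the following holds: (1) $T$ contains at least two entries from $S$ and at least one entry from $R'$; (2) $T$ contains at least two entries from $R_1$ and at least one entry from $S$; (3) $T$ contains at least two entries from $R_1^{-1}$ and at least one entry from $S$. Then for any reflection $x$ whose conjugacy class (among $R_1,R_1^{-1},S$) contains some entry of $T$, there is a factorization in the Hurwitz orbit of $T$ whose right-most entry is $x$.
   Context: Let $G_7$ be the subgroup of $GL_2(\mathbb{C})$ generated by $s=\begin{bmatrix}1&0\\0&-1\end{bmatrix}$, $t=\frac14\begin{bmatrix}(1+\sqrt3)+(-1+\sqrt3)i & (1+\sqrt3)+(-1+\sqrt3)i\\ (-1+\sqrt3)-(1+\sqrt3)i & (1-\sqrt3)+(1+\sqrt3)i\end{bmatrix}$ and $u=t^{\top}$ (presentation $\langle s,t,u\mid s^2=t^3=u^3=1,\ stu=ust=tus\rangle$, order $144$). A reflection is a linear map of $\mathbb{C}^2$ whose fixed space has dimension $1$. Let $S$ be the $G_7$-conjugacy class of $s$ (six reflections of order $2$), $R_1$ the $G_7$-conjugacy class of $t$ (four reflections of order $3$), $R_1^{-1}=\{r^{-1}:r\in R_1\}$ and $R'=R_1\cup R_1^{-1}$. Let $G_6=\langle s,t\rangle$, of order $48$; its fourteen reflections are the elements of $R_1\cup R_1^{-1}\cup S$, and $R_1$, $R_1^{-1}$, $S$ are its reflection conjugacy classes. A reflection factorization of length $\ell$ is a tuple $(r_1,\dots,r_\ell)$ of reflections. The Hurwitz move $\sigma_i$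 sends $(r_1,\dots,r_\ell)$ to $(r_1,\dots,r_{i-1},r_{i+1},r_{i+1}^{-1}r_ir_{i+1},r_{i+2},\dots,r_\ell)$; the Hurwitz orbit of $T$ is the set of factorizations obtained from $T$ by finite sequences of Hurwitz moves. *)

theory Defs
  imports "HOL-Analysis.Analysis"
begin

type_synonym mat2 = "complex ^ 2 ^ 2"

definition mk2 :: "complex \<Rightarrow> complex \<Rightarrow> complex \<Rightarrow> complex \<Rightarrow> mat2" where
  "mk2 a b c d = vector [vector [a, b], vector [c, d]]"

definition r3 :: complex where "r3 = complex_of_real (sqrt 3)"

definition s_mat :: mat2 where "s_mat = mk2 1 0 0 (-1)"

definition t_mat :: mat2 where
  "t_mat = mk2 (((1 + r3) + (-1 + r3) * \<i>) / 4) (((1 + r3) + (-1 + r3) * \<i>) / 4)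
               (((-1 + r3) - (1 + r3) * \<i>) / 4) (((1 - r3) + (1 + r3) * \<i>) / 4)"

definition u_mat :: mat2 where "u_mat = transpose t_mat"

inductive_set gen_group :: "mat2 set \<Rightarrow> mat2 set" for X where
  one: "mat 1 \<in> gen_group X"
| mul: "x \<in> X \<Longrightarrow> g \<in> gen_group X \<Longrightarrow> x ** g \<in> gen_group X"
| mul_inv: "x \<in> X \<Longrightarrow> g \<in> gen_group X \<Longrightarrow> matrix_inv x ** g \<in> gen_group X"

definition G7 :: "mat2 set" where "G7 = gen_group {s_mat, t_mat, u_mat}"
definition G6 :: "mat2 set" where "G6 = gen_group {s_mat, t_mat}"

definition is_reflection :: "mat2 \<Rightarrow> bool" where
  "is_reflection A \<longleftrightarrow> (\<exists>w::complex^2. w \<noteq> 0 \<and> {v. A *v v = v} = {c *s w | c. True})"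

definition conj_class :: "mat2 set \<Rightarrow> mat2 \<Rightarrow> mat2 set" where
  "conj_class G a = {g ** a ** matrix_inv g | g. g \<in> G}"

definition S_cls :: "mat2 set" where "S_cls = conj_class G7 s_mat"
definition R1 :: "mat2 set" where "R1 = conj_class G7 t_mat"
definition R1inv :: "mat2 set" where "R1inv = matrix_inv ` R1"
definition Rprime :: "mat2 set" where "Rprime = R1 \<union> R1inv"

text \<open>Hurwitz move sigma_(i+1) (0-based index i, requires i+1 < length).\<close>
definition hurwitz_move :: "nat \<Rightarrow> mat2 list \<Rightarrow> mat2 list" where
  "hurwitz_move i T = T[i := T ! (i+1), i+1 := matrix_inv (T ! (i+1)) ** (T ! i) ** (T ! (i+1))]"

definition hurwitz_step :: "mat2 list \<Rightarrow> mat2 list \<Rightarrow> bool" where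
  "hurwitz_step T T' \<longleftrightarrow> (\<exists>i. i + 1 < length T \<and> T' = hurwitz_move i T)"

definition hurwitz_orbit :: "mat2 list \<Rightarrow> mat2 list set" where
  "hurwitz_orbit T = {T'. hurwitz_step\<^sup>*\<^sup>* T T'}"

definition count_in :: "mat2 set \<Rightarrow> mat2 list \<Rightarrow> nat" where
  "count_in C T = length (filter (\<lambda>r. r \<in> C) T)"

end

theory Submission
  imports Defs
begin

definition qd :: "int \<Rightarrow> int \<Rightarrow> int \<Rightarrow> int \<Rightarrow> complex" where
  "qd a b c d = (of_int a + of_int b * r3 + (of_int c + of_int d * r3) * \<i>) / 4"
definition qs :: "int \<Rightarrow> int \<Rightarrow> int \<Rightarrow> int \<Rightarrow> complex" where
  "qs a b c d = (of_int a + of_int b * r3 + (of_int c + of_int d * r3) * \<i>) / 16"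

lemma r3_sq: "r3 * r3 = 3"
  unfolding r3_def of_real_mult[symmetric] by simp

lemma key0: "((A::'a::comm_ring_1) + B*x + (C + D*x)*j) * (E + F*x + (G + H*x)*j) = (A*E + (x*x)*B*F + (j*j)*C*G + (x*x)*(j*j)*D*H) + (A*F + B*E + (j*j)*C*H + (j*j)*D*G)*x + ((A*G + C*E + (x*x)*B*H + (x*x)*D*F) + (A*H + D*E + B*G + C*F)*x)*j"
  by (simp add: algebra_simps)

lemma div4: "((x::complex)/4) * (y/4) = (x*y)/16" by simp

lemma qd_mult: "qd a b c d * qd e f g h =
  qs (a*e + 3*b*f - c*g - 3*d*h) (a*f + b*e - c*h - d*g) (a*g + c*e + 3*b*h + 3*d*f) (a*h + d*e + b*g + c*f)"
  unfolding qd_def qs_def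
  apply (subst div4)
  apply (subst key0)
  apply (simp only: r3_sq complex_i_mult_minus mult_1_right i_squared)
  apply (simp add: algebra_simps)
  done

lemma qs_add: "qs a b c d + qs e f g h = qs (a+e) (b+f) (c+g) (d+h)"
  unfolding qs_def by (simp add: add_divide_distrib[symmetric] algebra_simps)

lemma mk2_mult: "mk2 a b c d ** mk2 e f g h = mk2 (a*e+b*g) (a*f+b*h) (c*e+d*g) (c*f+d*h)"
  unfolding mk2_def matrix_matrix_mult_def
  by (simp add: vec_eq_iff forall_2 sum_2)

lemma mat1_mk2: "(mat 1 :: mat2) = mk2 (qs 16 0 0 0) (qs 0 0 0 0) (qs 0 0 0 0) (qs 16 0 0 0)"
  unfolding mk2_def qs_def by (simp add: vec_eq_iff forall_2 mat_def)

lemma matrix_inv_eq: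
  fixes A B :: mat2
  assumes "A ** B = mat 1" "B ** A = mat 1"
  shows "matrix_inv A = B"
proof -
  have ex: "A ** matrix_inv A = mat 1 \<and> matrix_inv A ** A = mat 1"
    unfolding matrix_inv_def by (rule someI[of _ B]) (use assms in auto)
  have "matrix_inv A = (B ** A) ** matrix_inv A" by (simp add: assms)
  also have "\<dots> = B ** (A ** matrix_inv A)" by (simp add: matrix_mul_assoc)
  also have "\<dots> = B" using ex by simp
  finally show ?thesis .
qed
datatype el = X0 | X1 | X2 | X3 | X4 | X5 | Y0 | Y1 | Y2 | Y3 | Z0 | Z1 | Z2 | Z3

fun emat :: "el \<Rightarrow> mat2" where
  "emat X0 = mk2 (qd (-4) 0 0 0) (qd 0 0 0 0) (qd 0 0 0 0) (qd 4 0 0 0)"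
| "emat X1 = mk2 (qd 0 0 0 0) (qd (-4) 0 0 0) (qd (-4) 0 0 0) (qd 0 0 0 0)"
| "emat X2 = mk2 (qd 0 0 0 0) (qd 0 0 (-4) 0) (qd 0 0 4 0) (qd 0 0 0 0)"
| "emat X3 = mk2 (qd 0 0 0 0) (qd 0 0 4 0) (qd 0 0 (-4) 0) (qd 0 0 0 0)"
| "emat X4 = mk2 (qd 0 0 0 0) (qd 4 0 0 0) (qd 4 0 0 0) (qd 0 0 0 0)"
| "emat X5 = mk2 (qd 4 0 0 0) (qd 0 0 0 0) (qd 0 0 0 0) (qd (-4) 0 0 0)"
| "emat Y0 = mk2 (qd 1 (-1) 1 1) (qd (-1) 1 (-1) (-1)) (qd 1 1 (-1) 1) (qd 1 1 (-1) 1)"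
| "emat Y1 = mk2 (qd 1 (-1) 1 1) (qd 1 (-1) 1 1) (qd (-1) (-1) 1 (-1)) (qd 1 1 (-1) 1)"
| "emat Y2 = mk2 (qd 1 1 (-1) 1) (qd (-1) (-1) 1 (-1)) (qd 1 (-1) 1 1) (qd 1 (-1) 1 1)"
| "emat Y3 = mk2 (qd 1 1 (-1) 1) (qd 1 1 (-1) 1) (qd (-1) 1 (-1) (-1)) (qd 1 (-1) 1 1)"
| "emat Z0 = mk2 (qd 1 (-1) (-1) (-1)) (qd (-1) (-1) (-1) 1) (qd 1 (-1) (-1) (-1)) (qd 1 1 1 (-1))"
| "emat Z1 = mk2 (qd 1 (-1) (-1) (-1)) (qd 1 1 1 (-1)) (qd (-1) 1 1 1) (qd 1 1 1 (-1))"
| "emat Z2 = mk2 (qd 1 1 1 (-1)) (qd (-1) 1 1 1) (qd 1 1 1 (-1)) (qd 1 (-1) (-1) (-1))"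
| "emat Z3 = mk2 (qd 1 1 1 (-1)) (qd 1 (-1) (-1) (-1)) (qd (-1) (-1) (-1) 1) (qd 1 (-1) (-1) (-1))"

fun iv :: "el \<Rightarrow> el" where
  "iv X0 = X0"
| "iv X1 = X1"
| "iv X2 = X2"
| "iv X3 = X3"
| "iv X4 = X4"
| "iv X5 = X5"
| "iv Y0 = Z1"
| "iv Y1 = Z0"
| "iv Y2 = Z3"
| "iv Y3 = Z2"
| "iv Z0 = Y1"
| "iv Z1 = Y0"
| "iv Z2 = Y3"
| "iv Z3 = Y2"

definition ct :: "el \<Rightarrow> el \<Rightarrow> el" where
  "ct a b = (case b of X0 \<Rightarrow> (case a of X0 \<Rightarrow> X0 | X1 \<Rightarrow> X4 | X2 \<Rightarrow> X3 | X3 \<Rightarrow> X2 | X4 \<Rightarrow> X1 | X5 \<Rightarrow> X5 | Y0 \<Rightarrow> Y1 | Y1 \<Rightarrow> Y0 | Y2 \<Rightarrow> Y3 | Y3 \<Rightarrow> Y2 | Z0 \<Rightarrow> Z1 | Z1 \<Rightarrow> Z0 | Z2 \<Rightarrow> Z3 | Z3 \<Rightarrow> Z2) | X1 \<Rightarrow> (case a of X0 \<Rightarrow> X5 | X1 \<Rightarrow> X1 | X2 \<Rightarrow> X3 | X3 \<Rightarrow> X2 | X4 \<Rightarrow> X4 | X5 \<Rightarrow> X0 | Y0 \<Rightarrow> Y3 | Y1 \<Rightarrow> Y2 | Y2 \<Rightarrow> Y1 | Y3 \<Rightarrow> Y0 | Z0 \<Rightarrow> Z3 | Z1 \<Rightarrow>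 Z2 | Z2 \<Rightarrow> Z1 | Z3 \<Rightarrow> Z0) | X2 \<Rightarrow> (case a of X0 \<Rightarrow> X5 | X1 \<Rightarrow> X4 | X2 \<Rightarrow> X2 | X3 \<Rightarrow> X3 | X4 \<Rightarrow> X1 | X5 \<Rightarrow> X0 | Y0 \<Rightarrow> Y2 | Y1 \<Rightarrow> Y3 | Y2 \<Rightarrow> Y0 | Y3 \<Rightarrow> Y1 | Z0 \<Rightarrow> Z2 | Z1 \<Rightarrow> Z3 | Z2 \<Rightarrow> Z0 | Z3 \<Rightarrow> Z1) | X3 \<Rightarrow> (case a of X0 \<Rightarrow> X5 | X1 \<Rightarrow> X4 | X2 \<Rightarrow> X2 | X3 \<Rightarrow> X3 | X4 \<Rightarrow> X1 | X5 \<Rightarrow> X0 | Y0 \<Rightarrow> Y2 | Y1 \<Rightarrow> Y3 | Y2 \<Rightarrow> Y0 | Y3 \<Rightarrow> Y1 | Z0 \<Rightarrow> Z2 | Z1 \<Rightarrow> Z3 | Z2 \<Rightarrow> Z0 | Z3 \<Rightarrow> Z1) | X4 \<Rightarrow> (case a of X0 \<Rightarrow> X5 | X1 \<Rightarrow> X1 | X2 \<Rightarrow> X3 | X3 \<Rightarrow> X2 | X4 \<Rightarrow> X4 | X5 \<Rightarrow> X0 | Y0 \<Rightarrow> Y3 | Y1 \<Rightarrow> Y2 | Y2 \<Rightarrow> Y1 | Y3 \<Rightarrow> Y0 | Z0 \<Rightarrow> Z3 | Z1 \<Rightarrow> Z2 | Z2 \<Rightarrow> Z1 | Z3 \<Rightarrow>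 Z0) | X5 \<Rightarrow> (case a of X0 \<Rightarrow> X0 | X1 \<Rightarrow> X4 | X2 \<Rightarrow> X3 | X3 \<Rightarrow> X2 | X4 \<Rightarrow> X1 | X5 \<Rightarrow> X5 | Y0 \<Rightarrow> Y1 | Y1 \<Rightarrow> Y0 | Y2 \<Rightarrow> Y3 | Y3 \<Rightarrow> Y2 | Z0 \<Rightarrow> Z1 | Z1 \<Rightarrow> Z0 | Z2 \<Rightarrow> Z3 | Z3 \<Rightarrow> Z2) | Y0 \<Rightarrow> (case a of X0 \<Rightarrow> X4 | X1 \<Rightarrow> X3 | X2 \<Rightarrow> X0 | X3 \<Rightarrow> X5 | X4 \<Rightarrow> X2 | X5 \<Rightarrow> X1 | Y0 \<Rightarrow> Y0 | Y1 \<Rightarrow> Y3 | Y2 \<Rightarrow> Y1 | Y3 \<Rightarrow> Y2 | Z0 \<Rightarrow> Z2 | Z1 \<Rightarrow> Z1 | Z2 \<Rightarrow> Z3 | Z3 \<Rightarrow> Z0) | Y1 \<Rightarrow> (case a of X0 \<Rightarrow> X1 | X1 \<Rightarrow> X3 | X2 \<Rightarrow> X5 | X3 \<Rightarrow> X0 | X4 \<Rightarrow> X2 | X5 \<Rightarrow> X4 | Y0 \<Rightarrow> Y2 | Y1 \<Rightarrow> Y1 | Y2 \<Rightarrow> Y3 | Y3 \<Rightarrow> Y0 | Z0 \<Rightarrow> Z0 | Z1 \<Rightarrow> Z3 | Z2 \<Rightarrow> Z1 | Z3 \<Rightarrow> Z2) | Y2 \<Rightarrow> (case a of X0 \<Rightarrow>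 X4 | X1 \<Rightarrow> X2 | X2 \<Rightarrow> X5 | X3 \<Rightarrow> X0 | X4 \<Rightarrow> X3 | X5 \<Rightarrow> X1 | Y0 \<Rightarrow> Y3 | Y1 \<Rightarrow> Y0 | Y2 \<Rightarrow> Y2 | Y3 \<Rightarrow> Y1 | Z0 \<Rightarrow> Z1 | Z1 \<Rightarrow> Z2 | Z2 \<Rightarrow> Z0 | Z3 \<Rightarrow> Z3) | Y3 \<Rightarrow> (case a of X0 \<Rightarrow> X1 | X1 \<Rightarrow> X2 | X2 \<Rightarrow> X0 | X3 \<Rightarrow> X5 | X4 \<Rightarrow> X3 | X5 \<Rightarrow> X4 | Y0 \<Rightarrow> Y1 | Y1 \<Rightarrow> Y2 | Y2 \<Rightarrow> Y0 | Y3 \<Rightarrow> Y3 | Z0 \<Rightarrow> Z3 | Z1 \<Rightarrow> Z0 | Z2 \<Rightarrow> Z2 | Z3 \<Rightarrow> Z1) | Z0 \<Rightarrow> (case a of X0 \<Rightarrow> X3 | X1 \<Rightarrow> X0 | X2 \<Rightarrow> X4 | X3 \<Rightarrow> X1 | X4 \<Rightarrow> X5 | X5 \<Rightarrow> X2 | Y0 \<Rightarrow> Y3 | Y1 \<Rightarrow> Y1 | Y2 \<Rightarrow> Y0 | Y3 \<Rightarrow> Y2 | Z0 \<Rightarrow> Z0 | Z1 \<Rightarrow> Z2 | Z2 \<Rightarrow> Z3 | Z3 \<Rightarrow> Z1) | Z1 \<Rightarrow> (case a of X0 \<Rightarrow> X2 | X1 \<Rightarrow> X5 | X2 \<Rightarrow>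 X4 | X3 \<Rightarrow> X1 | X4 \<Rightarrow> X0 | X5 \<Rightarrow> X3 | Y0 \<Rightarrow> Y0 | Y1 \<Rightarrow> Y2 | Y2 \<Rightarrow> Y3 | Y3 \<Rightarrow> Y1 | Z0 \<Rightarrow> Z3 | Z1 \<Rightarrow> Z1 | Z2 \<Rightarrow> Z0 | Z3 \<Rightarrow> Z2) | Z2 \<Rightarrow> (case a of X0 \<Rightarrow> X2 | X1 \<Rightarrow> X0 | X2 \<Rightarrow> X1 | X3 \<Rightarrow> X4 | X4 \<Rightarrow> X5 | X5 \<Rightarrow> X3 | Y0 \<Rightarrow> Y2 | Y1 \<Rightarrow> Y0 | Y2 \<Rightarrow> Y1 | Y3 \<Rightarrow> Y3 | Z0 \<Rightarrow> Z1 | Z1 \<Rightarrow> Z3 | Z2 \<Rightarrow> Z2 | Z3 \<Rightarrow> Z0) | Z3 \<Rightarrow> (case a of X0 \<Rightarrow> X3 | X1 \<Rightarrow> X5 | X2 \<Rightarrow> X1 | X3 \<Rightarrow> X4 | X4 \<Rightarrow> X0 | X5 \<Rightarrow> X2 | Y0 \<Rightarrow> Y1 | Y1 \<Rightarrow> Y3 | Y2 \<Rightarrow> Y2 | Y3 \<Rightarrow> Y0 | Z0 \<Rightarrow> Z2 | Z1 \<Rightarrow> Z0 | Z2 \<Rightarrow> Z1 | Z3 \<Rightarrow> Z3))"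

lemma ct_simps [simp]:
  "ct X0 X0 = X0"
  "ct X0 X1 = X5"
  "ct X0 X2 = X5"
  "ct X0 X3 = X5"
  "ct X0 X4 = X5"
  "ct X0 X5 = X0"
  "ct X0 Y0 = X4"
  "ct X0 Y1 = X1"
  "ct X0 Y2 = X4"
  "ct X0 Y3 = X1"
  "ct X0 Z0 = X3"
  "ct X0 Z1 = X2"
  "ct X0 Z2 = X2"
  "ct X0 Z3 = X3"
  "ct X1 X0 = X4"
  "ct X1 X1 = X1"
  "ct X1 X2 = X4"
  "ct X1 X3 = X4"
  "ct X1 X4 = X1"
  "ct X1 X5 = X4"
  "ct X1 Y0 = X3"
  "ct X1 Y1 = X3"
  "ct X1 Y2 = X2"
  "ct X1 Y3 = X2"
  "ct X1 Z0 = X0"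
  "ct X1 Z1 = X5"
  "ct X1 Z2 = X0"
  "ct X1 Z3 = X5"
  "ct X2 X0 = X3"
  "ct X2 X1 = X3"
  "ct X2 X2 = X2"
  "ct X2 X3 = X2"
  "ct X2 X4 = X3"
  "ct X2 X5 = X3"
  "ct X2 Y0 = X0"
  "ct X2 Y1 = X5"
  "ct X2 Y2 = X5"
  "ct X2 Y3 = X0"
  "ct X2 Z0 = X4"
  "ct X2 Z1 = X4"
  "ct X2 Z2 = X1"
  "ct X2 Z3 = X1"
  "ct X3 X0 = X2"
  "ct X3 X1 = X2"
  "ct X3 X2 = X3"
  "ct X3 X3 = X3"
  "ct X3 X4 = X2"
  "ct X3 X5 = X2"
  "ct X3 Y0 = X5"
  "ct X3 Y1 = X0"
  "ct X3 Y2 = X0"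
  "ct X3 Y3 = X5"
  "ct X3 Z0 = X1"
  "ct X3 Z1 = X1"
  "ct X3 Z2 = X4"
  "ct X3 Z3 = X4"
  "ct X4 X0 = X1"
  "ct X4 X1 = X4"
  "ct X4 X2 = X1"
  "ct X4 X3 = X1"
  "ct X4 X4 = X4"
  "ct X4 X5 = X1"
  "ct X4 Y0 = X2"
  "ct X4 Y1 = X2"
  "ct X4 Y2 = X3"
  "ct X4 Y3 = X3"
  "ct X4 Z0 = X5"
  "ct X4 Z1 = X0"
  "ct X4 Z2 = X5"
  "ct X4 Z3 = X0"
  "ct X5 X0 = X5"
  "ct X5 X1 = X0"
  "ct X5 X2 = X0"
  "ct X5 X3 = X0"
  "ct X5 X4 = X0"
  "ct X5 X5 = X5"
  "ct X5 Y0 = X1"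
  "ct X5 Y1 = X4"
  "ct X5 Y2 = X1"
  "ct X5 Y3 = X4"
  "ct X5 Z0 = X2"
  "ct X5 Z1 = X3"
  "ct X5 Z2 = X3"
  "ct X5 Z3 = X2"
  "ct Y0 X0 = Y1"
  "ct Y0 X1 = Y3"
  "ct Y0 X2 = Y2"
  "ct Y0 X3 = Y2"
  "ct Y0 X4 = Y3"
  "ct Y0 X5 = Y1"
  "ct Y0 Y0 = Y0"
  "ct Y0 Y1 = Y2"
  "ct Y0 Y2 = Y3"
  "ct Y0 Y3 = Y1"
  "ct Y0 Z0 = Y3"
  "ct Y0 Z1 = Y0"
  "ct Y0 Z2 = Y2"
  "ct Y0 Z3 = Y1"
  "ct Y1 X0 = Y0"
  "ct Y1 X1 = Y2"
  "ct Y1 X2 = Y3"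
  "ct Y1 X3 = Y3"
  "ct Y1 X4 = Y2"
  "ct Y1 X5 = Y0"
  "ct Y1 Y0 = Y3"
  "ct Y1 Y1 = Y1"
  "ct Y1 Y2 = Y0"
  "ct Y1 Y3 = Y2"
  "ct Y1 Z0 = Y1"
  "ct Y1 Z1 = Y2"
  "ct Y1 Z2 = Y0"
  "ct Y1 Z3 = Y3"
  "ct Y2 X0 = Y3"
  "ct Y2 X1 = Y1"
  "ct Y2 X2 = Y0"
  "ct Y2 X3 = Y0"
  "ct Y2 X4 = Y1"
  "ct Y2 X5 = Y3"
  "ct Y2 Y0 = Y1"
  "ct Y2 Y1 = Y3"
  "ct Y2 Y2 = Y2"
  "ct Y2 Y3 = Y0"
  "ct Y2 Z0 = Y0"
  "ct Y2 Z1 = Y3"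
  "ct Y2 Z2 = Y1"
  "ct Y2 Z3 = Y2"
  "ct Y3 X0 = Y2"
  "ct Y3 X1 = Y0"
  "ct Y3 X2 = Y1"
  "ct Y3 X3 = Y1"
  "ct Y3 X4 = Y0"
  "ct Y3 X5 = Y2"
  "ct Y3 Y0 = Y2"
  "ct Y3 Y1 = Y0"
  "ct Y3 Y2 = Y1"
  "ct Y3 Y3 = Y3"
  "ct Y3 Z0 = Y2"
  "ct Y3 Z1 = Y1"
  "ct Y3 Z2 = Y3"
  "ct Y3 Z3 = Y0"
  "ct Z0 X0 = Z1"
  "ct Z0 X1 = Z3"
  "ct Z0 X2 = Z2"
  "ct Z0 X3 = Z2"
  "ct Z0 X4 = Z3"
  "ct Z0 X5 = Z1"
  "ct Z0 Y0 = Z2"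
  "ct Z0 Y1 = Z0"
  "ct Z0 Y2 = Z1"
  "ct Z0 Y3 = Z3"
  "ct Z0 Z0 = Z0"
  "ct Z0 Z1 = Z3"
  "ct Z0 Z2 = Z1"
  "ct Z0 Z3 = Z2"
  "ct Z1 X0 = Z0"
  "ct Z1 X1 = Z2"
  "ct Z1 X2 = Z3"
  "ct Z1 X3 = Z3"
  "ct Z1 X4 = Z2"
  "ct Z1 X5 = Z0"
  "ct Z1 Y0 = Z1"
  "ct Z1 Y1 = Z3"
  "ct Z1 Y2 = Z2"
  "ct Z1 Y3 = Z0"
  "ct Z1 Z0 = Z2"
  "ct Z1 Z1 = Z1"
  "ct Z1 Z2 = Z3"
  "ct Z1 Z3 = Z0"
  "ct Z2 X0 = Z3"
  "ct Z2 X1 = Z1"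
  "ct Z2 X2 = Z0"
  "ct Z2 X3 = Z0"
  "ct Z2 X4 = Z1"
  "ct Z2 X5 = Z3"
  "ct Z2 Y0 = Z3"
  "ct Z2 Y1 = Z1"
  "ct Z2 Y2 = Z0"
  "ct Z2 Y3 = Z2"
  "ct Z2 Z0 = Z3"
  "ct Z2 Z1 = Z0"
  "ct Z2 Z2 = Z2"
  "ct Z2 Z3 = Z1"
  "ct Z3 X0 = Z2"
  "ct Z3 X1 = Z0"
  "ct Z3 X2 = Z1"
  "ct Z3 X3 = Z1"
  "ct Z3 X4 = Z0"
  "ct Z3 X5 = Z2"
  "ct Z3 Y0 = Z0"
  "ct Z3 Y1 = Z2"
  "ct Z3 Y2 = Z3"
  "ct Z3 Y3 = Z1"
  "ct Z3 Z0 = Z1"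
  "ct Z3 Z1 = Z2"
  "ct Z3 Z2 = Z0"
  "ct Z3 Z3 = Z3"
  by (simp_all add: ct_def)

definition uM :: mat2 where "uM = mk2 (qd 1 1 (-1) 1) (qd (-1) 1 (-1) (-1)) (qd 1 1 (-1) 1) (qd 1 (-1) 1 1)"

definition uinv :: mat2 where "uinv = mk2 (qd 1 1 1 (-1)) (qd 1 1 1 (-1)) (qd (-1) 1 1 1) (qd 1 (-1) (-1) (-1))"

fun uc :: "el \<Rightarrow> el" where
  "uc X0 = X1"
| "uc X1 = X3"
| "uc X2 = X5"
| "uc X3 = X0"
| "uc X4 = X2"
| "uc X5 = X4"
| "uc Y0 = Y2"
| "uc Y1 = Y1"
| "uc Y2 = Y3"
| "uc Y3 = Y0"
| "uc Z0 = Z0"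
| "uc Z1 = Z3"
| "uc Z2 = Z1"
| "uc Z3 = Z2"

fun uci :: "el \<Rightarrow> el" where
  "uci X0 = X3"
| "uci X1 = X0"
| "uci X2 = X4"
| "uci X3 = X1"
| "uci X4 = X5"
| "uci X5 = X2"
| "uci Y0 = Y3"
| "uci Y1 = Y1"
| "uci Y2 = Y0"
| "uci Y3 = Y2"
| "uci Z0 = Z0"
| "uci Z1 = Z2"
| "uci Z2 = Z3"
| "uci Z3 = Z1"

definition xsS :: "el list" where "xsS = [X0,X1,X2,X3,X4,X5]"

definition xsR :: "el list" where "xsR = [Y0,Y1,Y2,Y3]"

definition xsQ :: "el list" where "xsQ = [Z0,Z1,Z2,Z3]"
lemma iv_ok: "emat a ** emat (iv a) = mat 1 \<and> emat (iv a) ** emat a = mat 1"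
  by (cases a) (simp_all add: mk2_mult qd_mult qs_add mat1_mk2)

lemma inv_emat: "matrix_inv (emat a) = emat (iv a)"
  using iv_ok matrix_inv_eq by blast

lemma iv_iv [simp]: "iv (iv a) = a"
  by (cases a) simp_all

lemma ct_ok: "emat a ** emat b = emat b ** emat (ct a b)"
  by (cases a; cases b; simp add: mk2_mult qd_mult qs_add)

lemma cancel_l: "(A::mat2) ** B = mat 1 \<Longrightarrow> A ** (B ** X) = X"
  by (metis matrix_mul_assoc matrix_mul_lid)

lemma cancel_r: "(A::mat2) ** B = mat 1 \<Longrightarrow> X ** A ** B = X"
  by (metis matrix_mul_assoc matrix_mul_rid)

lemma ct_conj: "matrix_inv (emat b) ** emat a ** emat b = emat (ct a b)"
proof -
  have "matrix_inv (emat b) ** emat a ** emat b = emat (iv b) ** (emat a ** emat b)"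
    unfolding inv_emat by (rule matrix_mul_assoc[symmetric])
  also have "\<dots> = emat (iv b) ** (emat b ** emat (ct a b))"
    by (simp only: ct_ok[of a b])
  also have "\<dots> = emat (ct a b)"
    using iv_ok[of b] by (rule cancel_l[OF conjunct2])
  finally show ?thesis .
qed

lemma ct_conj': "emat b ** emat a ** matrix_inv (emat b) = emat (ct a (iv b))"
  using ct_conj[of "iv b" a] by (simp add: inv_emat)

lemma transpose_mk2: "transpose (mk2 a b c d) = mk2 a c b d"
  unfolding mk2_def transpose_def by (simp add: vec_eq_iff forall_2)

lemma s_eq: "s_mat = emat X5"
  by (simp add: s_mat_def qd_def)

lemma t_eq: "t_mat = emat Y3"
  by (simp add: t_mat_def qd_def algebra_simps)

lemma u_eq: "u_mat = uM"
  by (simp add: u_mat_def t_eq transpose_mk2 uM_def)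

lemma u_inv: "uM ** uinv = mat 1 \<and> uinv ** uM = mat 1"
  by (simp add: uM_def uinv_def mk2_mult qd_mult qs_add mat1_mk2)

lemma inv_u: "matrix_inv u_mat = uinv"
  unfolding u_eq using u_inv by (intro matrix_inv_eq) auto

lemma uc_ok: "uM ** emat e = emat (uc e) ** uM"
  by (cases e; simp add: uM_def mk2_mult qd_mult qs_add)

lemma uci_ok: "uinv ** emat e = emat (uci e) ** uinv"
  by (cases e; simp add: uinv_def mk2_mult qd_mult qs_add)

lemma uc_conj: "u_mat ** emat e ** matrix_inv u_mat = emat (uc e)"
  unfolding inv_u unfolding u_eq uc_ok using u_inv by (simp add: cancel_r)

lemma uci_conj: "matrix_inv u_mat ** emat e ** u_mat = emat (uci e)"
  unfolding inv_u unfolding u_eq uci_ok using u_inv by (simp add: cancel_l matrix_mul_assoc[symmetric])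

definition tr :: "mat2 \<Rightarrow> complex" where "tr m = m$1$1 + m$2$2"

lemma tr_mk2: "tr (mk2 a b c d) = a + d"
  by (simp add: tr_def mk2_def)

lemma qd_add: "qd a b c d + qd e f g h = qd (a+e) (b+f) (c+g) (d+h)"
  unfolding qd_def by (simp add: add_divide_distrib[symmetric] algebra_simps)

lemma tr_S: "e \<in> set xsS \<Longrightarrow> tr (emat e) = qd 0 0 0 0"
  by (auto simp: xsS_def tr_mk2 qd_add)
lemma tr_R: "e \<in> set xsR \<Longrightarrow> tr (emat e) = qd 2 0 0 2"
  by (auto simp: xsR_def tr_mk2 qd_add)
lemma tr_Q: "e \<in> set xsQ \<Longrightarrow> tr (emat e) = qd 2 0 0 (-2)"
  by (auto simp: xsQ_def tr_mk2 qd_add)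

lemma Im_qd: "Im (qd a b c d) = (of_int c + of_int d * sqrt 3) / 4"
  by (simp add: qd_def r3_def)

lemma qd_distinct: "qd 0 0 0 0 \<noteq> qd 2 0 0 2" "qd 0 0 0 0 \<noteq> qd 2 0 0 (-2)" "qd 2 0 0 2 \<noteq> qd 2 0 0 (-2)"
proof -
  have p: "sqrt 3 > (0::real)" by simp
  show "qd 0 0 0 0 \<noteq> qd 2 0 0 2"
  proof
    assume "qd 0 0 0 0 = qd 2 0 0 2"
    then have "Im (qd 0 0 0 0) = Im (qd 2 0 0 2)" by simp
    then show False using p by (simp add: Im_qd)
  qed
  show "qd 0 0 0 0 \<noteq> qd 2 0 0 (-2)"
  proof
    assume "qd 0 0 0 0 = qd 2 0 0 (-2)"
    then have "Im (qd 0 0 0 0) = Im (qd 2 0 0 (-2))" by simp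
    then show False using p by (simp add: Im_qd)
  qed
  show "qd 2 0 0 2 \<noteq> qd 2 0 0 (-2)"
  proof
    assume "qd 2 0 0 2 = qd 2 0 0 (-2)"
    then have "Im (qd 2 0 0 2) = Im (qd 2 0 0 (-2))" by simp
    then show False using p by (simp add: Im_qd)
  qed
qed
declare emat.simps [simp del]

definition ginv :: "mat2 set \<Rightarrow> bool" where
  "ginv X \<longleftrightarrow> (\<forall>x\<in>X. x ** matrix_inv x = mat 1 \<and> matrix_inv x ** x = mat 1)"

lemma gg_mult: "g \<in> gen_group X \<Longrightarrow> h \<in> gen_group X \<Longrightarrow> g ** h \<in> gen_group X"
  by (induction g rule: gen_group.induct)
     (auto simp: matrix_mul_assoc[symmetric] intro: gen_group.intros)

lemma gg_gen: "x \<in> X \<Longrightarrow> x \<in> gen_group X"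
  using gen_group.mul[of x X "mat 1"] gen_group.one[of X] by simp

lemma gg_geninv: "x \<in> X \<Longrightarrow> matrix_inv x \<in> gen_group X"
  using gen_group.mul_inv[of x X "mat 1"] gen_group.one[of X] by simp

lemma mat1_inv: "matrix_inv (mat 1 :: mat2) = mat 1"
  by (rule matrix_inv_eq) simp_all

lemma gg_inv:
  assumes gi: "ginv X"
  shows "g \<in> gen_group X \<Longrightarrow> matrix_inv g \<in> gen_group X \<and> g ** matrix_inv g = mat 1 \<and> matrix_inv g ** g = mat 1"
proof (induction g rule: gen_group.induct)
  case one
  then show ?case by (simp add: mat1_inv gen_group.one)
next
  case (mul x g)
  have x1: "x ** matrix_inv x = mat 1" "matrix_inv x ** x = mat 1" using gi mul.hyps(1) unfolding ginv_def by auto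
  have g1: "g ** matrix_inv g = mat 1" "matrix_inv g ** g = mat 1" using mul.IH by auto
  have e1: "(x ** g) ** (matrix_inv g ** matrix_inv x) = mat 1"
    using x1 g1 by (simp add: matrix_mul_assoc[symmetric] cancel_l)
  have e2: "(matrix_inv g ** matrix_inv x) ** (x ** g) = mat 1"
    using x1 g1 by (simp add: matrix_mul_assoc[symmetric] cancel_l)
  have inv: "matrix_inv (x ** g) = matrix_inv g ** matrix_inv x"
    using e1 e2 by (rule matrix_inv_eq)
  have "matrix_inv g ** matrix_inv x \<in> gen_group X"
    using mul.IH gg_geninv[OF mul.hyps(1)] gg_mult by blast
  then show ?case using inv e1 e2 by simp
next
  case (mul_inv x g)
  have x1: "x ** matrix_inv x = mat 1" "matrix_inv x ** x = mat 1" using gi mul_inv.hyps(1) unfolding ginv_def by auto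
  have g1: "g ** matrix_inv g = mat 1" "matrix_inv g ** g = mat 1" using mul_inv.IH by auto
  have e1: "(matrix_inv x ** g) ** (matrix_inv g ** x) = mat 1"
    using x1 g1 by (simp add: matrix_mul_assoc[symmetric] cancel_l)
  have e2: "(matrix_inv g ** x) ** (matrix_inv x ** g) = mat 1"
    using x1 g1 by (simp add: matrix_mul_assoc[symmetric] cancel_l)
  have inv: "matrix_inv (matrix_inv x ** g) = matrix_inv g ** x"
    using e1 e2 by (rule matrix_inv_eq)
  have "matrix_inv g ** x \<in> gen_group X"
    using mul_inv.IH gg_gen[OF mul_inv.hyps(1)] gg_mult by blast
  then show ?case using inv e1 e2 by simp
qed

lemma gg_mono: "g \<in> gen_group X \<Longrightarrow> X \<subseteq> Y \<Longrightarrow> g \<in> gen_group Y"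
  by (induction g rule: gen_group.induct) (auto intro: gen_group.intros)

lemma ginv_G7: "ginv {s_mat, t_mat, u_mat}"
  unfolding ginv_def using iv_ok[of X5] iv_ok[of Y3] u_inv by (auto simp: s_eq t_eq inv_emat inv_u[unfolded u_eq] u_eq)

lemma ginv_G6: "ginv {s_mat, t_mat}"
  unfolding ginv_def using iv_ok[of X5] iv_ok[of Y3] by (auto simp: s_eq t_eq inv_emat)

lemma G7_inv: "g \<in> G7 \<Longrightarrow> matrix_inv g \<in> G7 \<and> g ** matrix_inv g = mat 1 \<and> matrix_inv g ** g = mat 1"
  unfolding G7_def using gg_inv[OF ginv_G7] by blast

lemma G6_inv: "g \<in> G6 \<Longrightarrow> matrix_inv g \<in> G6"
  unfolding G6_def using gg_inv[OF ginv_G6] by blast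

lemma G7_mult: "g \<in> G7 \<Longrightarrow> h \<in> G7 \<Longrightarrow> g ** h \<in> G7"
  unfolding G7_def by (rule gg_mult)

lemma G6_mult: "g \<in> G6 \<Longrightarrow> h \<in> G6 \<Longrightarrow> g ** h \<in> G6"
  unfolding G6_def by (rule gg_mult)

lemma G6_G7: "g \<in> G6 \<Longrightarrow> g \<in> G7"
  unfolding G6_def G7_def by (erule gg_mono) auto

lemma mi_mult: "g \<in> G7 \<Longrightarrow> h \<in> G7 \<Longrightarrow> matrix_inv (g ** h) = matrix_inv h ** matrix_inv g"
proof -
  assume g: "g \<in> G7" and h: "h \<in> G7"
  have g1: "g ** matrix_inv g = mat 1" "matrix_inv g ** g = mat 1" using G7_inv[OF g] by auto
  have h1: "h ** matrix_inv h = mat 1" "matrix_inv h ** h = mat 1" using G7_inv[OF h] by auto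
  show ?thesis
    by (rule matrix_inv_eq) (use g1 h1 in \<open>simp_all add: matrix_mul_assoc[symmetric] cancel_l\<close>)
qed

lemma mi_mi: "g \<in> G7 \<Longrightarrow> matrix_inv (matrix_inv g) = g"
  using G7_inv by (intro matrix_inv_eq) auto

lemma G7_conj_simp:
  assumes "g \<in> G7"
  shows "g ** (matrix_inv g ** X) = X" "matrix_inv g ** (g ** X) = X"
        "X ** g ** matrix_inv g = X" "X ** matrix_inv g ** g = X"
  using G7_inv[OF assms] by (auto intro: cancel_l cancel_r)

definition cinv :: "mat2 set \<Rightarrow> bool" where
  "cinv C \<longleftrightarrow> (\<forall>g\<in>G7. \<forall>m\<in>C. g ** m ** matrix_inv g \<in> C)"

lemma cinv_conj_class: "cinv (conj_class G7 a)"
  unfolding cinv_def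
proof (intro ballI)
  fix g m assume g: "g \<in> G7" and m: "m \<in> conj_class G7 a"
  obtain h where h: "h \<in> G7" and mh: "m = h ** a ** matrix_inv h" using m unfolding conj_class_def by auto
  have "g ** m ** matrix_inv g = (g ** h) ** a ** matrix_inv (g ** h)"
    unfolding mh mi_mult[OF g h] by (simp add: matrix_mul_assoc)
  then show "g ** m ** matrix_inv g \<in> conj_class G7 a"
    unfolding conj_class_def using G7_mult[OF g h] by blast
qed

lemma t_G7: "t_mat \<in> G7"
  unfolding G7_def by (rule gg_gen) simp

lemma R1_G7: "r \<in> R1 \<Longrightarrow> r \<in> G7"
  unfolding R1_def conj_class_def using G7_mult G7_inv t_G7 by blast

lemma cinv_S: "cinv S_cls" unfolding S_cls_def by (rule cinv_conj_class)
lemma cinv_R1: "cinv R1" unfolding R1_def by (rule cinv_conj_class)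

lemma cinv_R1inv: "cinv R1inv"
  unfolding cinv_def
proof (intro ballI)
  fix g m assume g: "g \<in> G7" and m: "m \<in> R1inv"
  obtain r where r: "r \<in> R1" and mr: "m = matrix_inv r" using m unfolding R1inv_def by auto
  have rG: "r \<in> G7" using R1_G7[OF r] .
  have c: "g ** r ** matrix_inv g \<in> R1" using cinv_R1 g r unfolding cinv_def by blast
  have "matrix_inv (g ** r ** matrix_inv g) = matrix_inv (matrix_inv g) ** matrix_inv (g ** r)"
    by (rule mi_mult) (use G7_mult[OF g rG] G7_inv[OF g] in auto)
  also have "\<dots> = g ** (matrix_inv r ** matrix_inv g)"
    by (simp add: mi_mi[OF g] mi_mult[OF g rG])
  finally have "g ** m ** matrix_inv g = matrix_inv (g ** r ** matrix_inv g)"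
    unfolding mr by (simp add: matrix_mul_assoc)
  then show "g ** m ** matrix_inv g \<in> R1inv" unfolding R1inv_def using c by blast
qed

lemma cinv_Rp: "cinv Rprime"
  using cinv_R1 cinv_R1inv unfolding cinv_def Rprime_def by blast

lemma cinv_iff: "cinv C \<Longrightarrow> y \<in> G7 \<Longrightarrow> (matrix_inv y ** a ** y \<in> C) = (a \<in> C)"
proof
  assume C: "cinv C" and y: "y \<in> G7"
  have yi: "matrix_inv y \<in> G7" using G7_inv[OF y] by blast
  {
    assume "a \<in> C"
    then have "matrix_inv y ** a ** matrix_inv (matrix_inv y) \<in> C" using C yi unfolding cinv_def by blast
    then show "matrix_inv y ** a ** y \<in> C" by (simp add: mi_mi[OF y])
  }
  {
    assume "matrix_inv y ** a ** y \<in> C"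
    then have "y ** (matrix_inv y ** a ** y) ** matrix_inv y \<in> C" using C y unfolding cinv_def by blast
    then show "a \<in> C" using G7_inv[OF y] by (simp add: matrix_mul_assoc G7_conj_simp[OF y])
  }
qed

lemma cinv_conj2: "cinv C \<Longrightarrow> g \<in> G7 \<Longrightarrow> m \<in> C \<Longrightarrow> matrix_inv g ** m ** g \<in> C"
  using cinv_iff by blast

lemma conj_K:
  assumes K: "\<forall>e\<in>K. ct e X5 \<in> K \<and> ct e (iv X5) \<in> K \<and> ct e Y3 \<in> K \<and> ct e (iv Y3) \<in> K \<and> uc e \<in> K \<and> uci e \<in> K"
  shows "g \<in> gen_group {s_mat, t_mat, u_mat} \<Longrightarrow> e \<in> K \<Longrightarrow> g ** emat e ** matrix_inv g \<in> emat ` K"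
proof (induction g arbitrary: e rule: gen_group.induct)
  case one
  then show ?case by (simp add: mat1_inv)
next
  case (mul x g)
  have xG: "x \<in> G7" unfolding G7_def using mul.hyps(1) by (rule gg_gen)
  obtain e' where e': "e' \<in> K" "g ** emat e ** matrix_inv g = emat e'" using mul.IH[OF mul.prems] by auto
  have "x ** g ** emat e ** matrix_inv (x ** g) = x ** (g ** emat e ** matrix_inv g) ** matrix_inv x"
    by (simp add: mi_mult[OF xG mul.hyps(2)[folded G7_def]] matrix_mul_assoc)
  also have "\<dots> = x ** emat e' ** matrix_inv x" using e' by simp
  finally have eq: "x ** g ** emat e ** matrix_inv (x ** g) = x ** emat e' ** matrix_inv x" .
  have "x ** emat e' ** matrix_inv x \<in> emat ` K"
    using mul.hyps(1) e'(1) K by (auto simp: s_eq t_eq ct_conj' uc_conj)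
  then show ?case using eq by simp
next
  case (mul_inv x g)
  have xG: "x \<in> G7" unfolding G7_def using mul_inv.hyps(1) by (rule gg_gen)
  have xiG: "matrix_inv x \<in> G7" using G7_inv[OF xG] by blast
  obtain e' where e': "e' \<in> K" "g ** emat e ** matrix_inv g = emat e'" using mul_inv.IH[OF mul_inv.prems] by auto
  have "matrix_inv x ** g ** emat e ** matrix_inv (matrix_inv x ** g) = matrix_inv x ** (g ** emat e ** matrix_inv g) ** x"
    by (simp add: mi_mult[OF xiG mul_inv.hyps(2)[folded G7_def]] mi_mi[OF xG] matrix_mul_assoc)
  also have "\<dots> = matrix_inv x ** emat e' ** x" using e' by simp
  finally have eq: "matrix_inv x ** g ** emat e ** matrix_inv (matrix_inv x ** g) = matrix_inv x ** emat e' ** x" .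
  have "matrix_inv x ** emat e' ** x \<in> emat ` K"
    using mul_inv.hyps(1) e'(1) K by (auto simp: s_eq t_eq ct_conj uci_conj)
  then show ?case using eq by simp
qed

lemma S_sub: "S_cls \<subseteq> emat ` set xsS"
proof
  fix m assume "m \<in> S_cls"
  then obtain g where g: "g \<in> G7" and m: "m = g ** emat X5 ** matrix_inv g"
    unfolding S_cls_def conj_class_def s_eq by auto
  show "m \<in> emat ` set xsS" unfolding m
    by (rule conj_K[OF _ g[unfolded G7_def]]) (simp_all add: xsS_def)
qed

lemma R1_sub: "R1 \<subseteq> emat ` set xsR"
proof
  fix m assume "m \<in> R1"
  then obtain g where g: "g \<in> G7" and m: "m = g ** emat Y3 ** matrix_inv g"
    unfolding R1_def conj_class_def t_eq by auto
  show "m \<in> emat ` set xsR" unfolding m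
    by (rule conj_K[OF _ g[unfolded G7_def]]) (simp_all add: xsR_def)
qed

lemma R1inv_sub: "R1inv \<subseteq> emat ` set xsQ"
proof
  fix m assume "m \<in> R1inv"
  then obtain r where r: "r \<in> R1" and m: "m = matrix_inv r" unfolding R1inv_def by auto
  obtain e where e: "e \<in> set xsR" "r = emat e" using R1_sub r by auto
  have "iv e \<in> set xsQ" using e(1) by (auto simp: xsR_def xsQ_def)
  then show "m \<in> emat ` set xsQ" unfolding m e(2) inv_emat by blast
qed

lemma Rp_sub: "Rprime \<subseteq> emat ` set (xsR @ xsQ)"
  using R1_sub R1inv_sub unfolding Rprime_def by auto

lemma disj_SR: "S_cls \<inter> R1 = {}"
  using S_sub R1_sub tr_S tr_R qd_distinct by fastforce
lemma disj_SQ: "S_cls \<inter> R1inv = {}"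
  using S_sub R1inv_sub tr_S tr_Q qd_distinct by fastforce
lemma disj_RQ: "R1 \<inter> R1inv = {}"
  using R1_sub R1inv_sub tr_R tr_Q qd_distinct by fastforce
lemma disj_SRp: "S_cls \<inter> Rprime = {}"
  using disj_SR disj_SQ unfolding Rprime_def by auto

lemma hm_split: "length A = i \<Longrightarrow> hurwitz_move i (A @ a # b # B) = A @ b # (matrix_inv b ** a ** b) # B"
  unfolding hurwitz_move_def by (simp add: nth_append list_update_append)

lemma hstep_split: "hurwitz_step (A @ a # b # B) (A @ b # (matrix_inv b ** a ** b) # B)"
  unfolding hurwitz_step_def by (rule exI[of _ "length A"]) (simp add: hm_split)

lemma decomp: "i + 1 < length L \<Longrightarrow> \<exists>A a b B. L = A @ a # b # B \<and> length A = i"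
proof -
  assume i: "i + 1 < length L"
  have d1: "drop i L = L!i # drop (Suc i) L" using i by (simp add: Cons_nth_drop_Suc)
  have d2: "drop (Suc i) L = L!(Suc i) # drop (Suc (Suc i)) L" using i by (simp add: Cons_nth_drop_Suc)
  have "L = take i L @ L!i # L!(Suc i) # drop (Suc (Suc i)) L" using d1 d2 by (metis append_take_drop_id)
  moreover have "length (take i L) = i" using i by simp
  ultimately show ?thesis by blast
qed

lemma hstep_ctx: "hurwitz_step L L' \<Longrightarrow> hurwitz_step (P @ L @ R) (P @ L' @ R)"
proof -
  assume "hurwitz_step L L'"
  then obtain i where i: "i + 1 < length L" and L': "L' = hurwitz_move i L" unfolding hurwitz_step_def by blast
  obtain A a b B where L: "L = A @ a # b # B" and A: "length A = i" using decomp[OF i] by blast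
  have "L' = A @ b # (matrix_inv b ** a ** b) # B" using L' L A hm_split by simp
  then show ?thesis using hstep_split[of "P @ A" a b "B @ R"] L by simp
qed

lemma hrt_ctx: "hurwitz_step\<^sup>*\<^sup>* L L' \<Longrightarrow> hurwitz_step\<^sup>*\<^sup>* (P @ L @ R) (P @ L' @ R)"
  by (induction rule: rtranclp_induct) (auto intro: rtranclp.rtrancl_into_rtrancl hstep_ctx)

lemma pull: "hurwitz_step\<^sup>*\<^sup>* (A @ y # B) (y # map (\<lambda>a. matrix_inv y ** a ** y) A @ B)"
proof (induction A arbitrary: B rule: rev_induct)
  case Nil
  then show ?case by simp
next
  case (snoc a A)
  have s1: "hurwitz_step ((A @ [a]) @ y # B) (A @ y # (matrix_inv y ** a ** y) # B)"
    using hstep_split[of A a y B] by simp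
  have s2: "hurwitz_step\<^sup>*\<^sup>* (A @ y # ((matrix_inv y ** a ** y) # B))
      (y # map (\<lambda>a. matrix_inv y ** a ** y) A @ (matrix_inv y ** a ** y) # B)"
    by (rule snoc.IH)
  show ?case using converse_rtranclp_into_rtranclp[OF s1 s2] by simp
qed

fun conjB :: "mat2 \<Rightarrow> mat2 list \<Rightarrow> mat2" where
  "conjB w [] = w"
| "conjB w (b # B) = conjB (matrix_inv b ** w ** b) B"

fun uconj :: "mat2 \<Rightarrow> mat2 list \<Rightarrow> mat2" where
  "uconj x [] = x"
| "uconj x (b # B) = b ** uconj x B ** matrix_inv b"

lemma push: "hurwitz_step\<^sup>*\<^sup>* (w # B) (B @ [conjB w B])"
proof (induction B arbitrary: w)
  case Nil
  then show ?case by simp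
next
  case (Cons b B)
  have s1: "hurwitz_step (w # b # B) (b # (matrix_inv b ** w ** b) # B)"
    using hstep_split[of "[]" w b B] by simp
  have s2: "hurwitz_step\<^sup>*\<^sup>* (b # ((matrix_inv b ** w ** b) # B)) (b # (B @ [conjB (matrix_inv b ** w ** b) B]))"
    using hrt_ctx[OF Cons.IH, where P = "[b]" and R = "[]"] by simp
  show ?case using converse_rtranclp_into_rtranclp[OF s1 s2] by simp
qed

lemma conjB_uconj: "set B \<subseteq> G7 \<Longrightarrow> conjB (uconj x B) B = x"
proof (induction B)
  case Nil
  then show ?case by simp
next
  case (Cons b B)
  have b: "b \<in> G7" using Cons.prems by simp
  have "matrix_inv b ** (b ** uconj x B ** matrix_inv b) ** b = uconj x B"
    using G7_inv[OF b] by (simp add: matrix_mul_assoc G7_conj_simp[OF b])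
  then show ?case using Cons by simp
qed

lemma uconj_in: "cinv C \<Longrightarrow> set B \<subseteq> G7 \<Longrightarrow> x \<in> C \<Longrightarrow> uconj x B \<in> C"
  by (induction B) (auto simp: cinv_def)

fun hmi :: "nat \<Rightarrow> el list \<Rightarrow> el list" where
  "hmi 0 (a # b # r) = b # ct a b # r"
| "hmi (Suc n) (a # r) = a # hmi n r"
| "hmi _ r = r"

lemma hmi_num [simp]: "hmi 1 (a # r) = a # hmi 0 r" "hmi 2 (a # r) = a # hmi 1 r"
  by (simp_all add: numeral_2_eq_2)

lemma hmi_split: "hmi (length A) (A @ a # b # B) = A @ b # ct a b # B"
  by (induction A) auto

lemma len_hmi [simp]: "length (hmi i ws) = length ws"
  by (induction i ws rule: hmi.induct) auto

lemma hmi_emat: "i + 1 < length ws \<Longrightarrow> map emat (hmi i ws) = hurwitz_move i (map emat ws)"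
proof -
  assume i: "i + 1 < length ws"
  obtain A a b B where ws: "ws = A @ a # b # B" and A: "length A = i" using decomp[OF i] by blast
  have "hurwitz_move i (map emat ws) = map emat A @ emat b # (matrix_inv (emat b) ** emat a ** emat b) # map emat B"
    unfolding ws by (simp add: hm_split A)
  then show ?thesis unfolding ws using hmi_split[of A a b B] A by (simp add: ct_conj)
qed

lemma app_reach: "\<forall>i\<in>set ms. i + 1 < length ws \<Longrightarrow> hurwitz_step\<^sup>*\<^sup>* (map emat ws) (map emat (fold hmi ms ws))"
proof (induction ms arbitrary: ws)
  case Nil
  then show ?case by simp
next
  case (Cons i ms)
  have i: "i + 1 < length ws" using Cons.prems by simp
  have s1: "hurwitz_step (map emat ws) (map emat (hmi i ws))"
    unfolding hurwitz_step_def using hmi_emat[OF i] i by auto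
  have s2: "hurwitz_step\<^sup>*\<^sup>* (map emat (hmi i ws)) (map emat (fold hmi ms (hmi i ws)))"
    using Cons.IH Cons.prems by simp
  show ?case using converse_rtranclp_into_rtranclp[OF s1 s2] by simp
qed

lemma count_Cons: "count_in C (r # M) = (if r \<in> C then 1 else 0) + count_in C M"
  by (simp add: count_in_def)

lemma count_append: "count_in C (A @ B) = count_in C A + count_in C B"
  by (simp add: count_in_def)

lemma count_map_conj: "cinv C \<Longrightarrow> y \<in> G7 \<Longrightarrow> count_in C (map (\<lambda>a. matrix_inv y ** a ** y) A) = count_in C A"
  by (induction A) (auto simp: count_Cons cinv_iff)

lemma count_pos: "count_in C M \<ge> 1 \<Longrightarrow> \<exists>r\<in>set M. r \<in> C"
  unfolding count_in_def by (induction M) (auto split: if_splits)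

lemma pick:
  assumes M: "set M \<subseteq> G6" and c: "count_in C M \<ge> 1"
  shows "\<exists>r M'. hurwitz_step\<^sup>*\<^sup>* M (r # M') \<and> r \<in> C \<and> set M' \<subseteq> G6 \<and> r \<in> G6 \<and>
     (\<forall>D. cinv D \<longrightarrow> count_in D M = count_in D M' + (if r \<in> D then 1 else 0))"
proof -
  obtain r where r: "r \<in> set M" "r \<in> C" using count_pos[OF c] by blast
  obtain A B where AB: "M = A @ r # B" using split_list[OF r(1)] by blast
  let ?M' = "map (\<lambda>a. matrix_inv r ** a ** r) A @ B"
  have rG: "r \<in> G6" using M r by auto
  have reach: "hurwitz_step\<^sup>*\<^sup>* M (r # ?M')" unfolding AB by (rule pull)
  have G: "set ?M' \<subseteq> G6"
  proof
    fix m assume "m \<in> set ?M'"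
    then consider a where "a \<in> set A" "m = matrix_inv r ** a ** r" | "m \<in> set B" by auto
    then show "m \<in> G6"
    proof cases
      case 1
      have "a \<in> G6" using M 1(1) AB by auto
      then show ?thesis using 1(2) G6_mult G6_inv rG by blast
    next
      case 2
      then show ?thesis using M AB by auto
    qed
  qed
  have cnt: "count_in D M = count_in D ?M' + (if r \<in> D then 1 else 0)" if D: "cinv D" for D
    using count_map_conj[OF D G6_G7[OF rG], of A] unfolding AB
    by (simp add: count_append count_Cons)
  show ?thesis using reach r(2) G rG cnt by blast
qed

lemma pickP:
  assumes T: "hurwitz_step\<^sup>*\<^sup>* T (P @ M)" and M: "set M \<subseteq> G6" and c: "count_in C M \<ge> 1"
  shows "\<exists>r M'. hurwitz_step\<^sup>*\<^sup>* T ((P @ [r]) @ M') \<and> r \<in> C \<and> set M' \<subseteq> G6 \<and>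
     (\<forall>D. cinv D \<longrightarrow> count_in D M = count_in D M' + (if r \<in> D then 1 else 0))"
proof -
  obtain r M' where r: "hurwitz_step\<^sup>*\<^sup>* M (r # M')" "r \<in> C" "set M' \<subseteq> G6"
     "\<forall>D. cinv D \<longrightarrow> count_in D M = count_in D M' + (if r \<in> D then 1 else 0)"
    using pick[OF M c] by blast
  have "hurwitz_step\<^sup>*\<^sup>* (P @ M @ []) (P @ (r # M') @ [])" using hrt_ctx[OF r(1)] by blast
  then have "hurwitz_step\<^sup>*\<^sup>* (P @ M) ((P @ [r]) @ M')" by simp
  then show ?thesis using T r by (meson rtranclp_trans)
qed

lemma finish:
  assumes reach: "hurwitz_step\<^sup>*\<^sup>* T (map emat ws @ B)"
    and B: "set B \<subseteq> G6" and C: "cinv C" "x \<in> C" and CY: "C \<subseteq> emat ` Y"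
    and W: "\<forall>y\<in>Y. \<exists>ms. (\<forall>i\<in>set ms. i + 1 < length ws) \<and> last (fold hmi ms ws) = y"
    and ne: "ws \<noteq> []"
  shows "\<exists>T'\<in>hurwitz_orbit T. T' \<noteq> [] \<and> last T' = x"
proof -
  have B7: "set B \<subseteq> G7" using B G6_G7 by blast
  have "uconj x B \<in> C" using uconj_in[OF C(1) B7 C(2)] .
  then obtain y where y: "y \<in> Y" "uconj x B = emat y" using CY by blast
  obtain ms where ms: "\<forall>i\<in>set ms. i + 1 < length ws" "last (fold hmi ms ws) = y" using W y(1) by blast
  let ?ws = "fold hmi ms ws"
  have len: "length ?ws = length ws" by (induction ms arbitrary: ws) auto
  then have ne': "?ws \<noteq> []" using ne by auto
  then have wsd: "?ws = butlast ?ws @ [y]" using ms(2) by (metis append_butlast_last_id)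
  have r1: "hurwitz_step\<^sup>*\<^sup>* ([] @ map emat ws @ B) ([] @ map emat ?ws @ B)"
    by (rule hrt_ctx[OF app_reach[OF ms(1)]])
  have r2: "hurwitz_step\<^sup>*\<^sup>* (map emat (butlast ?ws) @ (emat y # B) @ []) (map emat (butlast ?ws) @ (B @ [conjB (emat y) B]) @ [])"
    by (rule hrt_ctx[OF push])
  have eq: "map emat ?ws @ B = map emat (butlast ?ws) @ (emat y # B) @ []"
    by (subst wsd) simp
  have cx: "conjB (emat y) B = x" using conjB_uconj[OF B7, of x] y(2) by simp
  let ?T' = "map emat (butlast ?ws) @ B @ [x]"
  have "hurwitz_step\<^sup>*\<^sup>* T ?T'"
    using reach r1 r2 eq cx by (metis (no_types, lifting) append_Nil append_Nil2 rtranclp_trans)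
  then show ?thesis unfolding hurwitz_orbit_def by auto
qed
definition wit1_0 :: "nat list list" where "wit1_0 = [[1,1,1,1,1],[1,0,0,0,1,1],[1,0,0,0,1],[1,1,1],[1],[1,0,0,0,0,0,1],[],[1,1,1,1],[1,0,0,0,0,1],[1,1],[1,1,1,1,1],[1],[1,1,1],[1,0,0,0,1],[1,0,0,0,1,1],[1,0,0,0,0,0,1],[1,1,1,1],[],[1,1],[1,0,0,0,0,1],[1,1,1,1,1],[1,0,0,0,1,1],[1,1,1],[1,0,0,0,1],[1],[1,0,0,0,0,0,1],[1,0,0,0,0,1],[1,1],[],[1,1,1,1],[1,1,1,1,1],[1],[1,0,0,0,1],[1,1,1],[1,0,0,0,1,1],[1,0,0,0,0,0,1],[1,1],[1,0,0,0,0,1],[1,1,1,1],[],[1,1,1,1,1],[1,0,0,0,1],[1,0,0,0,1,1],[1],[1,1,1],[1,0,0,0,0,0,1],[],[1,1,1,1],[1,1],[1,0,0,0,0,1],[1,1,1,1,1],[1,1,1],[1],[1,0,0,0,1,1],[1,0,0,0,1],[1,0,0,0,0,0,1],[1,1,1,1],[],[1,0,0,0,0,1],[1,1]]"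
definition wit1_1 :: "nat list list" where "wit1_1 = [[1,1,1,1,1],[1,0,0,0,1],[1],[1,0,0,0,1,1],[1,1,1],[1,0,0,0,0,0,1],[1,1],[1,0,0,0,0,1],[],[1,1,1,1],[1,1,1,1,1],[1,1,1],[1,0,0,0,1,1],[1],[1,0,0,0,1],[1,0,0,0,0,0,1],[1,0,0,0,0,1],[1,1],[1,1,1,1],[],[1,1,1],[0,1],[0,0,1],[1],[0,0,0,1],[0,0,1,1,1],[],[1,0,0,1],[1,1],[0,1,1],[0,0,1,1,1],[0,0,0,1],[0,0,1],[1],[0,1],[1,1,1],[1,0,0,1],[],[0,1,1],[1,1],[1,1,1],[0,1],[1],[0,0,1],[0,0,0,1],[0,0,1,1,1],[1,1],[0,1,1],[],[1,0,0,1],[0,0,1,1,1],[0,0,0,1],[1],[0,0,1],[0,1],[1,1,1],[0,1,1],[1,1],[1,0,0,1],[]]"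
definition wit1_2 :: "nat list list" where "wit1_2 = [[1],[0,1,1,1],[0,1],[0,0,0,1],[0,0,0,1,1,1],[0,0,1],[],[1,1],[0,1,1],[1,0,0,1],[0,0,1],[1,1,1,1,1],[1,1,1],[0,1],[0,1,1,1],[1],[1,1],[],[1,0,0,1],[0,1,1],[1],[0,1,1,1],[0,0,0,1],[0,1],[0,0,0,1,1,1],[0,0,1],[0,1,1],[1,0,0,1],[],[1,1],[0,0,1],[1,1,1,1,1],[0,1],[1,1,1],[0,1,1,1],[1],[1,0,0,1],[0,1,1],[1,1],[],[1],[0,1],[0,1,1,1],[0,0,0,1,1,1],[0,0,0,1],[0,0,1],[],[1,1],[1,0,0,1],[0,1,1],[0,0,1],[1,1,1],[1,1,1,1,1],[0,1,1,1],[0,1],[1],[1,1],[],[0,1,1],[1,0,0,1]]"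
definition wit1_3 :: "nat list list" where "wit1_3 = [[0,0,1],[0,1],[1,1,1,1,1],[0,1,1,1],[1,1,1],[1],[1,0,0,1],[0,1,1],[],[1,1],[1],[0,0,0,1],[0,1,1,1],[0,0,0,1,1,1],[0,1],[0,0,1],[0,1,1],[1,0,0,1],[1,1],[],[1,1,1],[0,0,1],[0,1],[0,0,0,1],[1],[0,0,1,1,1],[],[1,0,0,1],[0,1,1],[1,1],[0,0,1,1,1],[0,0,1],[0,0,0,1],[0,1],[1],[1,1,1],[1,0,0,1],[],[1,1],[0,1,1],[0,0,1,1,1],[1],[0,0,0,1],[0,1],[0,0,1],[1,1,1],[0,1,1],[1,1],[],[1,0,0,1],[1,1,1],[1],[0,1],[0,0,0,1],[0,0,1],[0,0,1,1,1],[1,1],[0,1,1],[1,0,0,1],[]]"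
definition wit1_4 :: "nat list list" where "wit1_4 = [[0,0,1],[0,1],[0,1,1,1],[1,1,1,1,1],[1,1,1],[1],[],[1,1],[1,0,0,1],[0,1,1],[1],[0,0,0,1],[0,0,0,1,1,1],[0,1,1,1],[0,1],[0,0,1],[1,1],[],[0,1,1],[1,0,0,1],[1],[0,1],[0,0,0,1,1,1],[0,1,1,1],[0,0,0,1],[0,0,1],[1,0,0,1],[0,1,1],[],[1,1],[0,0,1],[1,1,1],[0,1,1,1],[1,1,1,1,1],[0,1],[1],[0,1,1],[1,0,0,1],[1,1],[],[0,0,1,1,1],[1],[0,1],[0,0,0,1],[0,0,1],[1,1,1],[],[1,0,0,1],[0,1,1],[1,1],[1,1,1],[1],[0,0,0,1],[0,1],[0,0,1],[0,0,1,1,1],[1,0,0,1],[],[1,1],[0,1,1]]"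
definition wit1_5 :: "nat list list" where "wit1_5 = [[1,1,1],[0,0,1],[0,0,0,1],[0,1],[1],[0,0,1,1,1],[0,1,1],[1,1],[],[1,0,0,1],[0,0,1,1,1],[0,0,1],[0,1],[0,0,0,1],[1],[1,1,1],[1,1],[0,1,1],[1,0,0,1],[],[0,0,1,1,1],[0,1],[1],[0,0,1],[0,0,0,1],[1,1,1],[],[1,0,0,1],[1,1],[0,1,1],[1,1,1],[0,0,0,1],[1],[0,0,1],[0,1],[0,0,1,1,1],[1,0,0,1],[],[0,1,1],[1,1],[0,0,1,1,1],[0,1],[0,0,1],[1],[0,0,0,1],[1,1,1],[1,1],[0,1,1],[],[1,0,0,1],[1,1,1],[0,0,0,1],[0,0,1],[1],[0,1],[0,0,1,1,1],[0,1,1],[1,1],[1,0,0,1],[]]"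
definition wit1_6 :: "nat list list" where "wit1_6 = [[0,0,1],[0,1,1,1],[0,1],[1,1,1],[1,1,1,1,1],[1],[],[1,1],[0,1,1],[1,0,0,1],[1],[0,0,0,1,1,1],[0,0,0,1],[0,1],[0,1,1,1],[0,0,1],[1,1],[],[1,0,0,1],[0,1,1],[0,0,1],[0,1,1,1],[1,1,1],[0,1],[1,1,1,1,1],[1],[0,1,1],[1,0,0,1],[],[1,1],[1],[0,0,0,1,1,1],[0,1],[0,0,0,1],[0,1,1,1],[0,0,1],[1,0,0,1],[0,1,1],[1,1],[],[0,1,1,1,1,1],[1],[1,1,1],[0,1,1,1],[0,1],[1,1,1,1,1],[],[1,1,1,1],[1,0,0,0,0,1],[1,1],[0,1,1,1,1,1],[0,1],[0,1,1,1],[1,1,1],[1],[1,1,1,1,1],[1,1,1,1],[],[1,1],[1,0,0,0,0,1]]"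
definition wit1_7 :: "nat list list" where "wit1_7 = [[0,1,1,1,1,1],[1],[0,1,1,1],[1,1,1],[0,1],[1,1,1,1,1],[1,0,0,0,0,1],[1,1],[],[1,1,1,1],[0,1,1,1,1,1],[0,1],[1,1,1],[0,1,1,1],[1],[1,1,1,1,1],[1,1],[1,0,0,0,0,1],[1,1,1,1],[],[0,1,1,1,1,1],[1,1,1],[1],[0,1],[0,1,1,1],[1,1,1,1,1],[],[1,1,1,1],[1,1],[1,0,0,0,0,1],[0,1,1,1,1,1],[0,1,1,1],[0,1],[1],[1,1,1],[1,1,1,1,1],[1,1,1,1],[],[1,0,0,0,0,1],[1,1],[0,1,1,1,1,1],[1,1,1],[0,1],[1],[0,1,1,1],[1,1,1,1,1],[1,1],[1,0,0,0,0,1],[],[1,1,1,1],[0,1,1,1,1,1],[0,1,1,1],[1],[0,1],[1,1,1],[1,1,1,1,1],[1,0,0,0,0,1],[1,1],[1,1,1,1],[]]"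
definition wit1_8 :: "nat list list" where "wit1_8 = [[1,1,1,1,1],[0,0,1],[0,1],[1,1,1],[1],[0,1,1,1],[],[1,0,0,1],[0,1,1],[1,1],[0,1,1,1],[1],[0,1],[0,0,0,1],[0,0,1],[0,0,0,1,1,1],[1,0,0,1],[],[1,1],[0,1,1],[1,1,1,1,1],[0,0,1],[1,1,1],[0,1],[1],[0,1,1,1],[0,1,1],[1,1],[],[1,0,0,1],[0,1,1,1],[1],[0,0,0,1],[0,1],[0,0,1],[0,0,0,1,1,1],[1,1],[0,1,1],[1,0,0,1],[],[0,0,0,1],[0,0,1,1,1],[0,0,1],[1],[1,1,1],[0,1],[],[0,1,1],[1,1],[1,0,0,1],[0,1],[1,1,1],[1],[0,0,1],[0,0,1,1,1],[0,0,0,1],[0,1,1],[],[1,0,0,1],[1,1]]"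
definition wit1_9 :: "nat list list" where "wit1_9 = [[0,0,0,1],[0,0,1,1,1],[1],[0,0,1],[1,1,1],[0,1],[1,1],[1,0,0,1],[],[0,1,1],[0,1],[1,1,1],[0,0,1],[1],[0,0,1,1,1],[0,0,0,1],[1,0,0,1],[1,1],[0,1,1],[],[1,1,1],[1,1,1,1,1],[1,0,0,0,1,1],[1],[1,0,0,0,0,0,1],[1,0,0,0,1],[],[1,0,0,0,0,1],[1,1],[1,1,1,1],[1,0,0,0,1],[1,1,1,1,1],[1,0,0,0,1,1],[1],[1,0,0,0,0,0,1],[1,1,1],[1,0,0,0,0,1],[],[1,1,1,1],[1,1],[1,1,1],[1,1,1,1,1],[1],[1,0,0,0,1,1],[1,0,0,0,0,0,1],[1,0,0,0,1],[1,1],[1,1,1,1],[],[1,0,0,0,0,1],[1,0,0,0,1],[1,1,1,1,1],[1],[1,0,0,0,1,1],[1,0,0,0,0,0,1],[1,1,1],[1,1,1,1],[1,1],[1,0,0,0,0,1],[]]"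
definition wit1_10 :: "nat list list" where "wit1_10 = [[1],[1,1,1,1,1],[1,1,1],[1,0,0,0,1],[1,0,0,0,0,0,1],[1,0,0,0,1,1],[],[1,1],[1,0,0,0,0,1],[1,1,1,1],[1,0,0,0,1,1],[1,1,1,1,1],[1,1,1],[1,0,0,0,1],[1,0,0,0,0,0,1],[1],[1,1],[],[1,1,1,1],[1,0,0,0,0,1],[1],[1,1,1,1,1],[1,0,0,0,1],[1,1,1],[1,0,0,0,0,0,1],[1,0,0,0,1,1],[1,0,0,0,0,1],[1,1,1,1],[],[1,1],[1,0,0,0,1,1],[1,1,1,1,1],[1,0,0,0,1],[1,1,1],[1,0,0,0,0,0,1],[1],[1,1,1,1],[1,0,0,0,0,1],[1,1],[],[1],[1,1,1],[0,1],[0,0,0,1],[0,0,1,1,1],[0,0,1],[],[1,1],[0,1,1],[1,0,0,1],[0,0,1],[1,1,1],[0,1],[0,0,0,1],[0,0,1,1,1],[1],[1,1],[],[1,0,0,1],[0,1,1]]"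
definition wit1_11 :: "nat list list" where "wit1_11 = [[0,0,1],[0,0,1,1,1],[0,0,0,1],[0,1],[1,1,1],[1],[0,1,1],[1,0,0,1],[],[1,1],[1],[0,0,1,1,1],[0,0,0,1],[0,1],[1,1,1],[0,0,1],[1,0,0,1],[0,1,1],[1,1],[],[1,1,1],[0,0,1],[1,1,1,1,1],[0,1,1,1],[1],[0,1],[],[0,1,1],[1,0,0,1],[1,1],[0,1],[0,0,1],[1,1,1,1,1],[0,1,1,1],[1],[1,1,1],[0,1,1],[],[1,1],[1,0,0,1],[0,0,0,1],[1],[0,1,1,1],[0,0,0,1,1,1],[0,0,1],[0,1],[1,0,0,1],[1,1],[],[0,1,1],[0,1],[1],[0,1,1,1],[0,0,0,1,1,1],[0,0,1],[0,0,0,1],[1,1],[1,0,0,1],[0,1,1],[]]"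
definition wit1_12 :: "nat list list" where "wit1_12 = [[0,0,1],[0,0,1,1,1],[0,1],[0,0,0,1],[1,1,1],[1],[],[1,1],[0,1,1],[1,0,0,1],[1],[0,0,1,1,1],[0,1],[0,0,0,1],[1,1,1],[0,0,1],[1,1],[],[1,0,0,1],[0,1,1],[1],[1,1,1],[0,0,0,1],[0,1],[0,0,1,1,1],[0,0,1],[0,1,1],[1,0,0,1],[],[1,1],[0,0,1],[1,1,1],[0,0,0,1],[0,1],[0,0,1,1,1],[1],[1,0,0,1],[0,1,1],[1,1],[],[0,0,0,1],[1],[0,0,0,1,1,1],[0,1,1,1],[0,0,1],[0,1],[],[0,1,1],[1,0,0,1],[1,1],[0,1],[1],[0,0,0,1,1,1],[0,1,1,1],[0,0,1],[0,0,0,1],[0,1,1],[],[1,1],[1,0,0,1]]"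
definition wit1_13 :: "nat list list" where "wit1_13 = [[1,1,1],[0,0,1],[0,1,1,1],[1,1,1,1,1],[1],[0,1],[1,0,0,1],[1,1],[],[0,1,1],[0,1],[0,0,1],[0,1,1,1],[1,1,1,1,1],[1],[1,1,1],[1,1],[1,0,0,1],[0,1,1],[],[0,1,1,1],[0,1,1,1,1,1],[1],[0,1],[1,1,1,1,1],[1,1,1],[],[1,0,0,0,0,1],[1,1],[1,1,1,1],[1,1,1],[0,1,1,1,1,1],[1],[0,1],[1,1,1,1,1],[0,1,1,1],[1,0,0,0,0,1],[],[1,1,1,1],[1,1],[0,1,1,1],[0,1,1,1,1,1],[0,1],[1],[1,1,1,1,1],[1,1,1],[1,1],[1,1,1,1],[],[1,0,0,0,0,1],[1,1,1],[0,1,1,1,1,1],[0,1],[1],[1,1,1,1,1],[0,1,1,1],[1,1,1,1],[1,1],[1,0,0,0,0,1],[]]"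
definition wit1_14 :: "nat list list" where "wit1_14 = [[0,1],[0,1,1,1,1,1],[0,1,1,1],[1,1,1],[1,1,1,1,1],[1],[],[1,1],[1,0,0,0,0,1],[1,1,1,1],[1],[0,1,1,1,1,1],[0,1,1,1],[1,1,1],[1,1,1,1,1],[0,1],[1,1],[],[1,1,1,1],[1,0,0,0,0,1],[0,1],[0,1,1,1,1,1],[1,1,1],[0,1,1,1],[1,1,1,1,1],[1],[1,0,0,0,0,1],[1,1,1,1],[],[1,1],[1],[0,1,1,1,1,1],[1,1,1],[0,1,1,1],[1,1,1,1,1],[0,1],[1,1,1,1],[1,0,0,0,0,1],[1,1],[],[0,0,0,1,1,1],[1],[0,1],[0,0,0,1],[0,0,1],[0,1,1,1],[],[1,0,0,1],[0,1,1],[1,1],[0,1,1,1],[0,0,1],[0,1],[1,1,1],[1],[1,1,1,1,1],[1,0,0,1],[],[1,1],[0,1,1]]"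
definition wit1_15 :: "nat list list" where "wit1_15 = [[0,0,0,1,1,1],[1],[0,0,0,1],[0,1],[0,0,1],[0,1,1,1],[0,1,1],[1,1],[],[1,0,0,1],[0,1,1,1],[0,0,1],[1,1,1],[0,1],[1],[1,1,1,1,1],[1,1],[0,1,1],[1,0,0,1],[],[0,0,0,1],[1,1,1],[1],[0,0,1],[0,0,1,1,1],[0,1],[],[0,1,1],[1,1],[1,0,0,1],[0,1],[0,0,1,1,1],[0,0,1],[1],[1,1,1],[0,0,0,1],[0,1,1],[],[1,0,0,1],[1,1],[0,0,0,1],[1,1,1],[0,0,1],[1],[0,0,1,1,1],[0,1],[1,1],[1,0,0,1],[],[0,1,1],[0,1],[0,0,1,1,1],[1],[0,0,1],[1,1,1],[0,0,0,1],[1,0,0,1],[1,1],[0,1,1],[]]"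
definition wit1_16 :: "nat list list" where "wit1_16 = [[0,0,0,1],[0,0,1],[0,0,1,1,1],[1,1,1],[1],[0,1],[],[0,1,1],[1,0,0,1],[1,1],[0,1],[1],[1,1,1],[0,0,1,1,1],[0,0,1],[0,0,0,1],[0,1,1],[],[1,1],[1,0,0,1],[0,1],[0,0,1],[1,1,1],[0,0,1,1,1],[1],[0,0,0,1],[1,0,0,1],[1,1],[],[0,1,1],[0,0,0,1],[1],[0,0,1,1,1],[1,1,1],[0,0,1],[0,1],[1,1],[1,0,0,1],[0,1,1],[],[1,1,1,1,1],[0,1],[0,0,1],[1],[1,1,1],[0,1,1,1],[],[1,0,0,1],[1,1],[0,1,1],[0,1,1,1],[0,1],[1],[0,0,1],[0,0,0,1],[0,0,0,1,1,1],[1,0,0,1],[],[0,1,1],[1,1]]"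
definition wit1_17 :: "nat list list" where "wit1_17 = [[0,1,1,1],[0,0,0,1],[1],[0,0,1],[0,1],[0,0,0,1,1,1],[1,1],[0,1,1],[],[1,0,0,1],[1,1,1,1,1],[1,1,1],[0,0,1],[1],[0,1],[0,1,1,1],[0,1,1],[1,1],[1,0,0,1],[],[1,1,1],[1,1,1,1,1],[0,0,1],[1],[0,1,1,1],[0,1],[],[0,1,1],[1,1],[1,0,0,1],[0,1],[1,1,1,1,1],[0,0,1],[1],[0,1,1,1],[1,1,1],[0,1,1],[],[1,0,0,1],[1,1],[0,1],[0,1,1,1],[1],[0,0,1],[0,0,0,1,1,1],[0,0,0,1],[1,1],[1,0,0,1],[],[0,1,1],[0,0,0,1],[0,1,1,1],[1],[0,0,1],[0,0,0,1,1,1],[0,1],[1,0,0,1],[1,1],[0,1,1],[]]"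
definition wit1_18 :: "nat list list" where "wit1_18 = [[1],[0,1],[1,1,1],[0,0,1,1,1],[0,0,0,1],[0,0,1],[],[1,1],[1,0,0,1],[0,1,1],[0,0,1],[0,1],[1,1,1],[0,0,1,1,1],[0,0,0,1],[1],[1,1],[],[0,1,1],[1,0,0,1],[1],[0,0,0,1],[0,0,1,1,1],[1,1,1],[0,1],[0,0,1],[1,0,0,1],[0,1,1],[],[1,1],[0,0,1],[0,0,0,1],[0,0,1,1,1],[1,1,1],[0,1],[1],[0,1,1],[1,0,0,1],[1,1],[],[1],[1,1,1],[1,1,1,1,1],[1,0,0,0,0,0,1],[1,0,0,0,1],[1,0,0,0,1,1],[],[1,1],[1,1,1,1],[1,0,0,0,0,1],[1,0,0,0,1,1],[1,1,1],[1,1,1,1,1],[1,0,0,0,0,0,1],[1,0,0,0,1],[1],[1,1],[],[1,0,0,0,0,1],[1,1,1,1]]"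
definition wit1_19 :: "nat list list" where "wit1_19 = [[1,0,0,0,1,1],[1,0,0,0,1],[1,1,1,1,1],[1,0,0,0,0,0,1],[1,1,1],[1],[1,1,1,1],[1,0,0,0,0,1],[],[1,1],[1],[1,0,0,0,1],[1,1,1,1,1],[1,0,0,0,0,0,1],[1,1,1],[1,0,0,0,1,1],[1,0,0,0,0,1],[1,1,1,1],[1,1],[],[1,1,1],[1,0,0,0,1,1],[1,1,1,1,1],[1,0,0,0,0,0,1],[1],[1,0,0,0,1],[],[1,0,0,0,0,1],[1,1,1,1],[1,1],[1,0,0,0,1],[1,0,0,0,1,1],[1,1,1,1,1],[1,0,0,0,0,0,1],[1],[1,1,1],[1,0,0,0,0,1],[],[1,1],[1,1,1,1],[1,0,0,0,1],[1],[1,1,1,1,1],[1,0,0,0,0,0,1],[1,0,0,0,1,1],[1,1,1],[1,1,1,1],[1,1],[],[1,0,0,0,0,1],[1,1,1],[1],[1,1,1,1,1],[1,0,0,0,0,0,1],[1,0,0,0,1,1],[1,0,0,0,1],[1,1],[1,1,1,1],[1,0,0,0,0,1],[]]"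
definition wit1_20 :: "nat list list" where "wit1_20 = [[0,1],[0,1,1,1],[0,1,1,1,1,1],[1,1,1,1,1],[1,1,1],[1],[],[1,1],[1,1,1,1],[1,0,0,0,0,1],[1],[0,1,1,1],[0,1,1,1,1,1],[1,1,1,1,1],[1,1,1],[0,1],[1,1],[],[1,0,0,0,0,1],[1,1,1,1],[1],[1,1,1],[0,1,1,1,1,1],[1,1,1,1,1],[0,1,1,1],[0,1],[1,1,1,1],[1,0,0,0,0,1],[],[1,1],[0,1],[1,1,1],[0,1,1,1,1,1],[1,1,1,1,1],[0,1,1,1],[1],[1,0,0,0,0,1],[1,1,1,1],[1,1],[],[0,1,1,1],[1],[0,1,1,1,1,1],[1,1,1,1,1],[0,1],[1,1,1],[],[1,0,0,0,0,1],[1,1,1,1],[1,1],[1,1,1],[1],[0,1,1,1,1,1],[1,1,1,1,1],[0,1],[0,1,1,1],[1,0,0,0,0,1],[],[1,1],[1,1,1,1]]"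
definition wit1_21 :: "nat list list" where "wit1_21 = [[1,1,1],[0,1],[0,1,1,1,1,1],[1,1,1,1,1],[1],[0,1,1,1],[1,1,1,1],[1,1],[],[1,0,0,0,0,1],[0,1,1,1],[0,1],[0,1,1,1,1,1],[1,1,1,1,1],[1],[1,1,1],[1,1],[1,1,1,1],[1,0,0,0,0,1],[],[0,0,0,1],[0,0,0,1,1,1],[1],[0,0,1],[0,1,1,1],[0,1],[],[0,1,1],[1,1],[1,0,0,1],[0,1],[0,0,0,1,1,1],[1],[0,0,1],[0,1,1,1],[0,0,0,1],[0,1,1],[],[1,0,0,1],[1,1],[0,1],[0,1,1,1],[0,0,1],[1],[1,1,1,1,1],[1,1,1],[1,1],[1,0,0,1],[],[0,1,1],[1,1,1],[0,1,1,1],[0,0,1],[1],[1,1,1,1,1],[0,1],[1,0,0,1],[1,1],[0,1,1],[]]"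
definition wit1_22 :: "nat list list" where "wit1_22 = [[0,0,1],[0,1],[0,0,1,1,1],[1,1,1],[0,0,0,1],[1],[],[1,1],[1,0,0,1],[0,1,1],[1],[0,1],[0,0,1,1,1],[1,1,1],[0,0,0,1],[0,0,1],[1,1],[],[0,1,1],[1,0,0,1],[0,0,1],[0,0,0,1],[1,1,1],[0,0,1,1,1],[0,1],[1],[1,0,0,1],[0,1,1],[],[1,1],[1],[0,0,0,1],[1,1,1],[0,0,1,1,1],[0,1],[0,0,1],[0,1,1],[1,0,0,1],[1,1],[],[0,0,0,1],[1],[1,1,1],[0,0,1,1,1],[0,0,1],[0,1],[],[0,1,1],[1,0,0,1],[1,1],[0,1],[0,0,1],[0,0,1,1,1],[1,1,1],[1],[0,0,0,1],[0,1,1],[],[1,1],[1,0,0,1]]"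
definition wit1_23 :: "nat list list" where "wit1_23 = [[0,1],[1],[0,0,1,1,1],[1,1,1],[0,0,1],[0,0,0,1],[1,0,0,1],[1,1],[],[0,1,1],[0,0,0,1],[0,0,1],[1,1,1],[0,0,1,1,1],[1],[0,1],[1,1],[1,0,0,1],[0,1,1],[],[0,0,0,1,1,1],[0,1],[1],[0,0,1],[0,0,0,1],[0,1,1,1],[],[1,0,0,1],[1,1],[0,1,1],[0,1,1,1],[0,1],[0,0,1],[1],[1,1,1],[1,1,1,1,1],[1,0,0,1],[],[0,1,1],[1,1],[0,1,1,1],[1,1,1],[0,0,1],[1],[0,1],[1,1,1,1,1],[1,1],[0,1,1],[],[1,0,0,1],[0,0,0,1,1,1],[0,0,0,1],[1],[0,0,1],[0,1],[0,1,1,1],[0,1,1],[1,1],[1,0,0,1],[]]"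
definition wit1_24 :: "nat list list" where "wit1_24 = [[0,1],[0,0,1],[0,0,1,1,1],[1,1,1],[1],[0,0,0,1],[],[0,1,1],[1,0,0,1],[1,1],[0,0,0,1],[1],[1,1,1],[0,0,1,1,1],[0,0,1],[0,1],[0,1,1],[],[1,1],[1,0,0,1],[0,0,0,1],[0,0,1],[1,1,1],[0,0,1,1,1],[1],[0,1],[1,0,0,1],[1,1],[],[0,1,1],[0,1],[1],[0,0,1,1,1],[1,1,1],[0,0,1],[0,0,0,1],[1,1],[1,0,0,1],[0,1,1],[],[0,1,1,1],[0,0,0,1],[0,0,1],[1],[0,1],[0,0,0,1,1,1],[],[1,0,0,1],[1,1],[0,1,1],[1,1,1,1,1],[1,1,1],[1],[0,0,1],[0,1],[0,1,1,1],[1,0,0,1],[],[0,1,1],[1,1]]"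
definition wit1_25 :: "nat list list" where "wit1_25 = [[1,1,1,1,1],[0,1],[1],[0,0,1],[1,1,1],[0,1,1,1],[1,1],[0,1,1],[],[1,0,0,1],[0,1,1,1],[0,1],[0,0,1],[1],[0,0,0,1],[0,0,0,1,1,1],[0,1,1],[1,1],[1,0,0,1],[],[0,1],[0,1,1,1],[0,0,1],[1],[0,0,0,1,1,1],[0,0,0,1],[],[0,1,1],[1,1],[1,0,0,1],[0,0,0,1],[0,1,1,1],[0,0,1],[1],[0,0,0,1,1,1],[0,1],[0,1,1],[],[1,0,0,1],[1,1],[1,1,1],[1,1,1,1,1],[1],[0,0,1],[0,1,1,1],[0,1],[1,1],[1,0,0,1],[],[0,1,1],[0,1],[1,1,1,1,1],[1],[0,0,1],[0,1,1,1],[1,1,1],[1,0,0,1],[1,1],[0,1,1],[]]"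
definition wit1_26 :: "nat list list" where "wit1_26 = [[1],[0,0,0,1],[1,1,1],[0,0,1,1,1],[0,1],[0,0,1],[],[1,1],[1,0,0,1],[0,1,1],[0,0,1],[0,0,0,1],[1,1,1],[0,0,1,1,1],[0,1],[1],[1,1],[],[0,1,1],[1,0,0,1],[1],[0,1],[0,0,1,1,1],[1,1,1],[0,0,0,1],[0,0,1],[1,0,0,1],[0,1,1],[],[1,1],[0,0,1],[0,1],[0,0,1,1,1],[1,1,1],[0,0,0,1],[1],[0,1,1],[1,0,0,1],[1,1],[],[1],[1,1,1],[1,1,1,1,1],[0,1,1,1,1,1],[0,1,1,1],[0,1],[],[1,1],[1,1,1,1],[1,0,0,0,0,1],[0,1],[1,1,1],[1,1,1,1,1],[0,1,1,1,1,1],[0,1,1,1],[1],[1,1],[],[1,0,0,0,0,1],[1,1,1,1]]"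
definition wit1_27 :: "nat list list" where "wit1_27 = [[0,1],[0,1,1,1],[1,1,1,1,1],[0,1,1,1,1,1],[1,1,1],[1],[1,1,1,1],[1,0,0,0,0,1],[],[1,1],[1],[0,1,1,1],[1,1,1,1,1],[0,1,1,1,1,1],[1,1,1],[0,1],[1,0,0,0,0,1],[1,1,1,1],[1,1],[],[1,1,1],[0,1],[1,1,1,1,1],[0,1,1,1,1,1],[1],[0,1,1,1],[],[1,0,0,0,0,1],[1,1,1,1],[1,1],[0,1,1,1],[0,1],[1,1,1,1,1],[0,1,1,1,1,1],[1],[1,1,1],[1,0,0,0,0,1],[],[1,1],[1,1,1,1],[0,1,1,1],[1],[1,1,1,1,1],[0,1,1,1,1,1],[0,1],[1,1,1],[1,1,1,1],[1,1],[],[1,0,0,0,0,1],[1,1,1],[1],[1,1,1,1,1],[0,1,1,1,1,1],[0,1],[0,1,1,1],[1,1],[1,1,1,1],[1,0,0,0,0,1],[]]"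
definition wit1_28 :: "nat list list" where "wit1_28 = [[1,0,0,0,1,1],[1,0,0,0,1],[1,0,0,0,0,0,1],[1,1,1,1,1],[1,1,1],[1],[],[1,1],[1,1,1,1],[1,0,0,0,0,1],[1],[1,0,0,0,1],[1,0,0,0,0,0,1],[1,1,1,1,1],[1,1,1],[1,0,0,0,1,1],[1,1],[],[1,0,0,0,0,1],[1,1,1,1],[1],[1,1,1],[1,0,0,0,0,0,1],[1,1,1,1,1],[1,0,0,0,1],[1,0,0,0,1,1],[1,1,1,1],[1,0,0,0,0,1],[],[1,1],[1,0,0,0,1,1],[1,1,1],[1,0,0,0,0,0,1],[1,1,1,1,1],[1,0,0,0,1],[1],[1,0,0,0,0,1],[1,1,1,1],[1,1],[],[1,0,0,0,1],[1],[1,0,0,0,0,0,1],[1,1,1,1,1],[1,0,0,0,1,1],[1,1,1],[],[1,0,0,0,0,1],[1,1,1,1],[1,1],[1,1,1],[1],[1,0,0,0,0,0,1],[1,1,1,1,1],[1,0,0,0,1,1],[1,0,0,0,1],[1,0,0,0,0,1],[],[1,1],[1,1,1,1]]"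
definition wit1_29 :: "nat list list" where "wit1_29 = [[1,1,1],[1,0,0,0,1,1],[1,0,0,0,0,0,1],[1,1,1,1,1],[1],[1,0,0,0,1],[1,1,1,1],[1,1],[],[1,0,0,0,0,1],[1,0,0,0,1],[1,0,0,0,1,1],[1,0,0,0,0,0,1],[1,1,1,1,1],[1],[1,1,1],[1,1],[1,1,1,1],[1,0,0,0,0,1],[],[0,1],[0,1,1,1],[1],[0,0,1],[1,1,1,1,1],[1,1,1],[],[0,1,1],[1,1],[1,0,0,1],[1,1,1],[0,1,1,1],[1],[0,0,1],[1,1,1,1,1],[0,1],[0,1,1],[],[1,0,0,1],[1,1],[0,0,0,1],[0,0,0,1,1,1],[0,0,1],[1],[0,1,1,1],[0,1],[1,1],[1,0,0,1],[],[0,1,1],[0,1],[0,0,0,1,1,1],[0,0,1],[1],[0,1,1,1],[0,0,0,1],[1,0,0,1],[1,1],[0,1,1],[]]"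
definition wit1_30 :: "nat list list" where "wit1_30 = [[0,0,1],[0,0,0,1],[0,0,1,1,1],[1,1,1],[0,1],[1],[],[1,1],[1,0,0,1],[0,1,1],[1],[0,0,0,1],[0,0,1,1,1],[1,1,1],[0,1],[0,0,1],[1,1],[],[0,1,1],[1,0,0,1],[0,0,1],[0,1],[1,1,1],[0,0,1,1,1],[0,0,0,1],[1],[1,0,0,1],[0,1,1],[],[1,1],[1],[0,1],[1,1,1],[0,0,1,1,1],[0,0,0,1],[0,0,1],[0,1,1],[1,0,0,1],[1,1],[],[0,1],[1],[1,1,1],[0,0,1,1,1],[0,0,1],[0,0,0,1],[],[0,1,1],[1,0,0,1],[1,1],[0,0,0,1],[0,0,1],[0,0,1,1,1],[1,1,1],[1],[0,1],[0,1,1],[],[1,1],[1,0,0,1]]"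
definition wit1_31 :: "nat list list" where "wit1_31 = [[0,0,0,1],[1],[0,0,1,1,1],[1,1,1],[0,0,1],[0,1],[1,0,0,1],[1,1],[],[0,1,1],[0,1],[0,0,1],[1,1,1],[0,0,1,1,1],[1],[0,0,0,1],[1,1],[1,0,0,1],[0,1,1],[],[0,1,1,1],[1,1,1],[1],[0,0,1],[0,1],[1,1,1,1,1],[],[1,0,0,1],[1,1],[0,1,1],[0,0,0,1,1,1],[0,0,0,1],[0,0,1],[1],[0,1],[0,1,1,1],[1,0,0,1],[],[0,1,1],[1,1],[0,0,0,1,1,1],[0,1],[0,0,1],[1],[0,0,0,1],[0,1,1,1],[1,1],[0,1,1],[],[1,0,0,1],[0,1,1,1],[0,1],[1],[0,0,1],[1,1,1],[1,1,1,1,1],[0,1,1],[1,1],[1,0,0,1],[]]"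
definition wit1_32 :: "nat list list" where "wit1_32 = [[0,1,1,1],[0,0,1],[0,0,0,1],[0,1],[1],[0,0,0,1,1,1],[],[1,0,0,1],[0,1,1],[1,1],[1,1,1,1,1],[1],[1,1,1],[0,1],[0,0,1],[0,1,1,1],[1,0,0,1],[],[1,1],[0,1,1],[0,1,1,1],[0,0,1],[0,1],[0,0,0,1],[1],[0,0,0,1,1,1],[0,1,1],[1,1],[],[1,0,0,1],[1,1,1,1,1],[1],[0,1],[1,1,1],[0,0,1],[0,1,1,1],[1,1],[0,1,1],[1,0,0,1],[],[0,1],[0,0,1,1,1],[0,0,1],[1],[1,1,1],[0,0,0,1],[],[0,1,1],[1,1],[1,0,0,1],[0,0,0,1],[1,1,1],[1],[0,0,1],[0,0,1,1,1],[0,1],[0,1,1],[],[1,0,0,1],[1,1]]"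
definition wit1_33 :: "nat list list" where "wit1_33 = [[0,1],[0,0,1,1,1],[1],[0,0,1],[1,1,1],[0,0,0,1],[1,1],[1,0,0,1],[],[0,1,1],[0,0,0,1],[1,1,1],[0,0,1],[1],[0,0,1,1,1],[0,1],[1,0,0,1],[1,1],[0,1,1],[],[1,1,1],[1,1,1,1,1],[0,1],[1],[0,1,1,1,1,1],[0,1,1,1],[],[1,0,0,0,0,1],[1,1],[1,1,1,1],[0,1,1,1],[1,1,1,1,1],[0,1],[1],[0,1,1,1,1,1],[1,1,1],[1,0,0,0,0,1],[],[1,1,1,1],[1,1],[1,1,1],[1,1,1,1,1],[1],[0,1],[0,1,1,1,1,1],[0,1,1,1],[1,1],[1,1,1,1],[],[1,0,0,0,0,1],[0,1,1,1],[1,1,1,1,1],[1],[0,1],[0,1,1,1,1,1],[1,1,1],[1,1,1,1],[1,1],[1,0,0,0,0,1],[]]"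
definition wit1_34 :: "nat list list" where "wit1_34 = [[1],[1,1,1,1,1],[1,1,1],[0,1,1,1],[0,1,1,1,1,1],[0,1],[],[1,1],[1,0,0,0,0,1],[1,1,1,1],[0,1],[1,1,1,1,1],[1,1,1],[0,1,1,1],[0,1,1,1,1,1],[1],[1,1],[],[1,1,1,1],[1,0,0,0,0,1],[1],[1,1,1,1,1],[0,1,1,1],[1,1,1],[0,1,1,1,1,1],[0,1],[1,0,0,0,0,1],[1,1,1,1],[],[1,1],[0,1],[1,1,1,1,1],[0,1,1,1],[1,1,1],[0,1,1,1,1,1],[1],[1,1,1,1],[1,0,0,0,0,1],[1,1],[],[1],[1,1,1],[0,0,0,1],[0,1],[0,0,1,1,1],[0,0,1],[],[1,1],[0,1,1],[1,0,0,1],[0,0,1],[1,1,1],[0,0,0,1],[0,1],[0,0,1,1,1],[1],[1,1],[],[1,0,0,1],[0,1,1]]"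
definition wit1_35 :: "nat list list" where "wit1_35 = [[0,0,1],[0,0,1,1,1],[0,1],[0,0,0,1],[1,1,1],[1],[0,1,1],[1,0,0,1],[],[1,1],[1],[0,0,1,1,1],[0,1],[0,0,0,1],[1,1,1],[0,0,1],[1,0,0,1],[0,1,1],[1,1],[],[0,1],[0,0,1],[0,1,1,1],[0,0,0,1,1,1],[1],[0,0,0,1],[],[0,1,1],[1,0,0,1],[1,1],[0,0,0,1],[0,0,1],[0,1,1,1],[0,0,0,1,1,1],[1],[0,1],[0,1,1],[],[1,1],[1,0,0,1],[0,1],[1],[1,1,1,1,1],[0,1,1,1],[0,0,1],[1,1,1],[1,0,0,1],[1,1],[],[0,1,1],[1,1,1],[1],[1,1,1,1,1],[0,1,1,1],[0,0,1],[0,1],[1,1],[1,0,0,1],[0,1,1],[]]"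
definition wit1_36 :: "nat list list" where "wit1_36 = [[0,0,1],[0,0,1,1,1],[0,0,0,1],[0,1],[1,1,1],[1],[],[1,1],[0,1,1],[1,0,0,1],[1],[0,0,1,1,1],[0,0,0,1],[0,1],[1,1,1],[0,0,1],[1,1],[],[1,0,0,1],[0,1,1],[1],[1,1,1],[0,1],[0,0,0,1],[0,0,1,1,1],[0,0,1],[0,1,1],[1,0,0,1],[],[1,1],[0,0,1],[1,1,1],[0,1],[0,0,0,1],[0,0,1,1,1],[1],[1,0,0,1],[0,1,1],[1,1],[],[0,1],[1],[0,1,1,1],[1,1,1,1,1],[0,0,1],[1,1,1],[],[0,1,1],[1,0,0,1],[1,1],[1,1,1],[1],[0,1,1,1],[1,1,1,1,1],[0,0,1],[0,1],[0,1,1],[],[1,1],[1,0,0,1]]"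
definition wit1_37 :: "nat list list" where "wit1_37 = [[0,1],[0,0,1],[0,0,0,1,1,1],[0,1,1,1],[1],[0,0,0,1],[1,0,0,1],[1,1],[],[0,1,1],[0,0,0,1],[0,0,1],[0,0,0,1,1,1],[0,1,1,1],[1],[0,1],[1,1],[1,0,0,1],[0,1,1],[],[1,0,0,0,1],[1,0,0,0,0,0,1],[1],[1,0,0,0,1,1],[1,1,1,1,1],[1,1,1],[],[1,0,0,0,0,1],[1,1],[1,1,1,1],[1,1,1],[1,0,0,0,0,0,1],[1],[1,0,0,0,1,1],[1,1,1,1,1],[1,0,0,0,1],[1,0,0,0,0,1],[],[1,1,1,1],[1,1],[1,0,0,0,1],[1,0,0,0,0,0,1],[1,0,0,0,1,1],[1],[1,1,1,1,1],[1,1,1],[1,1],[1,1,1,1],[],[1,0,0,0,0,1],[1,1,1],[1,0,0,0,0,0,1],[1,0,0,0,1,1],[1],[1,1,1,1,1],[1,0,0,0,1],[1,1,1,1],[1,1],[1,0,0,0,0,1],[]]"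
definition wit1_38 :: "nat list list" where "wit1_38 = [[1,0,0,0,1,1],[1,0,0,0,0,0,1],[1,0,0,0,1],[1,1,1],[1,1,1,1,1],[1],[],[1,1],[1,0,0,0,0,1],[1,1,1,1],[1],[1,0,0,0,0,0,1],[1,0,0,0,1],[1,1,1],[1,1,1,1,1],[1,0,0,0,1,1],[1,1],[],[1,1,1,1],[1,0,0,0,0,1],[1,0,0,0,1,1],[1,0,0,0,0,0,1],[1,1,1],[1,0,0,0,1],[1,1,1,1,1],[1],[1,0,0,0,0,1],[1,1,1,1],[],[1,1],[1],[1,0,0,0,0,0,1],[1,1,1],[1,0,0,0,1],[1,1,1,1,1],[1,0,0,0,1,1],[1,1,1,1],[1,0,0,0,0,1],[1,1],[],[0,1,1,1],[1],[1,1,1],[0,1],[0,0,1],[1,1,1,1,1],[],[1,0,0,1],[0,1,1],[1,1],[0,0,0,1,1,1],[0,0,1],[0,0,0,1],[0,1],[1],[0,1,1,1],[1,0,0,1],[],[1,1],[0,1,1]]"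
definition wit1_39 :: "nat list list" where "wit1_39 = [[0,1,1,1],[1],[0,1],[1,1,1],[0,0,1],[1,1,1,1,1],[0,1,1],[1,1],[],[1,0,0,1],[0,0,0,1,1,1],[0,0,1],[0,1],[0,0,0,1],[1],[0,1,1,1],[1,1],[0,1,1],[1,0,0,1],[],[0,1],[1,1,1],[1],[0,0,1],[0,0,1,1,1],[0,0,0,1],[],[0,1,1],[1,1],[1,0,0,1],[0,0,0,1],[0,0,1,1,1],[0,0,1],[1],[1,1,1],[0,1],[0,1,1],[],[1,0,0,1],[1,1],[0,1],[1,1,1],[0,0,1],[1],[0,0,1,1,1],[0,0,0,1],[1,1],[1,0,0,1],[],[0,1,1],[0,0,0,1],[0,0,1,1,1],[1],[0,0,1],[1,1,1],[0,1],[1,0,0,1],[1,1],[0,1,1],[]]"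
definition wit1_40 :: "nat list list" where "wit1_40 = [[1,1,1,1,1],[0,1],[0,1,1,1],[1,1,1],[1],[0,1,1,1,1,1],[],[1,1,1,1],[1,0,0,0,0,1],[1,1],[1,1,1,1,1],[1],[1,1,1],[0,1,1,1],[0,1],[0,1,1,1,1,1],[1,1,1,1],[],[1,1],[1,0,0,0,0,1],[1,1,1,1,1],[0,1],[1,1,1],[0,1,1,1],[1],[0,1,1,1,1,1],[1,0,0,0,0,1],[1,1],[],[1,1,1,1],[1,1,1,1,1],[1],[0,1,1,1],[1,1,1],[0,1],[0,1,1,1,1,1],[1,1],[1,0,0,0,0,1],[1,1,1,1],[],[1,1,1,1,1],[0,1,1,1],[0,1],[1],[1,1,1],[0,1,1,1,1,1],[],[1,1,1,1],[1,1],[1,0,0,0,0,1],[1,1,1,1,1],[1,1,1],[1],[0,1],[0,1,1,1],[0,1,1,1,1,1],[1,1,1,1],[],[1,0,0,0,0,1],[1,1]]"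
definition wit1_41 :: "nat list list" where "wit1_41 = [[1,1,1,1,1],[0,1,1,1],[1],[0,1],[1,1,1],[0,1,1,1,1,1],[1,1],[1,0,0,0,0,1],[],[1,1,1,1],[1,1,1,1,1],[1,1,1],[0,1],[1],[0,1,1,1],[0,1,1,1,1,1],[1,0,0,0,0,1],[1,1],[1,1,1,1],[],[1,1,1],[0,0,0,1],[0,0,1],[1],[0,1],[0,0,1,1,1],[],[1,0,0,1],[1,1],[0,1,1],[0,0,1,1,1],[0,1],[0,0,1],[1],[0,0,0,1],[1,1,1],[1,0,0,1],[],[0,1,1],[1,1],[1,1,1],[0,0,0,1],[1],[0,0,1],[0,1],[0,0,1,1,1],[1,1],[0,1,1],[],[1,0,0,1],[0,0,1,1,1],[0,1],[1],[0,0,1],[0,0,0,1],[1,1,1],[0,1,1],[1,1],[1,0,0,1],[]]"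
definition wit1_42 :: "nat list list" where "wit1_42 = [[1],[1,1,1,1,1],[1,1,1],[0,1],[0,1,1,1],[0,0,1],[],[1,1],[0,1,1],[1,0,0,1],[0,0,1],[0,1,1,1],[0,1],[0,0,0,1],[0,0,0,1,1,1],[1],[1,1],[],[1,0,0,1],[0,1,1],[1],[1,1,1,1,1],[0,1],[1,1,1],[0,1,1,1],[0,0,1],[0,1,1],[1,0,0,1],[],[1,1],[0,0,1],[0,1,1,1],[0,0,0,1],[0,1],[0,0,0,1,1,1],[1],[1,0,0,1],[0,1,1],[1,1],[],[1],[1,1,1],[1,1,1,1,1],[0,1,1,1],[0,1],[0,0,1],[],[1,1],[1,0,0,1],[0,1,1],[0,0,1],[0,1],[0,1,1,1],[0,0,0,1,1,1],[0,0,0,1],[1],[1,1],[],[0,1,1],[1,0,0,1]]"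
definition wit1_43 :: "nat list list" where "wit1_43 = [[0,0,1],[0,0,0,1],[0,1,1,1],[0,0,0,1,1,1],[0,1],[1],[1,0,0,1],[0,1,1],[],[1,1],[1],[0,1],[1,1,1,1,1],[0,1,1,1],[1,1,1],[0,0,1],[0,1,1],[1,0,0,1],[1,1],[],[1,1,1],[0,0,1],[0,0,0,1],[0,1],[1],[0,0,1,1,1],[],[1,0,0,1],[0,1,1],[1,1],[0,0,1,1,1],[0,0,1],[0,1],[0,0,0,1],[1],[1,1,1],[1,0,0,1],[],[1,1],[0,1,1],[0,0,1,1,1],[1],[0,1],[0,0,0,1],[0,0,1],[1,1,1],[0,1,1],[1,1],[],[1,0,0,1],[1,1,1],[1],[0,0,0,1],[0,1],[0,0,1],[0,0,1,1,1],[1,1],[0,1,1],[1,0,0,1],[]]"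
definition wit1_44 :: "nat list list" where "wit1_44 = [[0,0,1],[0,0,0,1],[0,0,0,1,1,1],[0,1,1,1],[0,1],[1],[],[1,1],[1,0,0,1],[0,1,1],[1],[0,1],[0,1,1,1],[1,1,1,1,1],[1,1,1],[0,0,1],[1,1],[],[0,1,1],[1,0,0,1],[1],[1,1,1],[0,1,1,1],[1,1,1,1,1],[0,1],[0,0,1],[1,0,0,1],[0,1,1],[],[1,1],[0,0,1],[0,1],[0,0,0,1,1,1],[0,1,1,1],[0,0,0,1],[1],[0,1,1],[1,0,0,1],[1,1],[],[0,0,1,1,1],[1],[0,0,0,1],[0,1],[0,0,1],[1,1,1],[],[1,0,0,1],[0,1,1],[1,1],[1,1,1],[1],[0,1],[0,0,0,1],[0,0,1],[0,0,1,1,1],[1,0,0,1],[],[1,1],[0,1,1]]"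
definition wit1_45 :: "nat list list" where "wit1_45 = [[1,1,1],[0,0,1],[0,1],[0,0,0,1],[1],[0,0,1,1,1],[0,1,1],[1,1],[],[1,0,0,1],[0,0,1,1,1],[0,0,1],[0,0,0,1],[0,1],[1],[1,1,1],[1,1],[0,1,1],[1,0,0,1],[],[0,0,1,1,1],[0,0,0,1],[1],[0,0,1],[0,1],[1,1,1],[],[1,0,0,1],[1,1],[0,1,1],[1,1,1],[0,1],[1],[0,0,1],[0,0,0,1],[0,0,1,1,1],[1,0,0,1],[],[0,1,1],[1,1],[0,0,1,1,1],[0,0,0,1],[0,0,1],[1],[0,1],[1,1,1],[1,1],[0,1,1],[],[1,0,0,1],[1,1,1],[0,1],[0,0,1],[1],[0,0,0,1],[0,0,1,1,1],[0,1,1],[1,1],[1,0,0,1],[]]"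
definition wit1_46 :: "nat list list" where "wit1_46 = [[0,0,1],[0,0,0,1,1,1],[0,0,0,1],[0,1],[0,1,1,1],[1],[],[1,1],[0,1,1],[1,0,0,1],[1],[0,1,1,1],[0,1],[1,1,1],[1,1,1,1,1],[0,0,1],[1,1],[],[1,0,0,1],[0,1,1],[0,0,1],[0,0,0,1,1,1],[0,1],[0,0,0,1],[0,1,1,1],[1],[0,1,1],[1,0,0,1],[],[1,1],[1],[0,1,1,1],[1,1,1],[0,1],[1,1,1,1,1],[0,0,1],[1,0,0,1],[0,1,1],[1,1],[],[1,0,0,0,0,0,1],[1],[1,1,1],[1,0,0,0,1],[1,0,0,0,1,1],[1,1,1,1,1],[],[1,1,1,1],[1,0,0,0,0,1],[1,1],[1,0,0,0,0,0,1],[1,0,0,0,1,1],[1,0,0,0,1],[1,1,1],[1],[1,1,1,1,1],[1,1,1,1],[],[1,1],[1,0,0,0,0,1]]"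
definition wit1_47 :: "nat list list" where "wit1_47 = [[1,0,0,0,0,0,1],[1],[1,0,0,0,1],[1,1,1],[1,0,0,0,1,1],[1,1,1,1,1],[1,0,0,0,0,1],[1,1],[],[1,1,1,1],[1,0,0,0,0,0,1],[1,0,0,0,1,1],[1,1,1],[1,0,0,0,1],[1],[1,1,1,1,1],[1,1],[1,0,0,0,0,1],[1,1,1,1],[],[1,0,0,0,0,0,1],[1,1,1],[1],[1,0,0,0,1,1],[1,0,0,0,1],[1,1,1,1,1],[],[1,1,1,1],[1,1],[1,0,0,0,0,1],[1,0,0,0,0,0,1],[1,0,0,0,1],[1,0,0,0,1,1],[1],[1,1,1],[1,1,1,1,1],[1,1,1,1],[],[1,0,0,0,0,1],[1,1],[1,0,0,0,0,0,1],[1,1,1],[1,0,0,0,1,1],[1],[1,0,0,0,1],[1,1,1,1,1],[1,1],[1,0,0,0,0,1],[],[1,1,1,1],[1,0,0,0,0,0,1],[1,0,0,0,1],[1],[1,0,0,0,1,1],[1,1,1],[1,1,1,1,1],[1,0,0,0,0,1],[1,1],[1,1,1,1],[]]"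
definition wit1 :: "nat list list" where "wit1 = wit1_0 @ wit1_1 @ wit1_2 @ wit1_3 @ wit1_4 @ wit1_5 @ wit1_6 @ wit1_7 @ wit1_8 @ wit1_9 @ wit1_10 @ wit1_11 @ wit1_12 @ wit1_13 @ wit1_14 @ wit1_15 @ wit1_16 @ wit1_17 @ wit1_18 @ wit1_19 @ wit1_20 @ wit1_21 @ wit1_22 @ wit1_23 @ wit1_24 @ wit1_25 @ wit1_26 @ wit1_27 @ wit1_28 @ wit1_29 @ wit1_30 @ wit1_31 @ wit1_32 @ wit1_33 @ wit1_34 @ wit1_35 @ wit1_36 @ wit1_37 @ wit1_38 @ wit1_39 @ wit1_40 @ wit1_41 @ wit1_42 @ wit1_43 @ wit1_44 @ wit1_45 @ wit1_46 @ wit1_47"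

definition wit2_0 :: "nat list list" where "wit2_0 = [[1,1,1,1,1],[1],[1,1,1],[1,0,0,0,1],[],[1,1],[1,1,1,1],[1,0,0,1],[1,0,0,1,1,0,0,1],[1,0,0,0,0,1],[1,1,1,1,1],[1,1,1],[1,0,0,0,1],[1],[1,0,0,1],[],[1,1],[1,0,0,1,1,0,0,1],[1,0,0,0,0,1],[1,1,1,1],[1,1,1,1,1],[1,0,0,0,1],[1],[1,1,1],[1,0,0,1,1,0,0,1],[1,0,0,1],[],[1,0,0,0,0,1],[1,1,1,1],[1,1],[1,1,1,1,1],[1,0,0,0,1],[1],[1,1,1],[1,1],[1,1,1,1],[1,0,0,0,0,1],[],[1,0,0,1],[1,0,0,1,1,0,0,1],[1,1,1,1,1],[1,1,1],[1,0,0,0,1],[1],[1,1,1,1],[1,0,0,0,0,1],[1,0,0,1,1,0,0,1],[1,1],[],[1,0,0,1],[1,1,1,1,1],[1],[1,1,1],[1,0,0,0,1],[1,0,0,0,0,1],[1,0,0,1,1,0,0,1],[1,0,0,1],[1,1,1,1],[1,1],[]]"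
definition wit2_1 :: "nat list list" where "wit2_1 = [[1],[0,0,1],[0,0,1,1,1],[0,1],[],[0,1,1],[0,0,1,1,1,1],[1,0,0,1],[1,1],[1,1,1,0,0,1],[1,1,1],[0,1],[1],[0,0,1],[1,1,1,1],[],[1,1],[0,1,1],[1,0,0,1,1,1],[1,0,0,1],[0,1],[0,1,1,1],[0,0,1],[1],[1,1],[0,1,1,1,1],[],[1,0,0,0,0,1],[1,0,0,1],[0,0,1,1],[0,1],[0,1,1,1],[0,0,1],[1],[0,0,1,1],[1,0,0,1],[1,0,0,0,0,1],[],[0,1,1,1,1],[1,1],[1,1,1],[0,1],[1],[0,0,1],[1,0,0,1],[1,0,0,1,1,1],[0,1,1],[1,1],[],[1,1,1,1],[1],[0,0,1],[0,0,1,1,1],[0,1],[1,1,1,0,0,1],[1,1],[1,0,0,1],[0,0,1,1,1,1],[0,1,1],[]]"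
definition wit2_2 :: "nat list list" where "wit2_2 = [[1,1,1],[0,0,1],[0,1],[1],[],[1,1],[1,0,0,1],[1,1,1,1],[0,1,1],[1,0,0,1,1,1],[0,1],[1],[0,1,1,1],[0,0,1],[0,1,1,1,1],[],[0,0,1,1],[1,1],[1,0,0,0,0,1],[1,0,0,1],[1],[0,1],[0,0,1],[0,0,1,1,1],[1,1],[1,0,0,1],[],[1,1,1,0,0,1],[0,0,1,1,1,1],[0,1,1],[1],[0,1],[0,0,1],[0,0,1,1,1],[0,1,1],[0,0,1,1,1,1],[1,1,1,0,0,1],[],[1,0,0,1],[1,1],[0,1],[1],[0,1,1,1],[0,0,1],[1,0,0,1],[1,0,0,0,0,1],[1,1],[0,0,1,1],[],[0,1,1,1,1],[1,1,1],[0,0,1],[0,1],[1],[1,0,0,1,1,1],[0,1,1],[1,1,1,1],[1,0,0,1],[1,1],[]]"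
definition wit2_3 :: "nat list list" where "wit2_3 = [[0,1],[0,0,1],[1],[0,1,1,1],[],[0,0,1,1],[1,0,0,1],[0,1,1,1,1],[1,1],[1,0,0,0,0,1],[1],[0,0,1,1,1],[0,1],[0,0,1],[1,0,0,1],[],[0,1,1],[1,1],[1,1,1,0,0,1],[0,0,1,1,1,1],[1,1,1],[1],[0,0,1],[0,1],[0,1,1],[1,1,1,1],[],[1,0,0,1,1,1],[1,0,0,1],[1,1],[1,1,1],[1],[0,0,1],[0,1],[1,1],[1,0,0,1],[1,0,0,1,1,1],[],[1,1,1,1],[0,1,1],[1],[0,0,1,1,1],[0,1],[0,0,1],[0,0,1,1,1,1],[1,1,1,0,0,1],[1,1],[0,1,1],[],[1,0,0,1],[0,1],[0,0,1],[1],[0,1,1,1],[1,0,0,0,0,1],[1,1],[0,1,1,1,1],[1,0,0,1],[0,0,1,1],[]]"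
definition wit2_4 :: "nat list list" where "wit2_4 = [[0,0,1],[1],[0,1],[0,0,1,1,1],[],[1,1],[1,0,0,1],[0,0,1,1,1,1],[0,1,1],[1,1,1,0,0,1],[0,1],[1,1,1],[0,0,1],[1],[1,0,0,1],[],[1,1],[0,1,1],[1,0,0,1,1,1],[1,1,1,1],[0,1,1,1],[0,1],[1],[0,0,1],[0,0,1,1],[0,1,1,1,1],[],[1,0,0,0,0,1],[1,0,0,1],[1,1],[0,1,1,1],[0,1],[1],[0,0,1],[1,1],[1,0,0,1],[1,0,0,0,0,1],[],[0,1,1,1,1],[0,0,1,1],[0,1],[1,1,1],[0,0,1],[1],[1,1,1,1],[1,0,0,1,1,1],[0,1,1],[1,1],[],[1,0,0,1],[0,0,1],[1],[0,1],[0,0,1,1,1],[1,1,1,0,0,1],[0,1,1],[0,0,1,1,1,1],[1,0,0,1],[1,1],[]]"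
definition wit2_5 :: "nat list list" where "wit2_5 = [[1],[1,1,1,1,1],[1,0,0,0,1],[1,1,1],[],[1,0,0,1,1,0,0,1],[1,0,0,1],[1,1,1,1],[1,1],[1,0,0,0,0,1],[1,1,1],[1,1,1,1,1],[1],[1,0,0,0,1],[1,1,1,1],[],[1,1],[1,0,0,1,1,0,0,1],[1,0,0,0,0,1],[1,0,0,1],[1,0,0,0,1],[1,1,1,1,1],[1,1,1],[1],[1,1],[1,0,0,1],[],[1,0,0,0,0,1],[1,1,1,1],[1,0,0,1,1,0,0,1],[1,0,0,0,1],[1,1,1,1,1],[1,1,1],[1],[1,0,0,1,1,0,0,1],[1,1,1,1],[1,0,0,0,0,1],[],[1,0,0,1],[1,1],[1,1,1],[1,1,1,1,1],[1],[1,0,0,0,1],[1,0,0,1],[1,0,0,0,0,1],[1,0,0,1,1,0,0,1],[1,1],[],[1,1,1,1],[1],[1,1,1,1,1],[1,0,0,0,1],[1,1,1],[1,0,0,0,0,1],[1,1],[1,1,1,1],[1,0,0,1],[1,0,0,1,1,0,0,1],[]]"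
definition wit2_6 :: "nat list list" where "wit2_6 = [[0,0,1],[0,1],[0,1,1,1],[1],[],[1,1],[0,1,1,1,1],[1,0,0,1],[0,0,1,1],[1,0,0,0,0,1],[0,0,1,1,1],[1],[0,0,1],[0,1],[0,0,1,1,1,1],[],[0,1,1],[1,1],[1,1,1,0,0,1],[1,0,0,1],[1],[1,1,1],[0,1],[0,0,1],[1,1],[1,1,1,1],[],[1,0,0,1,1,1],[1,0,0,1],[0,1,1],[1],[1,1,1],[0,1],[0,0,1],[0,1,1],[1,0,0,1],[1,0,0,1,1,1],[],[1,1,1,1],[1,1],[0,0,1,1,1],[1],[0,0,1],[0,1],[1,0,0,1],[1,1,1,0,0,1],[1,1],[0,1,1],[],[0,0,1,1,1,1],[0,0,1],[0,1],[0,1,1,1],[1],[1,0,0,0,0,1],[0,0,1,1],[1,0,0,1],[0,1,1,1,1],[1,1],[]]"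
definition wit2_7 :: "nat list list" where "wit2_7 = [[0,0,1],[1,1,1],[1],[0,1],[],[0,1,1],[1,1,1,1],[1,0,0,1],[1,1],[1,0,0,1,1,1],[1],[0,1],[0,0,1],[0,1,1,1],[1,0,0,1],[],[0,0,1,1],[1,1],[1,0,0,0,0,1],[0,1,1,1,1],[0,1],[1],[0,0,1,1,1],[0,0,1],[0,1,1],[1,0,0,1],[],[1,1,1,0,0,1],[0,0,1,1,1,1],[1,1],[0,1],[1],[0,0,1,1,1],[0,0,1],[1,1],[0,0,1,1,1,1],[1,1,1,0,0,1],[],[1,0,0,1],[0,1,1],[1],[0,1],[0,0,1],[0,1,1,1],[0,1,1,1,1],[1,0,0,0,0,1],[1,1],[0,0,1,1],[],[1,0,0,1],[0,0,1],[1,1,1],[1],[0,1],[1,0,0,1,1,1],[1,1],[1,0,0,1],[1,1,1,1],[0,1,1],[]]"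
definition wit2_8 :: "nat list list" where "wit2_8 = [[0,1],[1],[1,1,1],[0,0,1],[],[1,1],[1,1,1,1],[1,0,0,1],[0,1,1],[1,0,0,1,1,1],[0,1,1,1],[0,0,1],[0,1],[1],[0,1,1,1,1],[],[1,1],[0,0,1,1],[1,0,0,0,0,1],[1,0,0,1],[0,0,1],[0,0,1,1,1],[1],[0,1],[0,1,1],[0,0,1,1,1,1],[],[1,1,1,0,0,1],[1,0,0,1],[1,1],[0,0,1],[0,0,1,1,1],[1],[0,1],[1,1],[1,0,0,1],[1,1,1,0,0,1],[],[0,0,1,1,1,1],[0,1,1],[0,1,1,1],[0,0,1],[0,1],[1],[1,0,0,1],[1,0,0,0,0,1],[0,0,1,1],[1,1],[],[0,1,1,1,1],[0,1],[1],[1,1,1],[0,0,1],[1,0,0,1,1,1],[0,1,1],[1,0,0,1],[1,1,1,1],[1,1],[]]"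
definition wit2_9 :: "nat list list" where "wit2_9 = [[1],[0,1,1,1],[0,1],[0,0,1],[],[0,0,1,1],[0,1,1,1,1],[1,0,0,1],[1,1],[1,0,0,0,0,1],[0,1],[0,0,1],[1],[0,0,1,1,1],[1,0,0,1],[],[1,1],[0,1,1],[1,1,1,0,0,1],[0,0,1,1,1,1],[0,0,1],[0,1],[1,1,1],[1],[1,1],[1,0,0,1],[],[1,0,0,1,1,1],[1,1,1,1],[0,1,1],[0,0,1],[0,1],[1,1,1],[1],[0,1,1],[1,1,1,1],[1,0,0,1,1,1],[],[1,0,0,1],[1,1],[0,1],[0,0,1],[1],[0,0,1,1,1],[0,0,1,1,1,1],[1,1,1,0,0,1],[0,1,1],[1,1],[],[1,0,0,1],[1],[0,1,1,1],[0,1],[0,0,1],[1,0,0,0,0,1],[1,1],[1,0,0,1],[0,1,1,1,1],[0,0,1,1],[]]"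
definition wit2_10 :: "nat list list" where "wit2_10 = [[1,1,1],[1,0,0,0,1],[1,1,1,1,1],[1],[],[1,1],[1,0,0,1],[1,1,1,1],[1,0,0,1,1,0,0,1],[1,0,0,0,0,1],[1,0,0,0,1],[1],[1,1,1,1,1],[1,1,1],[1,0,0,1],[],[1,0,0,1,1,0,0,1],[1,1],[1,0,0,0,0,1],[1,1,1,1],[1],[1,1,1],[1,1,1,1,1],[1,0,0,0,1],[1,1],[1,1,1,1],[],[1,0,0,0,0,1],[1,0,0,1],[1,0,0,1,1,0,0,1],[1],[1,1,1],[1,1,1,1,1],[1,0,0,0,1],[1,0,0,1,1,0,0,1],[1,0,0,1],[1,0,0,0,0,1],[],[1,1,1,1],[1,1],[1,0,0,0,1],[1],[1,1,1,1,1],[1,1,1],[1,1,1,1],[1,0,0,0,0,1],[1,1],[1,0,0,1,1,0,0,1],[],[1,0,0,1],[1,1,1],[1,0,0,0,1],[1,1,1,1,1],[1],[1,0,0,0,0,1],[1,0,0,1,1,0,0,1],[1,1,1,1],[1,0,0,1],[1,1],[]]"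
definition wit2_11 :: "nat list list" where "wit2_11 = [[0,0,1,1,1],[0,1],[1],[0,0,1],[],[0,1,1],[1,0,0,1],[0,0,1,1,1,1],[1,1],[1,1,1,0,0,1],[1],[0,0,1],[1,1,1],[0,1],[1,1,1,1],[],[0,1,1],[1,1],[1,0,0,1,1,1],[1,0,0,1],[0,0,1],[1],[0,1],[0,1,1,1],[0,0,1,1],[1,0,0,1],[],[1,0,0,0,0,1],[0,1,1,1,1],[1,1],[0,0,1],[1],[0,1],[0,1,1,1],[1,1],[0,1,1,1,1],[1,0,0,0,0,1],[],[1,0,0,1],[0,0,1,1],[1],[0,0,1],[1,1,1],[0,1],[1,0,0,1],[1,0,0,1,1,1],[1,1],[0,1,1],[],[1,1,1,1],[0,0,1,1,1],[0,1],[1],[0,0,1],[1,1,1,0,0,1],[1,1],[0,0,1,1,1,1],[1,0,0,1],[0,1,1],[]]"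
definition wit2_12 :: "nat list list" where "wit2_12 = [[0,1,1,1],[1],[0,0,1],[0,1],[],[1,1],[1,0,0,1],[0,1,1,1,1],[0,0,1,1],[1,0,0,0,0,1],[0,0,1],[0,1],[0,0,1,1,1],[1],[0,0,1,1,1,1],[],[1,1],[0,1,1],[1,1,1,0,0,1],[1,0,0,1],[0,1],[0,0,1],[1],[1,1,1],[0,1,1],[1,0,0,1],[],[1,0,0,1,1,1],[1,1,1,1],[1,1],[0,1],[0,0,1],[1],[1,1,1],[1,1],[1,1,1,1],[1,0,0,1,1,1],[],[1,0,0,1],[0,1,1],[0,0,1],[0,1],[0,0,1,1,1],[1],[1,0,0,1],[1,1,1,0,0,1],[0,1,1],[1,1],[],[0,0,1,1,1,1],[0,1,1,1],[1],[0,0,1],[0,1],[1,0,0,0,0,1],[0,0,1,1],[0,1,1,1,1],[1,0,0,1],[1,1],[]]"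
definition wit2_13 :: "nat list list" where "wit2_13 = [[1],[0,1],[0,0,1],[1,1,1],[],[0,1,1],[1,0,0,1],[1,1,1,1],[1,1],[1,0,0,1,1,1],[0,0,1],[0,1,1,1],[1],[0,1],[1,0,0,1],[],[1,1],[0,0,1,1],[1,0,0,0,0,1],[0,1,1,1,1],[0,0,1,1,1],[0,0,1],[0,1],[1],[1,1],[0,0,1,1,1,1],[],[1,1,1,0,0,1],[1,0,0,1],[0,1,1],[0,0,1,1,1],[0,0,1],[0,1],[1],[0,1,1],[1,0,0,1],[1,1,1,0,0,1],[],[0,0,1,1,1,1],[1,1],[0,0,1],[0,1,1,1],[1],[0,1],[0,1,1,1,1],[1,0,0,0,0,1],[0,0,1,1],[1,1],[],[1,0,0,1],[1],[0,1],[0,0,1],[1,1,1],[1,0,0,1,1,1],[1,1],[1,1,1,1],[1,0,0,1],[0,1,1],[]]"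
definition wit2_14 :: "nat list list" where "wit2_14 = [[0,1],[0,0,1,1,1],[0,0,1],[1],[],[1,1],[0,0,1,1,1,1],[1,0,0,1],[0,1,1],[1,1,1,0,0,1],[0,0,1],[1],[0,1],[1,1,1],[1,0,0,1],[],[0,1,1],[1,1],[1,0,0,1,1,1],[1,1,1,1],[1],[0,0,1],[0,1,1,1],[0,1],[1,1],[1,0,0,1],[],[1,0,0,0,0,1],[0,1,1,1,1],[0,0,1,1],[1],[0,0,1],[0,1,1,1],[0,1],[0,0,1,1],[0,1,1,1,1],[1,0,0,0,0,1],[],[1,0,0,1],[1,1],[0,0,1],[1],[0,1],[1,1,1],[1,1,1,1],[1,0,0,1,1,1],[1,1],[0,1,1],[],[1,0,0,1],[0,1],[0,0,1,1,1],[0,0,1],[1],[1,1,1,0,0,1],[0,1,1],[1,0,0,1],[0,0,1,1,1,1],[1,1],[]]"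
definition wit2_15 :: "nat list list" where "wit2_15 = [[1,0,0,0,1],[1,1,1],[1],[1,1,1,1,1],[],[1,0,0,1,1,0,0,1],[1,1,1,1],[1,0,0,1],[1,1],[1,0,0,0,0,1],[1],[1,0,0,0,1],[1,1,1],[1,1,1,1,1],[1,1,1,1],[],[1,0,0,1,1,0,0,1],[1,1],[1,0,0,0,0,1],[1,0,0,1],[1,1,1],[1],[1,0,0,0,1],[1,1,1,1,1],[1,0,0,1,1,0,0,1],[1,1,1,1],[],[1,0,0,0,0,1],[1,0,0,1],[1,1],[1,1,1],[1],[1,0,0,0,1],[1,1,1,1,1],[1,1],[1,0,0,1],[1,0,0,0,0,1],[],[1,1,1,1],[1,0,0,1,1,0,0,1],[1],[1,0,0,0,1],[1,1,1],[1,1,1,1,1],[1,0,0,1],[1,0,0,0,0,1],[1,1],[1,0,0,1,1,0,0,1],[],[1,1,1,1],[1,0,0,0,1],[1,1,1],[1],[1,1,1,1,1],[1,0,0,0,0,1],[1,1],[1,0,0,1],[1,1,1,1],[1,0,0,1,1,0,0,1],[]]"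
definition wit2 :: "nat list list" where "wit2 = wit2_0 @ wit2_1 @ wit2_2 @ wit2_3 @ wit2_4 @ wit2_5 @ wit2_6 @ wit2_7 @ wit2_8 @ wit2_9 @ wit2_10 @ wit2_11 @ wit2_12 @ wit2_13 @ wit2_14 @ wit2_15"

definition wit3_0 :: "nat list list" where "wit3_0 = [[1,1,1,1,1],[1],[1,0,0,0,1],[1,1,1],[],[1,1,1,1],[1,1],[1,0,0,1,1,0,0,1],[1,0,0,1],[1,0,0,0,0,1],[1,1,1,1,1],[1,0,0,0,1],[1,1,1],[1],[1,0,0,1,1,0,0,1],[],[1,0,0,1],[1,1,1,1],[1,0,0,0,0,1],[1,1],[1,1,1,1,1],[1,1,1],[1],[1,0,0,0,1],[1,0,0,1],[1,1],[],[1,0,0,0,0,1],[1,0,0,1,1,0,0,1],[1,1,1,1],[1,1,1,1,1],[1,1,1],[1],[1,0,0,0,1],[1,1,1,1],[1,0,0,1,1,0,0,1],[1,0,0,0,0,1],[],[1,1],[1,0,0,1],[1,1,1,1,1],[1,0,0,0,1],[1,1,1],[1],[1,1],[1,0,0,0,0,1],[1,1,1,1],[1,0,0,1],[],[1,0,0,1,1,0,0,1],[1,1,1,1,1],[1],[1,0,0,0,1],[1,1,1],[1,0,0,0,0,1],[1,0,0,1],[1,0,0,1,1,0,0,1],[1,1],[1,1,1,1],[]]"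
definition wit3_1 :: "nat list list" where "wit3_1 = [[1],[0,0,1],[0,1],[0,0,1,1,1],[],[0,0,1,1,1,1],[0,1,1],[1,1],[1,0,0,1],[1,1,1,0,0,1],[0,1],[0,1,1,1],[1],[0,0,1],[1,1],[],[0,1,1,1,1],[1,0,0,1],[1,0,0,0,0,1],[0,0,1,1],[1,1,1],[0,1],[0,0,1],[1],[1,1,1,1],[1,1],[],[1,0,0,1,1,1],[0,1,1],[1,0,0,1],[1,1,1],[0,1],[0,0,1],[1],[1,0,0,1],[0,1,1],[1,0,0,1,1,1],[],[1,1],[1,1,1,1],[0,1],[0,1,1,1],[1],[0,0,1],[0,0,1,1],[1,0,0,0,0,1],[1,0,0,1],[0,1,1,1,1],[],[1,1],[1],[0,0,1],[0,1],[0,0,1,1,1],[1,1,1,0,0,1],[1,0,0,1],[1,1],[0,1,1],[0,0,1,1,1,1],[]]"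
definition wit3_2 :: "nat list list" where "wit3_2 = [[0,1],[0,0,1],[0,1,1,1],[1],[],[1,0,0,1],[0,0,1,1],[1,1],[0,1,1,1,1],[1,0,0,0,0,1],[1,1,1],[1],[0,1],[0,0,1],[0,1,1],[],[1,1,1,1],[1,0,0,1],[1,0,0,1,1,1],[1,1],[1],[0,0,1,1,1],[0,0,1],[0,1],[1,0,0,1],[0,1,1],[],[1,1,1,0,0,1],[1,1],[0,0,1,1,1,1],[1],[0,0,1,1,1],[0,0,1],[0,1],[0,0,1,1,1,1],[1,1],[1,1,1,0,0,1],[],[0,1,1],[1,0,0,1],[1,1,1],[1],[0,1],[0,0,1],[1,1],[1,0,0,1,1,1],[1,0,0,1],[1,1,1,1],[],[0,1,1],[0,1],[0,0,1],[0,1,1,1],[1],[1,0,0,0,0,1],[0,1,1,1,1],[1,1],[0,0,1,1],[1,0,0,1],[]]"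
definition wit3_3 :: "nat list list" where "wit3_3 = [[1,1,1],[0,0,1],[1],[0,1],[],[1,0,0,1],[1,1],[0,1,1],[1,1,1,1],[1,0,0,1,1,1],[1],[0,1],[0,0,1,1,1],[0,0,1],[1,1],[],[1,0,0,1],[0,0,1,1,1,1],[1,1,1,0,0,1],[0,1,1],[0,1],[1],[0,0,1],[0,1,1,1],[0,1,1,1,1],[0,0,1,1],[],[1,0,0,0,0,1],[1,1],[1,0,0,1],[0,1],[1],[0,0,1],[0,1,1,1],[1,0,0,1],[1,1],[1,0,0,0,0,1],[],[0,0,1,1],[0,1,1,1,1],[1],[0,1],[0,0,1,1,1],[0,0,1],[0,1,1],[1,1,1,0,0,1],[0,0,1,1,1,1],[1,0,0,1],[],[1,1],[1,1,1],[0,0,1],[1],[0,1],[1,0,0,1,1,1],[1,1,1,1],[0,1,1],[1,1],[1,0,0,1],[]]"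
definition wit3_4 :: "nat list list" where "wit3_4 = [[0,0,1],[1],[0,0,1,1,1],[0,1],[],[1,0,0,1],[1,1],[0,1,1],[0,0,1,1,1,1],[1,1,1,0,0,1],[0,1,1,1],[0,1],[0,0,1],[1],[0,0,1,1],[],[0,1,1,1,1],[1,0,0,1],[1,0,0,0,0,1],[1,1],[0,1],[1,1,1],[1],[0,0,1],[1,0,0,1],[1,1],[],[1,0,0,1,1,1],[0,1,1],[1,1,1,1],[0,1],[1,1,1],[1],[0,0,1],[1,1,1,1],[0,1,1],[1,0,0,1,1,1],[],[1,1],[1,0,0,1],[0,1,1,1],[0,1],[0,0,1],[1],[1,1],[1,0,0,0,0,1],[1,0,0,1],[0,1,1,1,1],[],[0,0,1,1],[0,0,1],[1],[0,0,1,1,1],[0,1],[1,1,1,0,0,1],[0,0,1,1,1,1],[0,1,1],[1,1],[1,0,0,1],[]]"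
definition wit3_5 :: "nat list list" where "wit3_5 = [[1],[1,1,1,1,1],[1,1,1],[1,0,0,0,1],[],[1,0,0,1],[1,0,0,1,1,0,0,1],[1,1],[1,1,1,1],[1,0,0,0,0,1],[1,0,0,0,1],[1,1,1,1,1],[1],[1,1,1],[1,1],[],[1,0,0,1],[1,1,1,1],[1,0,0,0,0,1],[1,0,0,1,1,0,0,1],[1,1,1],[1,1,1,1,1],[1,0,0,0,1],[1],[1,1,1,1],[1,1],[],[1,0,0,0,0,1],[1,0,0,1,1,0,0,1],[1,0,0,1],[1,1,1],[1,1,1,1,1],[1,0,0,0,1],[1],[1,0,0,1],[1,0,0,1,1,0,0,1],[1,0,0,0,0,1],[],[1,1],[1,1,1,1],[1,0,0,0,1],[1,1,1,1,1],[1],[1,1,1],[1,0,0,1,1,0,0,1],[1,0,0,0,0,1],[1,1,1,1],[1,0,0,1],[],[1,1],[1],[1,1,1,1,1],[1,1,1],[1,0,0,0,1],[1,0,0,0,0,1],[1,1,1,1],[1,1],[1,0,0,1,1,0,0,1],[1,0,0,1],[]]"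
definition wit3_6 :: "nat list list" where "wit3_6 = [[0,0,1],[1,1,1],[0,1],[1],[],[1,1,1,1],[0,1,1],[1,1],[1,0,0,1],[1,0,0,1,1,1],[0,1],[1],[0,0,1],[0,0,1,1,1],[0,1,1],[],[1,0,0,1],[0,0,1,1,1,1],[1,1,1,0,0,1],[1,1],[1],[0,1],[0,1,1,1],[0,0,1],[1,0,0,1],[0,0,1,1],[],[1,0,0,0,0,1],[1,1],[0,1,1,1,1],[1],[0,1],[0,1,1,1],[0,0,1],[0,1,1,1,1],[1,1],[1,0,0,0,0,1],[],[0,0,1,1],[1,0,0,1],[0,1],[1],[0,0,1],[0,0,1,1,1],[1,1],[1,1,1,0,0,1],[0,0,1,1,1,1],[1,0,0,1],[],[0,1,1],[0,0,1],[1,1,1],[0,1],[1],[1,0,0,1,1,1],[1,0,0,1],[1,1],[0,1,1],[1,1,1,1],[]]"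
definition wit3_7 :: "nat list list" where "wit3_7 = [[0,0,1],[0,1],[1],[0,1,1,1],[],[0,1,1,1,1],[1,1],[0,0,1,1],[1,0,0,1],[1,0,0,0,0,1],[1],[1,1,1],[0,0,1],[0,1],[1,1],[],[1,1,1,1],[1,0,0,1],[1,0,0,1,1,1],[0,1,1],[0,0,1,1,1],[1],[0,1],[0,0,1],[0,0,1,1,1,1],[0,1,1],[],[1,1,1,0,0,1],[1,1],[1,0,0,1],[0,0,1,1,1],[1],[0,1],[0,0,1],[1,0,0,1],[1,1],[1,1,1,0,0,1],[],[0,1,1],[0,0,1,1,1,1],[1],[1,1,1],[0,0,1],[0,1],[0,1,1],[1,0,0,1,1,1],[1,0,0,1],[1,1,1,1],[],[1,1],[0,0,1],[0,1],[1],[0,1,1,1],[1,0,0,0,0,1],[1,0,0,1],[0,0,1,1],[1,1],[0,1,1,1,1],[]]"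
definition wit3_8 :: "nat list list" where "wit3_8 = [[0,1,1,1],[1],[0,1],[0,0,1],[],[1,0,0,1],[1,1],[0,0,1,1],[0,1,1,1,1],[1,0,0,0,0,1],[0,1],[0,0,1],[1,1,1],[1],[0,1,1],[],[1,0,0,1],[1,1,1,1],[1,0,0,1,1,1],[1,1],[0,0,1],[0,1],[1],[0,0,1,1,1],[0,0,1,1,1,1],[1,1],[],[1,1,1,0,0,1],[0,1,1],[1,0,0,1],[0,0,1],[0,1],[1],[0,0,1,1,1],[1,0,0,1],[0,1,1],[1,1,1,0,0,1],[],[1,1],[0,0,1,1,1,1],[0,1],[0,0,1],[1,1,1],[1],[1,1],[1,0,0,1,1,1],[1,1,1,1],[1,0,0,1],[],[0,1,1],[0,1,1,1],[1],[0,1],[0,0,1],[1,0,0,0,0,1],[0,1,1,1,1],[0,0,1,1],[1,1],[1,0,0,1],[]]"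
definition wit3_9 :: "nat list list" where "wit3_9 = [[1],[0,1],[1,1,1],[0,0,1],[],[1,0,0,1],[0,1,1],[1,1],[1,1,1,1],[1,0,0,1,1,1],[0,0,1,1,1],[0,0,1],[1],[0,1],[1,1],[],[0,0,1,1,1,1],[1,0,0,1],[1,1,1,0,0,1],[0,1,1],[0,0,1],[0,1,1,1],[0,1],[1],[1,0,0,1],[1,1],[],[1,0,0,0,0,1],[0,0,1,1],[0,1,1,1,1],[0,0,1],[0,1,1,1],[0,1],[1],[0,1,1,1,1],[0,0,1,1],[1,0,0,0,0,1],[],[1,1],[1,0,0,1],[0,0,1,1,1],[0,0,1],[1],[0,1],[0,1,1],[1,1,1,0,0,1],[1,0,0,1],[0,0,1,1,1,1],[],[1,1],[1],[0,1],[1,1,1],[0,0,1],[1,0,0,1,1,1],[1,1,1,1],[1,1],[0,1,1],[1,0,0,1],[]]"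
definition wit3_10 :: "nat list list" where "wit3_10 = [[1,0,0,0,1],[1,1,1],[1,1,1,1,1],[1],[],[1,1,1,1],[1,0,0,1,1,0,0,1],[1,1],[1,0,0,1],[1,0,0,0,0,1],[1,1,1],[1],[1,1,1,1,1],[1,0,0,0,1],[1,0,0,1,1,0,0,1],[],[1,1,1,1],[1,0,0,1],[1,0,0,0,0,1],[1,1],[1],[1,0,0,0,1],[1,1,1,1,1],[1,1,1],[1,1,1,1],[1,0,0,1,1,0,0,1],[],[1,0,0,0,0,1],[1,1],[1,0,0,1],[1],[1,0,0,0,1],[1,1,1,1,1],[1,1,1],[1,0,0,1],[1,1],[1,0,0,0,0,1],[],[1,0,0,1,1,0,0,1],[1,1,1,1],[1,1,1],[1],[1,1,1,1,1],[1,0,0,0,1],[1,1],[1,0,0,0,0,1],[1,0,0,1],[1,1,1,1],[],[1,0,0,1,1,0,0,1],[1,0,0,0,1],[1,1,1],[1,1,1,1,1],[1],[1,0,0,0,0,1],[1,0,0,1],[1,1],[1,0,0,1,1,0,0,1],[1,1,1,1],[]]"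
definition wit3_11 :: "nat list list" where "wit3_11 = [[0,1],[0,0,1,1,1],[1],[0,0,1],[],[0,0,1,1,1,1],[1,1],[0,1,1],[1,0,0,1],[1,1,1,0,0,1],[1],[0,0,1],[0,1],[0,1,1,1],[1,1],[],[1,0,0,1],[0,1,1,1,1],[1,0,0,0,0,1],[0,0,1,1],[0,0,1],[1],[1,1,1],[0,1],[1,0,0,1],[0,1,1],[],[1,0,0,1,1,1],[1,1],[1,1,1,1],[0,0,1],[1],[1,1,1],[0,1],[1,1,1,1],[1,1],[1,0,0,1,1,1],[],[0,1,1],[1,0,0,1],[1],[0,0,1],[0,1],[0,1,1,1],[0,0,1,1],[1,0,0,0,0,1],[0,1,1,1,1],[1,0,0,1],[],[1,1],[0,1],[0,0,1,1,1],[1],[0,0,1],[1,1,1,0,0,1],[1,0,0,1],[0,1,1],[1,1],[0,0,1,1,1,1],[]]"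
definition wit3_12 :: "nat list list" where "wit3_12 = [[0,1],[1],[0,0,1],[1,1,1],[],[1,1,1,1],[1,1],[0,1,1],[1,0,0,1],[1,0,0,1,1,1],[0,0,1],[0,0,1,1,1],[0,1],[1],[0,1,1],[],[0,0,1,1,1,1],[1,0,0,1],[1,1,1,0,0,1],[1,1],[0,1,1,1],[0,0,1],[1],[0,1],[0,1,1,1,1],[1,1],[],[1,0,0,0,0,1],[0,0,1,1],[1,0,0,1],[0,1,1,1],[0,0,1],[1],[0,1],[1,0,0,1],[0,0,1,1],[1,0,0,0,0,1],[],[1,1],[0,1,1,1,1],[0,0,1],[0,0,1,1,1],[0,1],[1],[1,1],[1,1,1,0,0,1],[1,0,0,1],[0,0,1,1,1,1],[],[0,1,1],[0,1],[1],[0,0,1],[1,1,1],[1,0,0,1,1,1],[1,0,0,1],[0,1,1],[1,1],[1,1,1,1],[]]"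
definition wit3_13 :: "nat list list" where "wit3_13 = [[1],[0,1,1,1],[0,0,1],[0,1],[],[0,1,1,1,1],[0,0,1,1],[1,1],[1,0,0,1],[1,0,0,0,0,1],[0,0,1],[0,1],[1],[1,1,1],[1,1],[],[1,0,0,1],[1,1,1,1],[1,0,0,1,1,1],[0,1,1],[0,1],[0,0,1],[0,0,1,1,1],[1],[1,0,0,1],[1,1],[],[1,1,1,0,0,1],[0,1,1],[0,0,1,1,1,1],[0,1],[0,0,1],[0,0,1,1,1],[1],[0,0,1,1,1,1],[0,1,1],[1,1,1,0,0,1],[],[1,1],[1,0,0,1],[0,0,1],[0,1],[1],[1,1,1],[0,1,1],[1,0,0,1,1,1],[1,1,1,1],[1,0,0,1],[],[1,1],[1],[0,1,1,1],[0,0,1],[0,1],[1,0,0,0,0,1],[1,0,0,1],[1,1],[0,0,1,1],[0,1,1,1,1],[]]"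
definition wit3_14 :: "nat list list" where "wit3_14 = [[0,0,1,1,1],[0,1],[0,0,1],[1],[],[1,0,0,1],[0,1,1],[1,1],[0,0,1,1,1,1],[1,1,1,0,0,1],[0,0,1],[1],[0,1,1,1],[0,1],[0,0,1,1],[],[1,0,0,1],[0,1,1,1,1],[1,0,0,0,0,1],[1,1],[1],[0,0,1],[0,1],[1,1,1],[1,1,1,1],[0,1,1],[],[1,0,0,1,1,1],[1,1],[1,0,0,1],[1],[0,0,1],[0,1],[1,1,1],[1,0,0,1],[1,1],[1,0,0,1,1,1],[],[0,1,1],[1,1,1,1],[0,0,1],[1],[0,1,1,1],[0,1],[1,1],[1,0,0,0,0,1],[0,1,1,1,1],[1,0,0,1],[],[0,0,1,1],[0,0,1,1,1],[0,1],[0,0,1],[1],[1,1,1,0,0,1],[0,0,1,1,1,1],[1,1],[0,1,1],[1,0,0,1],[]]"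
definition wit3_15 :: "nat list list" where "wit3_15 = [[1,1,1],[1,0,0,0,1],[1],[1,1,1,1,1],[],[1,0,0,1],[1,1],[1,0,0,1,1,0,0,1],[1,1,1,1],[1,0,0,0,0,1],[1],[1,1,1],[1,0,0,0,1],[1,1,1,1,1],[1,1],[],[1,1,1,1],[1,0,0,1],[1,0,0,0,0,1],[1,0,0,1,1,0,0,1],[1,0,0,0,1],[1],[1,1,1],[1,1,1,1,1],[1,0,0,1],[1,0,0,1,1,0,0,1],[],[1,0,0,0,0,1],[1,1],[1,1,1,1],[1,0,0,0,1],[1],[1,1,1],[1,1,1,1,1],[1,1,1,1],[1,1],[1,0,0,0,0,1],[],[1,0,0,1,1,0,0,1],[1,0,0,1],[1],[1,1,1],[1,0,0,0,1],[1,1,1,1,1],[1,0,0,1,1,0,0,1],[1,0,0,0,0,1],[1,0,0,1],[1,1,1,1],[],[1,1],[1,1,1],[1,0,0,0,1],[1],[1,1,1,1,1],[1,0,0,0,0,1],[1,1,1,1],[1,0,0,1,1,0,0,1],[1,1],[1,0,0,1],[]]"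
definition wit3 :: "nat list list" where "wit3 = wit3_0 @ wit3_1 @ wit3_2 @ wit3_3 @ wit3_4 @ wit3_5 @ wit3_6 @ wit3_7 @ wit3_8 @ wit3_9 @ wit3_10 @ wit3_11 @ wit3_12 @ wit3_13 @ wit3_14 @ wit3_15"

definition wit4_0 :: "nat list list" where "wit4_0 = [[],[1,1,2,2],[2,2],[1,0,0,1,2,2],[1,1,2,2],[],[1,2,2],[2,2],[2,2],[1,1,1,2,2],[],[1,2,2],[2,1,1,2],[2,2],[1,1,2,2],[],[],[2,2],[2,1,1,2],[1,1,2,2],[2,2],[],[1,1,2,2],[1,2,2],[1,0,0,1,2,2],[1,1,2,2],[],[2,2],[1,2,2],[1,1,1,2,2],[2,2],[],[],[1,1,1,2,2],[1,2,2],[2,2],[1,2,2],[],[2,2],[1,1,2,2],[1,1,2,2],[2,2],[],[2,1,1,2],[2,2],[1,1,2,2],[1,0,0,1,2,2],[],[],[1,1,1,2,2],[1,2,2],[2,2],[1,2,2],[],[2,2],[1,1,2,2],[1,1,2,2],[2,2],[],[2,1,1,2]]"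
definition wit4_1 :: "nat list list" where "wit4_1 = [[2,2],[1,1,2,2],[1,0,0,1,2,2],[],[],[2,2],[2,1,1,2],[1,1,2,2],[2,2],[],[1,1,2,2],[1,2,2],[1,0,0,1,2,2],[1,1,2,2],[],[2,2],[1,2,2],[1,1,1,2,2],[2,2],[],[],[1,1,2,2],[2,2],[1,0,0,1,2,2],[1,1,2,2],[],[1,2,2],[2,2],[2,2],[1,1,1,2,2],[],[1,2,2],[2,1,1,2],[2,2],[1,1,2,2],[],[],[0,1,2,2],[2,2],[1,2,2],[1,1,2,2],[],[0,0,1,2,2],[2,2],[2,2],[2,1,1,2],[],[1,1,2,2],[0,1,2,2],[2,2],[1,2,2],[],[],[2,2],[1,2,2],[1,1,2,2],[2,2],[],[0,1,2,2],[2,1,1,2]]"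
definition wit4_2 :: "nat list list" where "wit4_2 = [[0,2,1,1,2],[1,2,2],[],[2,2],[1,1,2,2],[0,1,2,2],[2,2],[],[],[1,2,2],[1,1,2,2],[2,2],[0,0,1,2,2],[],[2,2],[1,2,2],[0,1,2,2],[2,2],[],[0,0,2,1,1,2],[2,2],[1,1,2,2],[0,1,2,2],[],[],[1,2,2],[1,1,2,2],[2,2],[0,0,1,2,2],[],[2,2],[1,2,2],[0,1,2,2],[2,2],[],[0,0,2,1,1,2],[2,2],[1,1,2,2],[0,1,2,2],[],[],[2,2],[1,2,2],[1,1,2,2],[2,2],[],[0,1,2,2],[2,1,1,2],[0,2,1,1,2],[1,2,2],[],[2,2],[1,1,2,2],[0,1,2,2],[2,2],[],[],[0,1,2,2],[2,2],[1,2,2]]"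
definition wit4_3 :: "nat list list" where "wit4_3 = [[1,1,2,2],[],[0,0,1,2,2],[2,2],[2,2],[2,1,1,2],[],[1,1,2,2],[0,1,2,2],[2,2],[1,2,2],[],[],[1,2,2],[2,2],[0,2,1,1,2],[0,1,2,2],[],[2,1,1,2],[2,2],[2,2],[0,1,2,2],[],[1,1,2,2],[1,2,2],[2,2],[1,1,2,2],[],[],[2,2],[0,0,2,1,1,2],[0,1,2,2],[2,2],[],[1,2,2],[0,0,1,2,2],[0,1,2,2],[1,1,2,2],[],[2,2],[1,1,2,2],[1,2,2],[2,2],[],[],[2,1,1,2],[1,1,2,2],[2,2],[0,0,1,2,2],[],[2,2],[1,1,2,2],[1,2,2],[2,2],[],[0,1,2,2],[2,2],[0,1,2,2],[1,2,2],[]]"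
definition wit4_4 :: "nat list list" where "wit4_4 = [[],[2,1,1,2],[1,1,2,2],[2,2],[0,0,1,2,2],[],[2,2],[1,1,2,2],[1,2,2],[2,2],[],[0,1,2,2],[2,2],[0,1,2,2],[1,2,2],[],[],[2,2],[0,0,2,1,1,2],[0,1,2,2],[2,2],[],[1,2,2],[0,0,1,2,2],[0,1,2,2],[1,1,2,2],[],[2,2],[1,1,2,2],[1,2,2],[2,2],[],[],[1,2,2],[2,2],[0,2,1,1,2],[0,1,2,2],[],[2,1,1,2],[2,2],[2,2],[0,1,2,2],[],[1,1,2,2],[1,2,2],[2,2],[1,1,2,2],[],[],[1,1,2,2],[2,2],[0,1,2,2],[1,2,2],[],[0,0,1,2,2],[2,2],[2,2],[1,2,2],[],[1,1,2,2]]"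
definition wit4_5 :: "nat list list" where "wit4_5 = [[0,0,2,1,1,2],[2,2],[0,1,2,2],[],[],[2,2],[0,1,2,2],[1,2,2],[2,2],[],[1,1,2,2],[0,0,1,2,2],[1,2,2],[0,1,2,2],[],[2,2],[1,1,2,2],[2,1,1,2],[2,2],[],[],[0,1,2,2],[1,1,2,2],[2,2],[2,1,1,2],[],[2,2],[0,1,2,2],[1,1,2,2],[2,2],[],[1,2,2],[2,2],[1,2,2],[0,2,1,1,2],[],[],[0,1,2,2],[1,1,2,2],[2,2],[2,1,1,2],[],[2,2],[0,1,2,2],[1,1,2,2],[2,2],[],[1,2,2],[2,2],[1,2,2],[0,2,1,1,2],[],[],[2,2],[0,1,2,2],[1,2,2],[2,2],[],[1,1,2,2],[0,0,1,2,2]]"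
definition wit4_6 :: "nat list list" where "wit4_6 = [[1,2,2],[0,1,2,2],[],[2,2],[1,1,2,2],[2,1,1,2],[2,2],[],[],[1,1,2,2],[2,2],[0,1,2,2],[1,2,2],[],[0,0,1,2,2],[2,2],[2,2],[1,2,2],[],[1,1,2,2],[0,0,2,1,1,2],[2,2],[0,1,2,2],[],[],[1,1,2,2],[2,2],[0,0,1,2,2],[0,1,2,2],[],[1,2,2],[2,2],[2,2],[0,1,2,2],[],[1,2,2],[2,1,1,2],[2,2],[1,1,2,2],[],[],[2,2],[2,1,1,2],[0,1,2,2],[2,2],[],[1,1,2,2],[1,2,2],[0,1,2,2],[1,1,2,2],[],[2,2],[1,2,2],[0,2,1,1,2],[2,2],[],[],[0,0,1,2,2],[1,2,2],[2,2]]"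
definition wit4_7 :: "nat list list" where "wit4_7 = [[1,2,2],[],[2,2],[1,1,2,2],[1,1,2,2],[2,2],[],[0,1,2,2],[2,2],[0,1,2,2],[0,0,2,1,1,2],[],[],[0,0,1,2,2],[1,2,2],[2,2],[1,2,2],[],[2,2],[1,1,2,2],[1,1,2,2],[2,2],[],[0,1,2,2],[2,2],[0,1,2,2],[0,0,2,1,1,2],[],[],[2,2],[2,1,1,2],[0,1,2,2],[2,2],[],[1,1,2,2],[1,2,2],[0,1,2,2],[1,1,2,2],[],[2,2],[1,2,2],[0,2,1,1,2],[2,2],[],[],[1,1,2,2],[2,2],[0,0,1,2,2],[0,1,2,2],[],[1,2,2],[2,2],[2,2],[0,1,2,2],[],[1,2,2],[2,1,1,2],[2,2],[1,1,2,2],[]]"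
definition wit4_8 :: "nat list list" where "wit4_8 = [[],[1,1,2,2],[2,2],[1,2,2],[1,1,2,2],[],[1,0,0,1,2,2],[2,2],[2,2],[2,1,1,2],[],[1,1,2,2],[1,1,1,2,2],[2,2],[1,2,2],[],[],[2,2],[1,2,2],[1,1,2,2],[2,2],[],[1,1,2,2],[2,1,1,2],[1,1,1,2,2],[1,2,2],[],[2,2],[1,1,2,2],[1,0,0,1,2,2],[2,2],[],[],[1,2,2],[1,1,2,2],[2,2],[1,1,1,2,2],[],[2,2],[1,2,2],[1,1,2,2],[2,2],[],[1,0,0,1,2,2],[2,2],[1,1,2,2],[2,1,1,2],[],[],[1,2,2],[1,1,2,2],[2,2],[1,1,1,2,2],[],[2,2],[1,2,2],[1,1,2,2],[2,2],[],[1,0,0,1,2,2]]"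
definition wit4_9 :: "nat list list" where "wit4_9 = [[2,2],[1,1,2,2],[2,1,1,2],[],[],[2,2],[1,2,2],[1,1,2,2],[2,2],[],[1,1,2,2],[2,1,1,2],[1,1,1,2,2],[1,2,2],[],[2,2],[1,1,2,2],[1,0,0,1,2,2],[2,2],[],[],[1,1,2,2],[2,2],[1,2,2],[1,1,2,2],[],[1,0,0,1,2,2],[2,2],[2,2],[2,1,1,2],[],[1,1,2,2],[1,1,1,2,2],[2,2],[1,2,2],[],[],[1,2,2],[2,2],[0,0,1,2,2],[1,1,2,2],[],[0,1,2,2],[2,2],[2,2],[0,0,2,1,1,2],[],[0,1,2,2],[1,2,2],[2,2],[1,1,2,2],[],[],[2,2],[0,0,1,2,2],[1,1,2,2],[2,2],[],[1,2,2],[0,1,2,2]]"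
definition wit4_10 :: "nat list list" where "wit4_10 = [[2,1,1,2],[1,1,2,2],[],[2,2],[0,1,2,2],[1,2,2],[2,2],[],[],[2,1,1,2],[0,1,2,2],[2,2],[0,1,2,2],[],[2,2],[1,1,2,2],[1,2,2],[2,2],[],[0,2,1,1,2],[2,2],[1,1,2,2],[1,2,2],[],[],[2,1,1,2],[0,1,2,2],[2,2],[0,1,2,2],[],[2,2],[1,1,2,2],[1,2,2],[2,2],[],[0,2,1,1,2],[2,2],[1,1,2,2],[1,2,2],[],[],[2,2],[0,0,1,2,2],[1,1,2,2],[2,2],[],[1,2,2],[0,1,2,2],[2,1,1,2],[1,1,2,2],[],[2,2],[0,1,2,2],[1,2,2],[2,2],[],[],[1,2,2],[2,2],[0,0,1,2,2]]"
definition wit4_11 :: "nat list list" where "wit4_11 = [[1,1,2,2],[],[0,1,2,2],[2,2],[2,2],[0,0,2,1,1,2],[],[0,1,2,2],[1,2,2],[2,2],[1,1,2,2],[],[],[0,1,2,2],[2,2],[2,1,1,2],[1,2,2],[],[0,2,1,1,2],[2,2],[2,2],[1,2,2],[],[1,1,2,2],[0,1,2,2],[2,2],[1,1,2,2],[],[],[2,2],[0,0,1,2,2],[1,2,2],[2,2],[],[0,1,2,2],[0,0,2,1,1,2],[1,2,2],[1,1,2,2],[],[2,2],[1,1,2,2],[0,1,2,2],[2,2],[],[],[0,0,1,2,2],[1,1,2,2],[2,2],[2,1,1,2],[],[2,2],[1,1,2,2],[0,1,2,2],[2,2],[],[1,2,2],[2,2],[1,2,2],[0,1,2,2],[]]"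
definition wit4_12 :: "nat list list" where "wit4_12 = [[],[0,0,1,2,2],[1,1,2,2],[2,2],[2,1,1,2],[],[2,2],[1,1,2,2],[0,1,2,2],[2,2],[],[1,2,2],[2,2],[1,2,2],[0,1,2,2],[],[],[2,2],[0,0,1,2,2],[1,2,2],[2,2],[],[0,1,2,2],[0,0,2,1,1,2],[1,2,2],[1,1,2,2],[],[2,2],[1,1,2,2],[0,1,2,2],[2,2],[],[],[0,1,2,2],[2,2],[2,1,1,2],[1,2,2],[],[0,2,1,1,2],[2,2],[2,2],[1,2,2],[],[1,1,2,2],[0,1,2,2],[2,2],[1,1,2,2],[],[],[1,1,2,2],[2,2],[0,1,2,2],[1,1,2,2],[],[1,2,2],[2,2],[2,2],[0,2,1,1,2],[],[1,2,2]]"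
definition wit4_13 :: "nat list list" where "wit4_13 = [[2,1,1,2],[2,2],[0,1,2,2],[],[],[2,2],[0,1,2,2],[1,1,2,2],[2,2],[],[1,1,2,2],[1,2,2],[0,0,2,1,1,2],[0,1,2,2],[],[2,2],[1,2,2],[0,0,1,2,2],[2,2],[],[],[0,1,2,2],[1,2,2],[2,2],[1,2,2],[],[2,2],[0,1,2,2],[1,1,2,2],[2,2],[],[2,1,1,2],[2,2],[1,1,2,2],[0,0,1,2,2],[],[],[0,1,2,2],[1,2,2],[2,2],[1,2,2],[],[2,2],[0,1,2,2],[1,1,2,2],[2,2],[],[2,1,1,2],[2,2],[1,1,2,2],[0,0,1,2,2],[],[],[2,2],[0,1,2,2],[1,1,2,2],[2,2],[],[1,1,2,2],[1,2,2]]"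
definition wit4_14 :: "nat list list" where "wit4_14 = [[0,0,2,1,1,2],[0,1,2,2],[],[2,2],[1,2,2],[0,0,1,2,2],[2,2],[],[],[1,1,2,2],[2,2],[0,1,2,2],[1,1,2,2],[],[1,2,2],[2,2],[2,2],[0,2,1,1,2],[],[1,2,2],[2,1,1,2],[2,2],[0,1,2,2],[],[],[1,1,2,2],[2,2],[1,2,2],[0,1,2,2],[],[0,0,2,1,1,2],[2,2],[2,2],[0,1,2,2],[],[1,1,2,2],[0,0,1,2,2],[2,2],[1,2,2],[],[],[2,2],[1,2,2],[0,1,2,2],[2,2],[],[1,1,2,2],[2,1,1,2],[0,1,2,2],[1,2,2],[],[2,2],[1,1,2,2],[0,0,1,2,2],[2,2],[],[],[1,2,2],[1,1,2,2],[2,2]]"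
definition wit4_15 :: "nat list list" where "wit4_15 = [[0,2,1,1,2],[],[2,2],[1,2,2],[1,1,2,2],[2,2],[],[0,1,2,2],[2,2],[0,1,2,2],[2,1,1,2],[],[],[1,2,2],[1,1,2,2],[2,2],[0,2,1,1,2],[],[2,2],[1,2,2],[1,1,2,2],[2,2],[],[0,1,2,2],[2,2],[0,1,2,2],[2,1,1,2],[],[],[2,2],[1,2,2],[0,1,2,2],[2,2],[],[1,1,2,2],[2,1,1,2],[0,1,2,2],[1,2,2],[],[2,2],[1,1,2,2],[0,0,1,2,2],[2,2],[],[],[1,1,2,2],[2,2],[1,2,2],[0,1,2,2],[],[0,0,2,1,1,2],[2,2],[2,2],[0,1,2,2],[],[1,1,2,2],[0,0,1,2,2],[2,2],[1,2,2],[]]"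
definition wit4_16 :: "nat list list" where "wit4_16 = [[],[1,2,2],[2,2],[1,1,1,2,2],[1,1,2,2],[],[2,1,1,2],[2,2],[2,2],[1,0,0,1,2,2],[],[1,1,2,2],[1,2,2],[2,2],[1,1,2,2],[],[],[2,2],[1,0,0,1,2,2],[1,1,2,2],[2,2],[],[1,2,2],[1,1,1,2,2],[2,1,1,2],[1,1,2,2],[],[2,2],[1,1,2,2],[1,2,2],[2,2],[],[],[2,1,1,2],[1,1,2,2],[2,2],[1,0,0,1,2,2],[],[2,2],[1,1,2,2],[1,2,2],[2,2],[],[1,1,1,2,2],[2,2],[1,1,2,2],[1,2,2],[],[],[2,1,1,2],[1,1,2,2],[2,2],[1,0,0,1,2,2],[],[2,2],[1,1,2,2],[1,2,2],[2,2],[],[1,1,1,2,2]]"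
definition wit4_17 :: "nat list list" where "wit4_17 = [[2,2],[1,1,2,2],[1,2,2],[],[],[2,2],[1,0,0,1,2,2],[1,1,2,2],[2,2],[],[1,2,2],[1,1,1,2,2],[2,1,1,2],[1,1,2,2],[],[2,2],[1,1,2,2],[1,2,2],[2,2],[],[],[1,2,2],[2,2],[1,1,1,2,2],[1,1,2,2],[],[2,1,1,2],[2,2],[2,2],[1,0,0,1,2,2],[],[1,1,2,2],[1,2,2],[2,2],[1,1,2,2],[],[],[1,1,2,2],[2,2],[2,1,1,2],[1,2,2],[],[0,1,2,2],[2,2],[2,2],[1,2,2],[],[0,1,2,2],[0,0,1,2,2],[2,2],[1,1,2,2],[],[],[2,2],[0,2,1,1,2],[1,2,2],[2,2],[],[1,1,2,2],[0,1,2,2]]"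
definition wit4_18 :: "nat list list" where "wit4_18 = [[1,2,2],[1,1,2,2],[],[2,2],[0,1,2,2],[2,1,1,2],[2,2],[],[],[0,0,2,1,1,2],[0,1,2,2],[2,2],[0,1,2,2],[],[2,2],[1,1,2,2],[1,1,2,2],[2,2],[],[1,2,2],[2,2],[1,2,2],[0,0,1,2,2],[],[],[0,0,2,1,1,2],[0,1,2,2],[2,2],[0,1,2,2],[],[2,2],[1,1,2,2],[1,1,2,2],[2,2],[],[1,2,2],[2,2],[1,2,2],[0,0,1,2,2],[],[],[2,2],[0,2,1,1,2],[1,2,2],[2,2],[],[1,1,2,2],[0,1,2,2],[1,2,2],[1,1,2,2],[],[2,2],[0,1,2,2],[2,1,1,2],[2,2],[],[],[1,1,2,2],[2,2],[2,1,1,2]]"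
definition wit4_19 :: "nat list list" where "wit4_19 = [[1,2,2],[],[0,1,2,2],[2,2],[2,2],[1,2,2],[],[0,1,2,2],[0,0,1,2,2],[2,2],[1,1,2,2],[],[],[0,1,2,2],[2,2],[0,0,2,1,1,2],[1,1,2,2],[],[1,2,2],[2,2],[2,2],[0,0,1,2,2],[],[1,2,2],[0,1,2,2],[2,2],[1,1,2,2],[],[],[2,2],[2,1,1,2],[1,1,2,2],[2,2],[],[0,1,2,2],[1,2,2],[0,0,1,2,2],[1,1,2,2],[],[2,2],[1,2,2],[0,1,2,2],[2,2],[],[],[0,2,1,1,2],[1,2,2],[2,2],[1,2,2],[],[2,2],[1,1,2,2],[0,1,2,2],[2,2],[],[2,1,1,2],[2,2],[1,1,2,2],[0,1,2,2],[]]"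
definition wit4_20 :: "nat list list" where "wit4_20 = [[],[0,2,1,1,2],[1,2,2],[2,2],[1,2,2],[],[2,2],[1,1,2,2],[0,1,2,2],[2,2],[],[2,1,1,2],[2,2],[1,1,2,2],[0,1,2,2],[],[],[2,2],[2,1,1,2],[1,1,2,2],[2,2],[],[0,1,2,2],[1,2,2],[0,0,1,2,2],[1,1,2,2],[],[2,2],[1,2,2],[0,1,2,2],[2,2],[],[],[0,1,2,2],[2,2],[0,0,2,1,1,2],[1,1,2,2],[],[1,2,2],[2,2],[2,2],[0,0,1,2,2],[],[1,2,2],[0,1,2,2],[2,2],[1,1,2,2],[],[],[1,1,2,2],[2,2],[1,2,2],[1,1,2,2],[],[0,1,2,2],[2,2],[2,2],[2,1,1,2],[],[0,1,2,2]]"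
definition wit4_21 :: "nat list list" where "wit4_21 = [[0,2,1,1,2],[2,2],[1,2,2],[],[],[2,2],[1,2,2],[1,1,2,2],[2,2],[],[1,1,2,2],[0,1,2,2],[0,0,1,2,2],[1,2,2],[],[2,2],[0,1,2,2],[0,0,2,1,1,2],[2,2],[],[],[1,2,2],[0,1,2,2],[2,2],[0,1,2,2],[],[2,2],[1,2,2],[1,1,2,2],[2,2],[],[0,0,1,2,2],[2,2],[1,1,2,2],[2,1,1,2],[],[],[1,2,2],[0,1,2,2],[2,2],[0,1,2,2],[],[2,2],[1,2,2],[1,1,2,2],[2,2],[],[0,0,1,2,2],[2,2],[1,1,2,2],[2,1,1,2],[],[],[2,2],[1,2,2],[1,1,2,2],[2,2],[],[1,1,2,2],[0,1,2,2]]"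
definition wit4_22 :: "nat list list" where "wit4_22 = [[0,0,1,2,2],[1,2,2],[],[2,2],[0,1,2,2],[0,0,2,1,1,2],[2,2],[],[],[1,1,2,2],[2,2],[1,2,2],[1,1,2,2],[],[0,1,2,2],[2,2],[2,2],[2,1,1,2],[],[0,1,2,2],[0,2,1,1,2],[2,2],[1,2,2],[],[],[1,2,2],[2,2],[0,1,2,2],[1,1,2,2],[],[2,1,1,2],[2,2],[2,2],[0,0,1,2,2],[],[1,1,2,2],[1,2,2],[2,2],[0,1,2,2],[],[],[2,2],[0,1,2,2],[1,1,2,2],[2,2],[],[1,2,2],[0,2,1,1,2],[2,1,1,2],[0,1,2,2],[],[2,2],[1,1,2,2],[1,2,2],[2,2],[],[],[0,1,2,2],[1,1,2,2],[2,2]]"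
definition wit4_23 :: "nat list list" where "wit4_23 = [[0,0,2,1,1,2],[],[2,2],[0,1,2,2],[1,2,2],[2,2],[],[0,0,1,2,2],[2,2],[1,1,2,2],[1,2,2],[],[],[0,1,2,2],[1,1,2,2],[2,2],[0,0,2,1,1,2],[],[2,2],[0,1,2,2],[1,2,2],[2,2],[],[0,0,1,2,2],[2,2],[1,1,2,2],[1,2,2],[],[],[2,2],[0,1,2,2],[1,1,2,2],[2,2],[],[1,2,2],[0,2,1,1,2],[2,1,1,2],[0,1,2,2],[],[2,2],[1,1,2,2],[1,2,2],[2,2],[],[],[1,2,2],[2,2],[0,1,2,2],[1,1,2,2],[],[2,1,1,2],[2,2],[2,2],[0,0,1,2,2],[],[1,1,2,2],[1,2,2],[2,2],[0,1,2,2],[]]"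
definition wit4_24 :: "nat list list" where "wit4_24 = [[],[1,1,2,2],[2,2],[2,1,1,2],[1,2,2],[],[1,1,1,2,2],[2,2],[2,2],[1,2,2],[],[1,1,2,2],[1,0,0,1,2,2],[2,2],[1,1,2,2],[],[],[2,2],[1,1,1,2,2],[1,2,2],[2,2],[],[1,1,2,2],[1,0,0,1,2,2],[1,2,2],[1,1,2,2],[],[2,2],[1,1,2,2],[2,1,1,2],[2,2],[],[],[1,0,0,1,2,2],[1,1,2,2],[2,2],[2,1,1,2],[],[2,2],[1,1,2,2],[1,1,2,2],[2,2],[],[1,2,2],[2,2],[1,2,2],[1,1,1,2,2],[],[],[1,0,0,1,2,2],[1,1,2,2],[2,2],[2,1,1,2],[],[2,2],[1,1,2,2],[1,1,2,2],[2,2],[],[1,2,2]]"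
definition wit4_25 :: "nat list list" where "wit4_25 = [[2,2],[1,2,2],[1,1,1,2,2],[],[],[2,2],[1,1,1,2,2],[1,2,2],[2,2],[],[1,1,2,2],[1,0,0,1,2,2],[1,2,2],[1,1,2,2],[],[2,2],[1,1,2,2],[2,1,1,2],[2,2],[],[],[1,1,2,2],[2,2],[2,1,1,2],[1,2,2],[],[1,1,1,2,2],[2,2],[2,2],[1,2,2],[],[1,1,2,2],[1,0,0,1,2,2],[2,2],[1,1,2,2],[]]"
definition wit4 :: "nat list list" where "wit4 = wit4_0 @ wit4_1 @ wit4_2 @ wit4_3 @ wit4_4 @ wit4_5 @ wit4_6 @ wit4_7 @ wit4_8 @ wit4_9 @ wit4_10 @ wit4_11 @ wit4_12 @ wit4_13 @ wit4_14 @ wit4_15 @ wit4_16 @ wit4_17 @ wit4_18 @ wit4_19 @ wit4_20 @ wit4_21 @ wit4_22 @ wit4_23 @ wit4_24 @ wit4_25"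

definition wit5_0 :: "nat list list" where "wit5_0 = [[],[1,1,2,2],[1,0,0,1,2,2],[2,2],[1,1,2,2],[],[2,2],[1,2,2],[2,1,1,2],[2,2],[],[1,1,2,2],[2,2],[1,1,1,2,2],[1,2,2],[],[],[1,1,1,2,2],[2,2],[1,2,2],[1,2,2],[],[1,1,2,2],[2,2],[2,2],[1,1,2,2],[],[1,0,0,1,2,2],[1,1,2,2],[2,2],[2,1,1,2],[],[],[2,2],[1,1,2,2],[2,1,1,2],[2,2],[],[1,2,2],[1,1,2,2],[1,2,2],[1,1,1,2,2],[],[2,2],[1,0,0,1,2,2],[1,1,2,2],[2,2],[],[],[2,2],[1,1,2,2],[2,1,1,2],[2,2],[],[1,2,2],[1,1,2,2],[1,2,2],[1,1,1,2,2],[],[2,2]]"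
definition wit5_1 :: "nat list list" where "wit5_1 = [[1,0,0,1,2,2],[1,1,2,2],[2,2],[],[],[1,1,1,2,2],[2,2],[1,2,2],[1,2,2],[],[1,1,2,2],[2,2],[2,2],[1,1,2,2],[],[1,0,0,1,2,2],[1,1,2,2],[2,2],[2,1,1,2],[],[],[1,1,2,2],[1,0,0,1,2,2],[2,2],[1,1,2,2],[],[2,2],[1,2,2],[2,1,1,2],[2,2],[],[1,1,2,2],[2,2],[1,1,1,2,2],[1,2,2],[],[],[0,1,2,2],[1,2,2],[2,2],[1,1,2,2],[],[2,2],[0,0,1,2,2],[0,1,2,2],[2,2],[],[1,2,2],[2,2],[2,1,1,2],[1,1,2,2],[],[],[1,2,2],[2,2],[1,1,2,2],[0,0,1,2,2],[],[1,2,2],[2,2]]"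
definition wit5_2 :: "nat list list" where "wit5_2 = [[2,2],[1,1,2,2],[],[0,1,2,2],[0,1,2,2],[2,2],[0,0,2,1,1,2],[],[],[2,2],[1,1,2,2],[1,2,2],[2,2],[],[2,1,1,2],[0,1,2,2],[1,1,2,2],[0,1,2,2],[],[2,2],[0,2,1,1,2],[1,2,2],[2,2],[],[],[2,2],[1,1,2,2],[1,2,2],[2,2],[],[2,1,1,2],[0,1,2,2],[1,1,2,2],[0,1,2,2],[],[2,2],[0,2,1,1,2],[1,2,2],[2,2],[],[],[1,2,2],[2,2],[1,1,2,2],[0,0,1,2,2],[],[1,2,2],[2,2],[2,2],[1,1,2,2],[],[0,1,2,2],[0,1,2,2],[2,2],[0,0,2,1,1,2],[],[],[0,1,2,2],[1,2,2],[2,2]]"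
definition wit5_3 :: "nat list list" where "wit5_3 = [[1,1,2,2],[],[2,2],[0,0,1,2,2],[0,1,2,2],[2,2],[],[1,2,2],[2,2],[2,1,1,2],[1,1,2,2],[],[],[1,1,2,2],[0,1,2,2],[2,2],[1,2,2],[],[2,2],[0,0,1,2,2],[0,0,2,1,1,2],[2,2],[],[0,1,2,2],[2,2],[1,2,2],[1,1,2,2],[],[],[0,1,2,2],[2,2],[1,1,2,2],[2,1,1,2],[],[0,1,2,2],[2,2],[2,2],[1,2,2],[],[0,2,1,1,2],[1,1,2,2],[2,2],[1,2,2],[],[],[2,2],[1,2,2],[0,1,2,2],[2,2],[],[0,0,1,2,2],[1,1,2,2],[1,1,2,2],[2,1,1,2],[],[2,2],[1,2,2],[0,1,2,2],[2,2],[]]"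
definition wit5_4 :: "nat list list" where "wit5_4 = [[],[2,2],[1,2,2],[0,1,2,2],[2,2],[],[0,0,1,2,2],[1,1,2,2],[1,1,2,2],[2,1,1,2],[],[2,2],[1,2,2],[0,1,2,2],[2,2],[],[],[0,1,2,2],[2,2],[1,1,2,2],[2,1,1,2],[],[0,1,2,2],[2,2],[2,2],[1,2,2],[],[0,2,1,1,2],[1,1,2,2],[2,2],[1,2,2],[],[],[1,1,2,2],[0,1,2,2],[2,2],[1,2,2],[],[2,2],[0,0,1,2,2],[0,0,2,1,1,2],[2,2],[],[0,1,2,2],[2,2],[1,2,2],[1,1,2,2],[],[],[1,2,2],[0,2,1,1,2],[2,2],[0,1,2,2],[],[2,2],[2,1,1,2],[1,2,2],[2,2],[],[1,1,2,2]]"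
definition wit5_5 :: "nat list list" where "wit5_5 = [[2,2],[0,1,2,2],[1,1,2,2],[],[],[2,1,1,2],[2,2],[1,1,2,2],[0,0,1,2,2],[],[1,1,2,2],[2,2],[2,2],[0,1,2,2],[],[1,2,2],[1,2,2],[2,2],[0,1,2,2],[],[],[2,2],[0,1,2,2],[0,0,2,1,1,2],[2,2],[],[0,0,1,2,2],[1,2,2],[1,1,2,2],[1,2,2],[],[2,2],[0,1,2,2],[1,1,2,2],[2,2],[],[],[2,2],[0,1,2,2],[0,0,2,1,1,2],[2,2],[],[0,0,1,2,2],[1,2,2],[1,1,2,2],[1,2,2],[],[2,2],[0,1,2,2],[1,1,2,2],[2,2],[],[],[2,1,1,2],[2,2],[1,1,2,2],[0,0,1,2,2],[],[1,1,2,2],[2,2]]"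
definition wit5_6 :: "nat list list" where "wit5_6 = [[2,2],[0,1,2,2],[],[1,2,2],[1,2,2],[2,2],[0,1,2,2],[],[],[1,2,2],[0,2,1,1,2],[2,2],[0,1,2,2],[],[2,2],[2,1,1,2],[1,2,2],[2,2],[],[1,1,2,2],[2,2],[0,1,2,2],[1,1,2,2],[],[],[1,1,2,2],[0,0,1,2,2],[2,2],[0,1,2,2],[],[2,2],[1,2,2],[2,1,1,2],[2,2],[],[1,1,2,2],[2,2],[0,1,2,2],[1,2,2],[],[],[0,0,1,2,2],[2,2],[1,2,2],[1,2,2],[],[1,1,2,2],[2,2],[2,2],[0,1,2,2],[],[0,0,2,1,1,2],[1,1,2,2],[2,2],[0,1,2,2],[],[],[2,2],[0,1,2,2],[2,1,1,2]]"
definition wit5_7 :: "nat list list" where "wit5_7 = [[2,2],[],[1,2,2],[1,1,2,2],[1,2,2],[0,2,1,1,2],[],[2,2],[0,1,2,2],[1,1,2,2],[2,2],[],[],[2,2],[0,1,2,2],[2,1,1,2],[2,2],[],[1,2,2],[1,1,2,2],[1,2,2],[0,2,1,1,2],[],[2,2],[0,1,2,2],[1,1,2,2],[2,2],[],[],[0,0,1,2,2],[2,2],[1,2,2],[1,2,2],[],[1,1,2,2],[2,2],[2,2],[0,1,2,2],[],[0,0,2,1,1,2],[1,1,2,2],[2,2],[0,1,2,2],[],[],[1,1,2,2],[0,0,1,2,2],[2,2],[0,1,2,2],[],[2,2],[1,2,2],[2,1,1,2],[2,2],[],[1,1,2,2],[2,2],[0,1,2,2],[1,2,2],[]]"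
definition wit5_8 :: "nat list list" where "wit5_8 = [[],[1,1,2,2],[1,2,2],[2,2],[1,1,2,2],[],[2,2],[1,0,0,1,2,2],[1,1,1,2,2],[2,2],[],[1,2,2],[2,2],[2,1,1,2],[1,1,2,2],[],[],[1,2,2],[2,2],[1,1,2,2],[1,1,1,2,2],[],[1,2,2],[2,2],[2,2],[1,1,2,2],[],[2,1,1,2],[1,1,2,2],[2,2],[1,0,0,1,2,2],[],[],[2,2],[1,1,2,2],[1,2,2],[2,2],[],[2,1,1,2],[1,1,2,2],[1,1,2,2],[1,0,0,1,2,2],[],[2,2],[1,1,1,2,2],[1,2,2],[2,2],[],[],[2,2],[1,1,2,2],[1,2,2],[2,2],[],[2,1,1,2],[1,1,2,2],[1,1,2,2],[1,0,0,1,2,2],[],[2,2]]"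
definition wit5_9 :: "nat list list" where "wit5_9 = [[1,1,1,2,2],[1,2,2],[2,2],[],[],[1,2,2],[2,2],[1,1,2,2],[1,1,1,2,2],[],[1,2,2],[2,2],[2,2],[1,1,2,2],[],[2,1,1,2],[1,1,2,2],[2,2],[1,0,0,1,2,2],[],[],[1,1,2,2],[1,2,2],[2,2],[1,1,2,2],[],[2,2],[1,0,0,1,2,2],[1,1,1,2,2],[2,2],[],[1,2,2],[2,2],[2,1,1,2],[1,1,2,2],[],[],[0,1,2,2],[2,1,1,2],[2,2],[1,2,2],[],[2,2],[0,2,1,1,2],[0,1,2,2],[2,2],[],[1,1,2,2],[2,2],[1,2,2],[1,1,2,2],[],[],[0,0,1,2,2],[2,2],[1,1,2,2],[2,1,1,2],[],[1,1,2,2],[2,2]]"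
definition wit5_10 :: "nat list list" where "wit5_10 = [[2,2],[1,2,2],[],[0,1,2,2],[0,1,2,2],[2,2],[1,2,2],[],[],[2,2],[1,2,2],[0,0,1,2,2],[2,2],[],[0,0,2,1,1,2],[0,1,2,2],[1,1,2,2],[0,1,2,2],[],[2,2],[1,2,2],[1,1,2,2],[2,2],[],[],[2,2],[1,2,2],[0,0,1,2,2],[2,2],[],[0,0,2,1,1,2],[0,1,2,2],[1,1,2,2],[0,1,2,2],[],[2,2],[1,2,2],[1,1,2,2],[2,2],[],[],[0,0,1,2,2],[2,2],[1,1,2,2],[2,1,1,2],[],[1,1,2,2],[2,2],[2,2],[1,2,2],[],[0,1,2,2],[0,1,2,2],[2,2],[1,2,2],[],[],[0,1,2,2],[2,1,1,2],[2,2]]"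
definition wit5_11 :: "nat list list" where "wit5_11 = [[1,2,2],[],[2,2],[0,2,1,1,2],[0,1,2,2],[2,2],[],[1,1,2,2],[2,2],[1,2,2],[1,1,2,2],[],[],[1,2,2],[0,0,1,2,2],[2,2],[1,1,2,2],[],[2,2],[0,1,2,2],[1,2,2],[2,2],[],[1,1,2,2],[2,2],[0,0,2,1,1,2],[0,1,2,2],[],[],[2,1,1,2],[2,2],[0,1,2,2],[0,1,2,2],[],[1,1,2,2],[2,2],[2,2],[1,1,2,2],[],[1,2,2],[1,2,2],[2,2],[0,2,1,1,2],[],[],[2,2],[1,1,2,2],[0,0,1,2,2],[2,2],[],[0,1,2,2],[1,2,2],[0,1,2,2],[1,2,2],[],[2,2],[2,1,1,2],[1,1,2,2],[2,2],[]]"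
definition wit5_12 :: "nat list list" where "wit5_12 = [[],[2,2],[1,1,2,2],[0,0,1,2,2],[2,2],[],[0,1,2,2],[1,2,2],[0,1,2,2],[1,2,2],[],[2,2],[2,1,1,2],[1,1,2,2],[2,2],[],[],[2,1,1,2],[2,2],[0,1,2,2],[0,1,2,2],[],[1,1,2,2],[2,2],[2,2],[1,1,2,2],[],[1,2,2],[1,2,2],[2,2],[0,2,1,1,2],[],[],[1,2,2],[0,0,1,2,2],[2,2],[1,1,2,2],[],[2,2],[0,1,2,2],[1,2,2],[2,2],[],[1,1,2,2],[2,2],[0,0,2,1,1,2],[0,1,2,2],[],[],[0,1,2,2],[0,0,2,1,1,2],[2,2],[1,1,2,2],[],[2,2],[1,2,2],[0,1,2,2],[2,2],[],[1,1,2,2]]"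
definition wit5_13 :: "nat list list" where "wit5_13 = [[2,2],[0,0,1,2,2],[1,2,2],[],[],[0,2,1,1,2],[2,2],[1,2,2],[1,2,2],[],[1,1,2,2],[2,2],[2,2],[1,1,2,2],[],[0,1,2,2],[0,1,2,2],[2,2],[2,1,1,2],[],[],[2,2],[1,1,2,2],[2,1,1,2],[2,2],[],[1,2,2],[0,1,2,2],[1,2,2],[0,1,2,2],[],[2,2],[0,0,1,2,2],[1,1,2,2],[2,2],[],[],[2,2],[1,1,2,2],[2,1,1,2],[2,2],[],[1,2,2],[0,1,2,2],[1,2,2],[0,1,2,2],[],[2,2],[0,0,1,2,2],[1,1,2,2],[2,2],[],[],[0,2,1,1,2],[2,2],[1,2,2],[1,2,2],[],[1,1,2,2],[2,2]]"
definition wit5_14 :: "nat list list" where "wit5_14 = [[2,2],[1,1,2,2],[],[0,1,2,2],[0,1,2,2],[2,2],[2,1,1,2],[],[],[0,1,2,2],[0,0,2,1,1,2],[2,2],[1,1,2,2],[],[2,2],[1,2,2],[0,1,2,2],[2,2],[],[1,1,2,2],[2,2],[0,0,1,2,2],[1,2,2],[],[],[1,1,2,2],[1,2,2],[2,2],[1,1,2,2],[],[2,2],[0,1,2,2],[0,2,1,1,2],[2,2],[],[1,2,2],[2,2],[2,1,1,2],[0,1,2,2],[],[],[1,2,2],[2,2],[0,1,2,2],[0,1,2,2],[],[1,2,2],[2,2],[2,2],[1,1,2,2],[],[2,1,1,2],[1,1,2,2],[2,2],[0,0,1,2,2],[],[],[2,2],[1,1,2,2],[1,2,2]]"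
definition wit5_15 :: "nat list list" where "wit5_15 = [[2,2],[],[0,1,2,2],[1,1,2,2],[0,1,2,2],[0,0,2,1,1,2],[],[2,2],[0,0,1,2,2],[1,2,2],[2,2],[],[],[2,2],[1,1,2,2],[1,2,2],[2,2],[],[0,1,2,2],[1,1,2,2],[0,1,2,2],[0,0,2,1,1,2],[],[2,2],[0,0,1,2,2],[1,2,2],[2,2],[],[],[1,2,2],[2,2],[0,1,2,2],[0,1,2,2],[],[1,2,2],[2,2],[2,2],[1,1,2,2],[],[2,1,1,2],[1,1,2,2],[2,2],[0,0,1,2,2],[],[],[1,1,2,2],[1,2,2],[2,2],[1,1,2,2],[],[2,2],[0,1,2,2],[0,2,1,1,2],[2,2],[],[1,2,2],[2,2],[2,1,1,2],[0,1,2,2],[]]"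
definition wit5_16 :: "nat list list" where "wit5_16 = [[],[1,1,2,2],[2,1,1,2],[2,2],[1,2,2],[],[2,2],[1,1,1,2,2],[1,0,0,1,2,2],[2,2],[],[1,1,2,2],[2,2],[1,2,2],[1,1,2,2],[],[],[1,0,0,1,2,2],[2,2],[1,1,2,2],[2,1,1,2],[],[1,1,2,2],[2,2],[2,2],[1,2,2],[],[1,1,1,2,2],[1,1,2,2],[2,2],[1,2,2],[],[],[2,2],[1,2,2],[1,1,1,2,2],[2,2],[],[1,0,0,1,2,2],[1,1,2,2],[1,1,2,2],[2,1,1,2],[],[2,2],[1,2,2],[1,1,2,2],[2,2],[],[],[2,2],[1,2,2],[1,1,1,2,2],[2,2],[],[1,0,0,1,2,2],[1,1,2,2],[1,1,2,2],[2,1,1,2],[],[2,2]]"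
definition wit5_17 :: "nat list list" where "wit5_17 = [[1,2,2],[1,1,2,2],[2,2],[],[],[1,0,0,1,2,2],[2,2],[1,1,2,2],[2,1,1,2],[],[1,1,2,2],[2,2],[2,2],[1,2,2],[],[1,1,1,2,2],[1,1,2,2],[2,2],[1,2,2],[],[],[1,1,2,2],[2,1,1,2],[2,2],[1,2,2],[],[2,2],[1,1,1,2,2],[1,0,0,1,2,2],[2,2],[],[1,1,2,2],[2,2],[1,2,2],[1,1,2,2],[],[],[1,2,2],[0,1,2,2],[2,2],[1,1,2,2],[],[2,2],[2,1,1,2],[1,2,2],[2,2],[],[0,1,2,2],[2,2],[0,0,1,2,2],[1,1,2,2],[],[],[0,1,2,2],[2,2],[1,1,2,2],[0,0,2,1,1,2],[],[0,1,2,2],[2,2]]"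
definition wit5_18 :: "nat list list" where "wit5_18 = [[2,2],[1,1,2,2],[],[1,2,2],[1,2,2],[2,2],[0,0,1,2,2],[],[],[2,2],[1,1,2,2],[0,1,2,2],[2,2],[],[0,2,1,1,2],[1,2,2],[1,1,2,2],[1,2,2],[],[2,2],[2,1,1,2],[0,1,2,2],[2,2],[],[],[2,2],[1,1,2,2],[0,1,2,2],[2,2],[],[0,2,1,1,2],[1,2,2],[1,1,2,2],[1,2,2],[],[2,2],[2,1,1,2],[0,1,2,2],[2,2],[],[],[0,1,2,2],[2,2],[1,1,2,2],[0,0,2,1,1,2],[],[0,1,2,2],[2,2],[2,2],[1,1,2,2],[],[1,2,2],[1,2,2],[2,2],[0,0,1,2,2],[],[],[1,2,2],[0,1,2,2],[2,2]]"
definition wit5_19 :: "nat list list" where "wit5_19 = [[1,1,2,2],[],[2,2],[2,1,1,2],[1,2,2],[2,2],[],[0,1,2,2],[2,2],[0,0,1,2,2],[1,1,2,2],[],[],[1,1,2,2],[0,1,2,2],[2,2],[1,1,2,2],[],[2,2],[1,2,2],[2,1,1,2],[2,2],[],[0,1,2,2],[2,2],[0,2,1,1,2],[1,2,2],[],[],[0,1,2,2],[2,2],[1,2,2],[1,2,2],[],[0,1,2,2],[2,2],[2,2],[1,1,2,2],[],[0,0,1,2,2],[1,1,2,2],[2,2],[2,1,1,2],[],[],[2,2],[1,1,2,2],[0,1,2,2],[2,2],[],[1,2,2],[1,1,2,2],[1,2,2],[0,0,1,2,2],[],[2,2],[0,0,2,1,1,2],[0,1,2,2],[2,2],[]]"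
definition wit5_20 :: "nat list list" where "wit5_20 = [[],[2,2],[1,1,2,2],[0,1,2,2],[2,2],[],[1,2,2],[1,1,2,2],[1,2,2],[0,0,1,2,2],[],[2,2],[0,0,2,1,1,2],[0,1,2,2],[2,2],[],[],[0,1,2,2],[2,2],[1,2,2],[1,2,2],[],[0,1,2,2],[2,2],[2,2],[1,1,2,2],[],[0,0,1,2,2],[1,1,2,2],[2,2],[2,1,1,2],[],[],[1,1,2,2],[0,1,2,2],[2,2],[1,1,2,2],[],[2,2],[1,2,2],[2,1,1,2],[2,2],[],[0,1,2,2],[2,2],[0,2,1,1,2],[1,2,2],[],[],[1,1,2,2],[1,2,2],[2,2],[0,1,2,2],[],[2,2],[0,0,2,1,1,2],[0,0,1,2,2],[2,2],[],[1,2,2]]"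
definition wit5_21 :: "nat list list" where "wit5_21 = [[2,2],[0,1,2,2],[1,1,2,2],[],[],[1,2,2],[2,2],[1,1,2,2],[0,2,1,1,2],[],[1,2,2],[2,2],[2,2],[0,1,2,2],[],[2,1,1,2],[1,1,2,2],[2,2],[0,1,2,2],[],[],[2,2],[0,1,2,2],[1,2,2],[2,2],[],[2,1,1,2],[1,1,2,2],[1,1,2,2],[0,0,1,2,2],[],[2,2],[0,1,2,2],[1,2,2],[2,2],[],[],[2,2],[0,1,2,2],[1,2,2],[2,2],[],[2,1,1,2],[1,1,2,2],[1,1,2,2],[0,0,1,2,2],[],[2,2],[0,1,2,2],[1,2,2],[2,2],[],[],[1,2,2],[2,2],[1,1,2,2],[0,2,1,1,2],[],[1,2,2],[2,2]]"
definition wit5_22 :: "nat list list" where "wit5_22 = [[2,2],[0,1,2,2],[],[2,1,1,2],[1,1,2,2],[2,2],[0,1,2,2],[],[],[1,1,2,2],[1,2,2],[2,2],[0,1,2,2],[],[2,2],[0,0,2,1,1,2],[0,0,1,2,2],[2,2],[],[1,2,2],[2,2],[0,1,2,2],[1,1,2,2],[],[],[1,1,2,2],[2,1,1,2],[2,2],[1,2,2],[],[2,2],[0,1,2,2],[0,0,1,2,2],[2,2],[],[1,1,2,2],[2,2],[1,2,2],[0,1,2,2],[],[],[0,0,2,1,1,2],[2,2],[0,1,2,2],[0,1,2,2],[],[1,1,2,2],[2,2],[2,2],[1,2,2],[],[0,0,1,2,2],[1,1,2,2],[2,2],[1,2,2],[],[],[2,2],[1,2,2],[0,2,1,1,2]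]"
definition wit5_23 :: "nat list list" where "wit5_23 = [[2,2],[],[0,1,2,2],[1,1,2,2],[0,1,2,2],[2,1,1,2],[],[2,2],[1,2,2],[1,1,2,2],[2,2],[],[],[2,2],[1,2,2],[0,2,1,1,2],[2,2],[],[0,1,2,2],[1,1,2,2],[0,1,2,2],[2,1,1,2],[],[2,2],[1,2,2],[1,1,2,2],[2,2],[],[],[0,0,2,1,1,2],[2,2],[0,1,2,2],[0,1,2,2],[],[1,1,2,2],[2,2],[2,2],[1,2,2],[],[0,0,1,2,2],[1,1,2,2],[2,2],[1,2,2],[],[],[1,1,2,2],[2,1,1,2],[2,2],[1,2,2],[],[2,2],[0,1,2,2],[0,0,1,2,2],[2,2],[],[1,1,2,2],[2,2],[1,2,2],[0,1,2,2],[]]"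
definition wit5_24 :: "nat list list" where "wit5_24 = [[],[1,2,2],[1,1,1,2,2],[2,2],[1,1,2,2],[],[2,2],[2,1,1,2],[1,2,2],[2,2],[],[1,1,2,2],[2,2],[1,0,0,1,2,2],[1,1,2,2],[],[],[2,1,1,2],[2,2],[1,1,2,2],[1,0,0,1,2,2],[],[1,1,2,2],[2,2],[2,2],[1,1,2,2],[],[1,2,2],[1,2,2],[2,2],[1,1,1,2,2],[],[],[2,2],[1,1,2,2],[1,0,0,1,2,2],[2,2],[],[1,1,1,2,2],[1,2,2],[1,1,2,2],[1,2,2],[],[2,2],[2,1,1,2],[1,1,2,2],[2,2],[],[],[2,2],[1,1,2,2],[1,0,0,1,2,2],[2,2],[],[1,1,1,2,2],[1,2,2],[1,1,2,2],[1,2,2],[],[2,2]]"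
definition wit5_25 :: "nat list list" where "wit5_25 = [[2,1,1,2],[1,1,2,2],[2,2],[],[],[2,1,1,2],[2,2],[1,1,2,2],[1,0,0,1,2,2],[],[1,1,2,2],[2,2],[2,2],[1,1,2,2],[],[1,2,2],[1,2,2],[2,2],[1,1,1,2,2],[],[],[1,2,2],[1,1,1,2,2],[2,2],[1,1,2,2],[],[2,2],[2,1,1,2],[1,2,2],[2,2],[],[1,1,2,2],[2,2],[1,0,0,1,2,2],[1,1,2,2],[]]"
definition wit5 :: "nat list list" where "wit5 = wit5_0 @ wit5_1 @ wit5_2 @ wit5_3 @ wit5_4 @ wit5_5 @ wit5_6 @ wit5_7 @ wit5_8 @ wit5_9 @ wit5_10 @ wit5_11 @ wit5_12 @ wit5_13 @ wit5_14 @ wit5_15 @ wit5_16 @ wit5_17 @ wit5_18 @ wit5_19 @ wit5_20 @ wit5_21 @ wit5_22 @ wit5_23 @ wit5_24 @ wit5_25"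
definition clsl :: "el \<Rightarrow> el list" where "clsl c = (if c \<in> set xsR then xsR else xsQ)"

definition enum1 :: "(el \<times> el \<times> el \<times> el) list" where
  "enum1 = [(a,b,c,y). a \<leftarrow> xsS, b \<leftarrow> xsS, c \<leftarrow> xsR @ xsQ, y \<leftarrow> xsS @ clsl c]"
definition enum2 :: "(el \<times> el \<times> el \<times> el) list" where
  "enum2 = [(a,b,c,y). a \<leftarrow> xsR, b \<leftarrow> xsR, c \<leftarrow> xsS, y \<leftarrow> xsR @ xsS]"
definition enum3 :: "(el \<times> el \<times> el \<times> el) list" where
  "enum3 = [(a,b,c,y). a \<leftarrow> xsQ, b \<leftarrow> xsQ, c \<leftarrow> xsS, y \<leftarrow> xsQ @ xsS]"
definition enum4 :: "(el \<times> el \<times> el \<times> el \<times> el) list" where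
  "enum4 = [(a,b,c,d,y). a \<leftarrow> xsR, b \<leftarrow> xsR, c \<leftarrow> xsS, d \<leftarrow> xsQ, y \<leftarrow> xsQ]"
definition enum5 :: "(el \<times> el \<times> el \<times> el \<times> el) list" where
  "enum5 = [(a,b,c,d,y). a \<leftarrow> xsQ, b \<leftarrow> xsQ, c \<leftarrow> xsS, d \<leftarrow> xsR, y \<leftarrow> xsR]"

definition ok3 :: "el \<times> el \<times> el \<times> el \<Rightarrow> nat list \<Rightarrow> bool" where
  "ok3 = (\<lambda>(a,b,c,y) ms. list_all (\<lambda>i. i < 2) ms \<and> last (fold hmi ms [a,b,c]) = y)"
definition ok4 :: "el \<times> el \<times> el \<times> el \<times> el \<Rightarrow> nat list \<Rightarrow> bool" where
  "ok4 = (\<lambda>(a,b,c,d,y) ms. list_all (\<lambda>i. i < 3) ms \<and> last (fold hmi ms [a,b,c,d]) = y)"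
lemma chk1: "list_all2 ok3 enum1 wit1"
  by (simp add: enum1_def wit1_def wit1_0_def wit1_1_def wit1_2_def wit1_3_def wit1_4_def wit1_5_def wit1_6_def wit1_7_def wit1_8_def wit1_9_def wit1_10_def wit1_11_def wit1_12_def wit1_13_def wit1_14_def wit1_15_def wit1_16_def wit1_17_def wit1_18_def wit1_19_def wit1_20_def wit1_21_def wit1_22_def wit1_23_def wit1_24_def wit1_25_def wit1_26_def wit1_27_def wit1_28_def wit1_29_def wit1_30_def wit1_31_def wit1_32_def wit1_33_def wit1_34_def wit1_35_def wit1_36_def wit1_37_def wit1_38_def wit1_39_def wit1_40_def wit1_41_def wit1_42_def wit1_43_def wit1_44_def wit1_45_def wit1_46_def wit1_47_def xsS_def xsR_def xsQ_def ok3_def clsl_def)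

lemma chk2: "list_all2 ok3 enum2 wit2"
  by (simp add: enum2_def wit2_def wit2_0_def wit2_1_def wit2_2_def wit2_3_def wit2_4_def wit2_5_def wit2_6_def wit2_7_def wit2_8_def wit2_9_def wit2_10_def wit2_11_def wit2_12_def wit2_13_def wit2_14_def wit2_15_def xsS_def xsR_def xsQ_def ok3_def clsl_def)

lemma chk3: "list_all2 ok3 enum3 wit3"
  by (simp add: enum3_def wit3_def wit3_0_def wit3_1_def wit3_2_def wit3_3_def wit3_4_def wit3_5_def wit3_6_def wit3_7_def wit3_8_def wit3_9_def wit3_10_def wit3_11_def wit3_12_def wit3_13_def wit3_14_def wit3_15_def xsS_def xsR_def xsQ_def ok3_def clsl_def)

lemma chk4: "list_all2 ok4 enum4 wit4"
  by (simp add: enum4_def wit4_def wit4_0_def wit4_1_def wit4_2_def wit4_3_def wit4_4_def wit4_5_def wit4_6_def wit4_7_def wit4_8_def wit4_9_def wit4_10_def wit4_11_def wit4_12_def wit4_13_def wit4_14_def wit4_15_def wit4_16_def wit4_17_def wit4_18_def wit4_19_def wit4_20_def wit4_21_def wit4_22_def wit4_23_def wit4_24_def wit4_25_def xsS_def xsR_def xsQ_def ok4_def clsl_def)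

lemma chk5: "list_all2 ok4 enum5 wit5"
  by (simp add: enum5_def wit5_def wit5_0_def wit5_1_def wit5_2_def wit5_3_def wit5_4_def wit5_5_def wit5_6_def wit5_7_def wit5_8_def wit5_9_def wit5_10_def wit5_11_def wit5_12_def wit5_13_def wit5_14_def wit5_15_def wit5_16_def wit5_17_def wit5_18_def wit5_19_def wit5_20_def wit5_21_def wit5_22_def wit5_23_def wit5_24_def wit5_25_def xsS_def xsR_def xsQ_def ok4_def clsl_def)
lemma mem_cm: "x \<in> set A \<Longrightarrow> y \<in> set (f x) \<Longrightarrow> y \<in> set (concat (map f A))" by auto
lemma lc3: "a \<in> set A \<Longrightarrow> b \<in> set B \<Longrightarrow> c \<in> set Cs \<Longrightarrow> y \<in> set (G c) \<Longrightarrow>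
  (a,b,c,y) \<in> set [(a,b,c,y). a \<leftarrow> A, b \<leftarrow> B, c \<leftarrow> Cs, y \<leftarrow> G c]"
  apply (rule mem_cm[of a], assumption)
  apply (rule mem_cm[of b], assumption)
  apply (rule mem_cm[of c], assumption)
  apply simp
  done
lemma lc4: "a \<in> set A \<Longrightarrow> b \<in> set B \<Longrightarrow> c \<in> set Cs \<Longrightarrow> d \<in> set D \<Longrightarrow> y \<in> set Y \<Longrightarrow>
  (a,b,c,d,y) \<in> set [(a,b,c,d,y). a \<leftarrow> A, b \<leftarrow> B, c \<leftarrow> Cs, d \<leftarrow> D, y \<leftarrow> Y]"
  apply (rule mem_cm[of a], assumption)
  apply (rule mem_cm[of b], assumption)
  apply (rule mem_cm[of c], assumption)
  apply (rule mem_cm[of d], assumption)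
  apply simp
  done

lemma la2_ex: "list_all2 P xs ys \<Longrightarrow> x \<in> set xs \<Longrightarrow> \<exists>y. P x y"
  by (metis in_set_conv_nth list_all2_conv_all_nth)

lemma win_gen3: "list_all2 ok3 E Wt \<Longrightarrow> (a,b,c,y) \<in> set E \<Longrightarrow>
   \<exists>ms. (\<forall>i\<in>set ms. i + 1 < length [a,b,c]) \<and> last (fold hmi ms [a,b,c]) = y"
  using la2_ex[of ok3 E Wt "(a,b,c,y)"] by (fastforce simp: ok3_def list_all_iff numeral_2_eq_2)

lemma win_gen4: "list_all2 ok4 E Wt \<Longrightarrow> (a,b,c,d,y) \<in> set E \<Longrightarrow>
   \<exists>ms. (\<forall>i\<in>set ms. i + 1 < length [a,b,c,d]) \<and> last (fold hmi ms [a,b,c,d]) = y"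
  using la2_ex[of ok4 E Wt "(a,b,c,d,y)"] by (fastforce simp: ok4_def list_all_iff numeral_3_eq_3)

lemma win1: "a \<in> set xsS \<Longrightarrow> b \<in> set xsS \<Longrightarrow> c \<in> set (xsR @ xsQ) \<Longrightarrow> y \<in> set (xsS @ clsl c) \<Longrightarrow>
   \<exists>ms. (\<forall>i\<in>set ms. i + 1 < length [a,b,c]) \<and> last (fold hmi ms [a,b,c]) = y"
  by (rule win_gen3[OF chk1], unfold enum1_def, rule lc3) (assumption+)

lemma clsl_R: "c \<in> set xsR \<Longrightarrow> clsl c = xsR" by (simp add: clsl_def)
lemma clsl_Q: "c \<in> set xsQ \<Longrightarrow> clsl c = xsQ" by (auto simp: clsl_def xsR_def xsQ_def)

lemma win1S: "\<forall>a\<in>set xsS. \<forall>b\<in>set xsS. \<forall>c\<in>set (xsR @ xsQ). \<forall>y\<in>set xsS.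
   \<exists>ms. (\<forall>i\<in>set ms. i + 1 < length [a,b,c]) \<and> last (fold hmi ms [a,b,c]) = y"
  using win1 by auto
lemma win1R: "\<forall>a\<in>set xsS. \<forall>b\<in>set xsS. \<forall>c\<in>set xsR. \<forall>y\<in>set xsR.
   \<exists>ms. (\<forall>i\<in>set ms. i + 1 < length [a,b,c]) \<and> last (fold hmi ms [a,b,c]) = y"
  using win1 clsl_R by fastforce
lemma win1Q: "\<forall>a\<in>set xsS. \<forall>b\<in>set xsS. \<forall>c\<in>set xsQ. \<forall>y\<in>set xsQ.
   \<exists>ms. (\<forall>i\<in>set ms. i + 1 < length [a,b,c]) \<and> last (fold hmi ms [a,b,c]) = y"
  using win1 clsl_Q by fastforce
lemma win2: "\<forall>a\<in>set xsR. \<forall>b\<in>set xsR. \<forall>c\<in>set xsS. \<forall>y\<in>set (xsR @ xsS).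
   \<exists>ms. (\<forall>i\<in>set ms. i + 1 < length [a,b,c]) \<and> last (fold hmi ms [a,b,c]) = y"
  by (intro ballI, rule win_gen3[OF chk2], unfold enum2_def, rule lc3) (assumption+)
lemma win3: "\<forall>a\<in>set xsQ. \<forall>b\<in>set xsQ. \<forall>c\<in>set xsS. \<forall>y\<in>set (xsQ @ xsS).
   \<exists>ms. (\<forall>i\<in>set ms. i + 1 < length [a,b,c]) \<and> last (fold hmi ms [a,b,c]) = y"
  by (intro ballI, rule win_gen3[OF chk3], unfold enum3_def, rule lc3) (assumption+)
lemma win4: "\<forall>a\<in>set xsR. \<forall>b\<in>set xsR. \<forall>c\<in>set xsS. \<forall>d\<in>set xsQ. \<forall>y\<in>set xsQ.
   \<exists>ms. (\<forall>i\<in>set ms. i + 1 < length [a,b,c,d]) \<and> last (fold hmi ms [a,b,c,d]) = y"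
  by (intro ballI, rule win_gen4[OF chk4], unfold enum4_def, rule lc4) (assumption+)
lemma win5: "\<forall>a\<in>set xsQ. \<forall>b\<in>set xsQ. \<forall>c\<in>set xsS. \<forall>d\<in>set xsR. \<forall>y\<in>set xsR.
   \<exists>ms. (\<forall>i\<in>set ms. i + 1 < length [a,b,c,d]) \<and> last (fold hmi ms [a,b,c,d]) = y"
  by (intro ballI, rule win_gen4[OF chk5], unfold enum5_def, rule lc4) (assumption+)

lemma main3:
  assumes T: "set T \<subseteq> G6"
    and c1: "cinv C1" and c3: "cinv C3" and n1: "count_in C1 T \<ge> 2" and n3: "count_in C3 T \<ge> 1"
    and d13: "C1 \<inter> C3 = {}"
    and k1: "C1 \<subseteq> emat ` K1" and k3: "C3 \<subseteq> emat ` K3"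
    and W: "\<forall>a\<in>K1. \<forall>b\<in>K1. \<forall>c\<in>K3. \<forall>y\<in>Y. \<exists>ms. (\<forall>i\<in>set ms. i + 1 < length [a,b,c]) \<and> last (fold hmi ms [a,b,c]) = y"
    and C: "cinv C" "x \<in> C" "C \<subseteq> emat ` Y"
  shows "\<exists>T'\<in>hurwitz_orbit T. T' \<noteq> [] \<and> last T' = x"
proof -
  have T0: "hurwitz_step\<^sup>*\<^sup>* T ([] @ T)" by simp
  have n1': "count_in C1 T \<ge> 1" using n1 by simp
  obtain r1 M1 where p1: "hurwitz_step\<^sup>*\<^sup>* T (([] @ [r1]) @ M1)" "r1 \<in> C1" "set M1 \<subseteq> G6"
      "\<forall>D. cinv D \<longrightarrow> count_in D T = count_in D M1 + (if r1 \<in> D then 1 else 0)"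
    using pickP[OF T0 T n1'] by blast
  have r13: "r1 \<notin> C3" using d13 p1(2) by blast
  have m1a: "count_in C1 M1 \<ge> 1" using p1(4) c1 p1(2) n1 by force
  have m1b: "count_in C3 M1 \<ge> 1" using p1(4) c3 r13 n3 by force
  obtain r2 M2 where p2: "hurwitz_step\<^sup>*\<^sup>* T ((([] @ [r1]) @ [r2]) @ M2)" "r2 \<in> C1" "set M2 \<subseteq> G6"
      "\<forall>D. cinv D \<longrightarrow> count_in D M1 = count_in D M2 + (if r2 \<in> D then 1 else 0)"
    using pickP[OF p1(1) p1(3) m1a] by blast
  have r23: "r2 \<notin> C3" using d13 p2(2) by blast
  have m2: "count_in C3 M2 \<ge> 1" using p2(4) c3 r23 m1b by force
  obtain r3 M3 where p3: "hurwitz_step\<^sup>*\<^sup>* T (((([] @ [r1]) @ [r2]) @ [r3]) @ M3)" "r3 \<in> C3" "set M3 \<subseteq> G6"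
    using pickP[OF p2(1) p2(3) m2] by blast
  obtain a where a: "a \<in> K1" "r1 = emat a" using k1 p1(2) by blast
  obtain b where b: "b \<in> K1" "r2 = emat b" using k1 p2(2) by blast
  obtain c where c: "c \<in> K3" "r3 = emat c" using k3 p3(2) by blast
  have reach: "hurwitz_step\<^sup>*\<^sup>* T (map emat [a,b,c] @ M3)" using p3(1) a b c by simp
  show ?thesis
    by (rule finish[OF reach p3(3) C(1) C(2) C(3)]) (use W a b c in auto)
qed

lemma main4:
  assumes T: "set T \<subseteq> G6"
    and c1: "cinv C1" and c3: "cinv C3" and c4: "cinv C4"
    and n1: "count_in C1 T \<ge> 2" and n3: "count_in C3 T \<ge> 1" and n4: "count_in C4 T \<ge> 1"
    and d13: "C1 \<inter> C3 = {}" and d14: "C1 \<inter> C4 = {}" and d34: "C3 \<inter> C4 = {}"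
    and k1: "C1 \<subseteq> emat ` K1" and k3: "C3 \<subseteq> emat ` K3" and k4: "C4 \<subseteq> emat ` K4"
    and W: "\<forall>a\<in>K1. \<forall>b\<in>K1. \<forall>c\<in>K3. \<forall>d\<in>K4. \<forall>y\<in>Y. \<exists>ms. (\<forall>i\<in>set ms. i + 1 < length [a,b,c,d]) \<and> last (fold hmi ms [a,b,c,d]) = y"
    and C: "cinv C" "x \<in> C" "C \<subseteq> emat ` Y"
  shows "\<exists>T'\<in>hurwitz_orbit T. T' \<noteq> [] \<and> last T' = x"
proof -
  have T0: "hurwitz_step\<^sup>*\<^sup>* T ([] @ T)" by simp
  have n1': "count_in C1 T \<ge> 1" using n1 by simp
  obtain r1 M1 where p1: "hurwitz_step\<^sup>*\<^sup>* T (([] @ [r1]) @ M1)" "r1 \<in> C1" "set M1 \<subseteq> G6"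
      "\<forall>D. cinv D \<longrightarrow> count_in D T = count_in D M1 + (if r1 \<in> D then 1 else 0)"
    using pickP[OF T0 T n1'] by blast
  have r13: "r1 \<notin> C3" "r1 \<notin> C4" using d13 d14 p1(2) by blast+
  have m1a: "count_in C1 M1 \<ge> 1" using p1(4) c1 p1(2) n1 by force
  have m1b: "count_in C3 M1 \<ge> 1" using p1(4) c3 r13 n3 by force
  have m1c: "count_in C4 M1 \<ge> 1" using p1(4) c4 r13 n4 by force
  obtain r2 M2 where p2: "hurwitz_step\<^sup>*\<^sup>* T ((([] @ [r1]) @ [r2]) @ M2)" "r2 \<in> C1" "set M2 \<subseteq> G6"
      "\<forall>D. cinv D \<longrightarrow> count_in D M1 = count_in D M2 + (if r2 \<in> D then 1 else 0)"
    using pickP[OF p1(1) p1(3) m1a] by blast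
  have r23: "r2 \<notin> C3" "r2 \<notin> C4" using d13 d14 p2(2) by blast+
  have m2: "count_in C3 M2 \<ge> 1" using p2(4) c3 r23 m1b by force
  have m2c: "count_in C4 M2 \<ge> 1" using p2(4) c4 r23 m1c by force
  obtain r3 M3 where p3: "hurwitz_step\<^sup>*\<^sup>* T (((([] @ [r1]) @ [r2]) @ [r3]) @ M3)" "r3 \<in> C3" "set M3 \<subseteq> G6"
      "\<forall>D. cinv D \<longrightarrow> count_in D M2 = count_in D M3 + (if r3 \<in> D then 1 else 0)"
    using pickP[OF p2(1) p2(3) m2] by blast
  have r34: "r3 \<notin> C4" using d34 p3(2) by blast
  have m3: "count_in C4 M3 \<ge> 1" using p3(4) c4 r34 m2c by force
  obtain r4 M4 where p4: "hurwitz_step\<^sup>*\<^sup>* T ((((([] @ [r1]) @ [r2]) @ [r3]) @ [r4]) @ M4)" "r4 \<in> C4" "set M4 \<subseteq> G6"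
    using pickP[OF p3(1) p3(3) m3] by blast
  obtain a where a: "a \<in> K1" "r1 = emat a" using k1 p1(2) by blast
  obtain b where b: "b \<in> K1" "r2 = emat b" using k1 p2(2) by blast
  obtain c where c: "c \<in> K3" "r3 = emat c" using k3 p3(2) by blast
  obtain d where d: "d \<in> K4" "r4 = emat d" using k4 p4(2) by blast
  have reach: "hurwitz_step\<^sup>*\<^sup>* T (map emat [a,b,c,d] @ M4)" using p4(1) a b c d by simp
  show ?thesis
    by (rule finish[OF reach p4(3) C(1) C(2) C(3)]) (use W a b c d in auto)
qed

lemma count_ge: "r \<in> set M \<Longrightarrow> r \<in> C \<Longrightarrow> count_in C M \<ge> 1"
  by (induction M) (auto simp: count_Cons)

lemma dsym: "A \<inter> B = {} \<Longrightarrow> B \<inter> A = {}" by blast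
theorem proposition3p12:
  fixes T :: "mat2 list" and x :: mat2
  assumes refl: "\<forall>r \<in> set T. r \<in> G6 \<and> is_reflection r"
    and len: "length T \<ge> 3"
    and cond: "(count_in S_cls T \<ge> 2 \<and> count_in Rprime T \<ge> 1)
             \<or> (count_in R1 T \<ge> 2 \<and> count_in S_cls T \<ge> 1)
             \<or> (count_in R1inv T \<ge> 2 \<and> count_in S_cls T \<ge> 1)"
    and xrefl: "is_reflection x"
    and xcls: "\<exists>C \<in> {R1, R1inv, S_cls}. x \<in> C \<and> (\<exists>r \<in> set T. r \<in> C)"
  shows "\<exists>T' \<in> hurwitz_orbit T. T' \<noteq> [] \<and> last T' = x"
proof -
  have TG: "set T \<subseteq> G6" using refl by auto
  from xcls obtain C r where C: "C \<in> {R1, R1inv, S_cls}" "x \<in> C" and r: "r \<in> set T" "r \<in> C"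
    by blast
  have cT: "count_in C T \<ge> 1" using count_ge[OF r] .
  consider (c1) "count_in S_cls T \<ge> 2" "count_in Rprime T \<ge> 1"
    | (c2) "count_in R1 T \<ge> 2" "count_in S_cls T \<ge> 1"
    | (c3) "count_in R1inv T \<ge> 2" "count_in S_cls T \<ge> 1"
    using cond by blast
  then show ?thesis
  proof cases
    case c1
    consider (S) "C = S_cls" | (R) "C = R1" | (Q) "C = R1inv" using C(1) by blast
    then show ?thesis
    proof cases
      case S
      have xC: "x \<in> S_cls" using C(2) S by simp
      show ?thesis
        by (rule main3[OF TG cinv_S cinv_Rp c1(1) c1(2) disj_SRp S_sub Rp_sub win1S cinv_S xC S_sub])
    next
      case R
      have xC: "x \<in> R1" using C(2) R by simp
      have cC: "count_in R1 T \<ge> 1" using cT R by simp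
      show ?thesis
        by (rule main3[OF TG cinv_S cinv_R1 c1(1) cC disj_SR S_sub R1_sub win1R cinv_R1 xC R1_sub])
    next
      case Q
      have xC: "x \<in> R1inv" using C(2) Q by simp
      have cC: "count_in R1inv T \<ge> 1" using cT Q by simp
      show ?thesis
        by (rule main3[OF TG cinv_S cinv_R1inv c1(1) cC disj_SQ S_sub R1inv_sub win1Q cinv_R1inv xC R1inv_sub])
    qed
  next
    case c2
    consider (SR) "C = S_cls \<or> C = R1" | (Q) "C = R1inv" using C(1) by blast
    then show ?thesis
    proof cases
      case SR
      have CY: "C \<subseteq> emat ` set (xsR @ xsS)" using SR S_sub R1_sub by auto
      have cC: "cinv C" using SR cinv_S cinv_R1 by auto
      show ?thesis
        by (rule main3[OF TG cinv_R1 cinv_S c2(1) c2(2) dsym[OF disj_SR] R1_sub S_sub win2 cC C(2) CY])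
    next
      case Q
      have xC: "x \<in> R1inv" using C(2) Q by simp
      have cC: "count_in R1inv T \<ge> 1" using cT Q by simp
      show ?thesis
        by (rule main4[OF TG cinv_R1 cinv_S cinv_R1inv c2(1) c2(2) cC dsym[OF disj_SR] disj_RQ disj_SQ
              R1_sub S_sub R1inv_sub win4 cinv_R1inv xC R1inv_sub])
    qed
  next
    case c3
    consider (SQ) "C = S_cls \<or> C = R1inv" | (R) "C = R1" using C(1) by blast
    then show ?thesis
    proof cases
      case SQ
      have CY: "C \<subseteq> emat ` set (xsQ @ xsS)" using SQ S_sub R1inv_sub by auto
      have cC: "cinv C" using SQ cinv_S cinv_R1inv by auto
      show ?thesis
        by (rule main3[OF TG cinv_R1inv cinv_S c3(1) c3(2) dsym[OF disj_SQ] R1inv_sub S_sub win3 cC C(2) CY])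
    next
      case R
      have xC: "x \<in> R1" using C(2) R by simp
      have cC: "count_in R1 T \<ge> 1" using cT R by simp
      show ?thesis
        by (rule main4[OF TG cinv_R1inv cinv_S cinv_R1 c3(1) c3(2) cC dsym[OF disj_SQ] dsym[OF disj_RQ] disj_SR
              R1inv_sub S_sub R1_sub win5 cinv_R1 xC R1_sub])
    qed
  qed
qed

end
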